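(* Let $\mathcal{P}=\langle\,\Sigma\mid\mathcal{R}\,\rangle$ be a semigroup presentation and let $M$ be the monoid presented by $\mathcal{P}$. Let $u,v$ be words over $\Sigma$ and let $\Delta$ be a $(uv,uv)$-diagram over $\mathcal{P}$. Let $o_1$ (resp. $o_2$) be the vertex of the top (resp. bottom) path of $\Delta$ that subdivides this path into a product of two paths labeled $u$ and $v$. Suppose $o$ is a vertex of $\Delta$ with $o\le o_1$ and $o\le o_2$. If $\Delta$ is equivalent to a sum of a $(u,u)$-diagram and a $(v,v)$-diagram, then $\mu(o,o_1)=\mu(o,o_2)$ in $M$.
   Context: A diagram over a semigroup presentation $\mathcal{P}=\langle\,\Sigma\mid\mathcal{R}\,\rangle$ is a planar labeled oriented graph obtained from a horizontal positive path labeled by a word $w$ by repeatedly attaching cells: for a relation $u=v$ (or $v=u$) in $\mathcal{R}$ and a subpath of the current bottom path labeled $u$, attach below it a positive path with the same endpoints labeled $v$, the two paths bounding a cell. A $(w,w')$-diagram has top path labeled $w$ and bottom path labeled $w'$; diagrams are considered up to planar isotopy. A dipole is a pair of cells where the bottom path of one coincides with the top path of the other and the cells are mirror images; removing dipoles gives the (unique) reduced form, and two diagrams are equivalent if they have the same reduced form. For vertices $o',o''$ of a diagram $\Delta$, write $o'\le o''$ if there is a positive (directed) path in $\Delta$ from $o'$ to $o''$; then the labels of all positive paths from $o'$ to $o''$ represent the same element of $M$, denoted $\mu(o',o'')$. The sum $\Delta+\Delta'$ of a $(u,v)$-diagram $\Delta$ and a $(u',v')$-diagram $\Delta'$ is the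 $(uu',vv')$-diagram obtained by identifying the terminal vertex of the top path of $\Delta$ with the initial vertex of the top path of $\Delta'$ (placing $\Delta'$ to the right of $\Delta$). A diagram is spherical if it is a $(w,w)$-diagram for some $w$. *)

theory Defs
  imports Main "HOL-Library.Nat_Bijection"
begin

definition rewr1 :: "('a list \<times> 'a list) set \<Rightarrow> ('a list \<times> 'a list) set" where
  "rewr1 R = {(s @ x @ t, s @ y @ t) | s x y t. (x, y) \<in> R \<or> (y, x) \<in> R}"

text \<open>Element of the presented monoid M represented by a word: its congruence class.\<close>
definition pres_class :: "('a list \<times> 'a list) set \<Rightarrow> 'a list \<Rightarrow> 'a list set" where
  "pres_class R w = {w'. (w, w') \<in> (rewr1 R)\<^sup>*}"

text \<open>A path is given by its list of vertices (length n+1) and its list of edges (length n).\<close>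
type_synonym dpath = "nat list \<times> nat list"

record 'a dgm =
  verts :: "nat set"
  edges :: "nat set"
  esrc  :: "nat \<Rightarrow> nat"
  etgt  :: "nat \<Rightarrow> nat"
  elab  :: "nat \<Rightarrow> 'a"
  cells :: "nat set"
  ctop  :: "nat \<Rightarrow> dpath"
  cbot  :: "nat \<Rightarrow> dpath"
  tpath :: dpath
  bpath :: dpath

definition map_dpath :: "(nat \<Rightarrow> nat) \<Rightarrow> (nat \<Rightarrow> nat) \<Rightarrow> dpath \<Rightarrow> dpath" where
  "map_dpath fv fe p = (map fv (fst p), map fe (snd p))"

text \<open>A derivation step (p, x, y): at position p of the current bottom path a
 subpath labelled x is found and a cell with bottom path labelled y is attached below it.\<close>
type_synonym 'a dstep = "nat \<times> 'a list \<times> 'a list"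

definition init_dgm :: "'a list \<Rightarrow> 'a dgm" where
  "init_dgm w = (let vs = map (\<lambda>j. prod_encode (0, j)) [0..<Suc (length w)];
                    es = map (\<lambda>j. prod_encode (0, j)) [0..<length w] in
   \<lparr> verts = set vs, edges = set es,
     esrc = (\<lambda>e. prod_encode (0, snd (prod_decode e))),
     etgt = (\<lambda>e. prod_encode (0, Suc (snd (prod_decode e)))),
     elab = (\<lambda>e. w ! snd (prod_decode e)),
     cells = {}, ctop = (\<lambda>_. ([], [])), cbot = (\<lambda>_. ([], [])),
     tpath = (vs, es), bpath = (vs, es) \<rparr>)"

definition apply_step :: "nat \<Rightarrow> 'a dstep \<Rightarrow> 'a dgm \<Rightarrow> 'a dgm" where
  "apply_step k s D = (case s of (p, x, y) \<Rightarrow>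
     (let bv = fst (bpath D); be = snd (bpath D);
          nv = [bv ! p] @ map (\<lambda>j. prod_encode (Suc k, j)) [1..<length y] @ [bv ! (p + length x)];
          ne = map (\<lambda>j. prod_encode (Suc k, j)) [0..<length y];
          isnew = (\<lambda>e. fst (prod_decode e) = Suc k \<and> snd (prod_decode e) < length y) in
      D\<lparr> verts := verts D \<union> set nv,
         edges := edges D \<union> set ne,
         esrc := (\<lambda>e. if isnew e then nv ! snd (prod_decode e) else esrc D e),
         etgt := (\<lambda>e. if isnew e then nv ! Suc (snd (prod_decode e)) else etgt D e),
         elab := (\<lambda>e. if isnew e then y ! snd (prod_decode e) else elab D e),
         cells := insert k (cells D),
         ctop := (ctop D)(k := (take (Suc (length x)) (drop p bv), take (length x) (drop p be))),
         cbot := (cbot D)(k := (nv, ne)),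
         bpath := (take p bv @ nv @ drop (Suc (p + length x)) bv,
                   take p be @ ne @ drop (p + length x) be) \<rparr>))"

fun build_aux :: "nat \<Rightarrow> 'a dgm \<Rightarrow> 'a dstep list \<Rightarrow> 'a dgm" where
  "build_aux k D [] = D"
| "build_aux k D (s # ss) = build_aux (Suc k) (apply_step k s D) ss"

definition build :: "'a list \<Rightarrow> 'a dstep list \<Rightarrow> 'a dgm" where
  "build w ss = build_aux 0 (init_dgm w) ss"

fun final_word :: "'a list \<Rightarrow> 'a dstep list \<Rightarrow> 'a list" where
  "final_word x [] = x"
| "final_word x ((p, a, b) # ss) = final_word (take p x @ b @ drop (p + length a) x) ss"

fun valid_steps :: "('a list \<times> 'a list) set \<Rightarrow> 'a list \<Rightarrow> 'a dstep list \<Rightarrow> bool" where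
  "valid_steps R x [] = True"
| "valid_steps R x ((p, a, b) # ss) =
     (((a, b) \<in> R \<or> (b, a) \<in> R) \<and> p + length a \<le> length x \<and>
      take (length a) (drop p x) = a \<and>
      valid_steps R (take p x @ b @ drop (p + length a) x) ss)"

definition is_diagram :: "('a list \<times> 'a list) set \<Rightarrow> 'a list \<Rightarrow> 'a dstep list \<Rightarrow> 'a list \<Rightarrow> bool" where
  "is_diagram R w ss w' \<longleftrightarrow> valid_steps R w ss \<and> final_word w ss = w'"

text \<open>Sum of diagrams: the second diagram is placed to the right of the first one.\<close>
definition sum_steps :: "'a list \<Rightarrow> 'a dstep list \<Rightarrow> 'a dstep list \<Rightarrow> 'a dstep list" where
  "sum_steps w1 ss1 ss2 =
     ss1 @ map (\<lambda>(p, a, b). (p + length (final_word w1 ss1), a, b)) ss2"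

subsection \<open>Planar isotopy (isomorphism of the labelled cell complexes)\<close>

definition dgm_iso :: "'a dgm \<Rightarrow> 'a dgm \<Rightarrow> bool" where
  "dgm_iso D D' \<longleftrightarrow> (\<exists>fV fE fC.
     bij_betw fV (verts D) (verts D') \<and> bij_betw fE (edges D) (edges D') \<and>
     bij_betw fC (cells D) (cells D') \<and>
     (\<forall>e\<in>edges D. esrc D' (fE e) = fV (esrc D e) \<and> etgt D' (fE e) = fV (etgt D e)
                   \<and> elab D' (fE e) = elab D e) \<and>
     (\<forall>c\<in>cells D. ctop D' (fC c) = map_dpath fV fE (ctop D c)
                   \<and> cbot D' (fC c) = map_dpath fV fE (cbot D c)) \<and>
     tpath D' = map_dpath fV fE (tpath D) \<and> bpath D' = map_dpath fV fE (bpath D))"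

definition is_dipole :: "'a dgm \<Rightarrow> nat \<Rightarrow> nat \<Rightarrow> bool" where
  "is_dipole D c1 c2 \<longleftrightarrow> c1 \<in> cells D \<and> c2 \<in> cells D \<and> c1 \<noteq> c2 \<and>
     cbot D c1 = ctop D c2 \<and>
     map (elab D) (snd (ctop D c1)) = map (elab D) (snd (cbot D c2))"

definition inner :: "'b list \<Rightarrow> 'b list" where
  "inner xs = butlast (tl xs)"

text \<open>Removing a dipole: delete both cells and the middle path, and glue the
 bottom path of c2 onto the top path of c1.\<close>
definition remove_dipole :: "'a dgm \<Rightarrow> nat \<Rightarrow> nat \<Rightarrow> 'a dgm" where
  "remove_dipole D c1 c2 =
    (let tv = fst (ctop D c1); te = snd (ctop D c1);
         mv = fst (cbot D c1); me = snd (cbot D c1);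
         bv = fst (cbot D c2); be = snd (cbot D c2);
         fv = (\<lambda>x. if x \<in> set (inner bv) then tv ! (LEAST i. bv ! i = x) else x);
         fe = (\<lambda>e. if e \<in> set be then te ! (LEAST i. be ! i = e) else e) in
     \<lparr> verts = fv ` (verts D - set (inner mv)),
       edges = fe ` (edges D - set me),
       esrc = (\<lambda>e. fv (esrc D e)), etgt = (\<lambda>e. fv (etgt D e)), elab = elab D,
       cells = cells D - {c1, c2},
       ctop = (\<lambda>c. map_dpath fv fe (ctop D c)),
       cbot = (\<lambda>c. map_dpath fv fe (cbot D c)),
       tpath = map_dpath fv fe (tpath D),
       bpath = map_dpath fv fe (bpath D) \<rparr>)"

definition dipole_red :: "'a dgm \<Rightarrow> 'a dgm \<Rightarrow> bool" where
  "dipole_red D D' \<longleftrightarrow> (\<exists>c1 c2. is_dipole D c1 c2 \<and> D' = remove_dipole D c1 c2)"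

definition reduced :: "'a dgm \<Rightarrow> bool" where
  "reduced D \<longleftrightarrow> \<not> (\<exists>c1 c2. is_dipole D c1 c2)"

definition dgm_equiv :: "'a dgm \<Rightarrow> 'a dgm \<Rightarrow> bool" where
  "dgm_equiv D D' \<longleftrightarrow> (\<exists>D1 D2. dipole_red\<^sup>*\<^sup>* D D1 \<and> reduced D1 \<and>
                                 dipole_red\<^sup>*\<^sup>* D' D2 \<and> reduced D2 \<and> dgm_iso D1 D2)"

definition is_pos_path :: "'a dgm \<Rightarrow> nat \<Rightarrow> nat \<Rightarrow> nat list \<Rightarrow> bool" where
  "is_pos_path D a b es \<longleftrightarrow> a \<in> verts D \<and> set es \<subseteq> edges D \<and>
     (es = [] \<longrightarrow> a = b) \<and>
     (es \<noteq> [] \<longrightarrow> esrc D (hd es) = a \<and> etgt D (last es) = b \<and>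
        (\<forall>i. Suc i < length es \<longrightarrow> etgt D (es ! i) = esrc D (es ! Suc i)))"

definition vle :: "'a dgm \<Rightarrow> nat \<Rightarrow> nat \<Rightarrow> bool" where
  "vle D a b \<longleftrightarrow> (\<exists>es. is_pos_path D a b es)"

definition mu :: "('a list \<times> 'a list) set \<Rightarrow> 'a dgm \<Rightarrow> nat \<Rightarrow> nat \<Rightarrow> 'a list set" where
  "mu R D a b = pres_class R (map (elab D) (SOME es. is_pos_path D a b es))"

end

theory Submission
  imports Defs
begin

section \<open>Equivalence of words\<close>

definition eqv :: "('a list \<times> 'a list) set \<Rightarrow> 'a list \<Rightarrow> 'a list \<Rightarrow> bool" where
  "eqv R x y \<longleftrightarrow> (x, y) \<in> (rewr1 R)\<^sup>*"

definition rel :: "('a list \<times> 'a list) set \<Rightarrow> 'a list \<Rightarrow> 'a list \<Rightarrow> bool" where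
  "rel R x y \<longleftrightarrow> (x, y) \<in> R \<or> (y, x) \<in> R"

lemma rewr1_sym: "(x, y) \<in> rewr1 R \<Longrightarrow> (y, x) \<in> rewr1 R"
  unfolding rewr1_def by blast

lemma eqv_refl[simp]: "eqv R x x"
  by (simp add: eqv_def)

lemma eqv_sym: "eqv R x y \<Longrightarrow> eqv R y x"
  unfolding eqv_def
proof (induction rule: rtrancl_induct)
  case base then show ?case by simp
next
  case (step y z)
  then show ?case using rewr1_sym
    by (meson converse_rtrancl_into_rtrancl)
qed

lemma eqv_trans: "eqv R x y \<Longrightarrow> eqv R y z \<Longrightarrow> eqv R x z"
  unfolding eqv_def by (meson rtrancl_trans)

lemma rewr1I: "(x, y) \<in> R \<or> (y, x) \<in> R \<Longrightarrow> (s @ x @ t, s @ y @ t) \<in> rewr1 R"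
  unfolding rewr1_def by blast

lemma rewr1_ctx: "(x, y) \<in> rewr1 R \<Longrightarrow> (s @ x @ t, s @ y @ t) \<in> rewr1 R"
proof -
  assume "(x, y) \<in> rewr1 R"
  then obtain s' x' y' t' where "x = s' @ x' @ t'" "y = s' @ y' @ t'" "(x', y') \<in> R \<or> (y', x') \<in> R"
    unfolding rewr1_def by blast
  then show ?thesis using rewr1I[of x' y' R "s @ s'" "t' @ t"] by simp
qed

lemma eqv_ctx: "eqv R x y \<Longrightarrow> eqv R (s @ x @ t) (s @ y @ t)"
  unfolding eqv_def
proof (induction rule: rtrancl_induct)
  case base then show ?case by simp
next
  case (step y z)
  then show ?case using rewr1_ctx by (meson rtrancl.simps)
qed

lemma eqv_app: "eqv R x y \<Longrightarrow> eqv R x' y' \<Longrightarrow> eqv R (x @ x') (y @ y')"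
proof -
  assume a: "eqv R x y" "eqv R x' y'"
  have "eqv R ([] @ x @ x') ([] @ y @ x')" using eqv_ctx[OF a(1)] .
  moreover have "eqv R (y @ x' @ []) (y @ y' @ [])" using eqv_ctx[OF a(2)] .
  ultimately show ?thesis using eqv_trans by fastforce
qed

lemma rel_eqv: "rel R x y \<Longrightarrow> eqv R x y"
proof -
  assume "rel R x y"
  then have "(x, y) \<in> rewr1 R" unfolding rel_def using rewr1I[of x y R "[]" "[]"] by simp
  then show ?thesis unfolding eqv_def by simp
qed

lemma eqv_Nil:
  assumes sg: "\<forall>(x, y) \<in> R. x \<noteq> [] \<and> y \<noteq> []" and e: "eqv R [] y"
  shows "y = []"
proof -
  have "(x, y) \<in> (rewr1 R)\<^sup>* \<Longrightarrow> x = [] \<Longrightarrow> y = []" for x y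
  proof (induction rule: rtrancl_induct)
    case base then show ?case by simp
  next
    case (step y z)
    then have "([], z) \<in> rewr1 R" by simp
    then show ?case using sg unfolding rewr1_def by auto
  qed
  then show ?thesis using e unfolding eqv_def by blast
qed

lemma eqv_pres_class: "eqv R x y \<Longrightarrow> pres_class R x = pres_class R y"
  unfolding pres_class_def
  by (auto dest: eqv_sym simp: eqv_def[symmetric] intro: eqv_trans)

fun walk :: "'a dgm \<Rightarrow> nat \<Rightarrow> nat \<Rightarrow> nat list \<Rightarrow> bool" where
  "walk E a b [] = (a = b)"
| "walk E a b (e # es) = (esrc E e = a \<and> walk E (etgt E e) b es)"

lemma walk_append: "walk E a b (xs @ ys) \<longleftrightarrow> (\<exists>m. walk E a m xs \<and> walk E m b ys)"
  by (induction xs arbitrary: a) auto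

lemma walk_snoc: "walk E a b (xs @ [e]) \<longleftrightarrow> walk E a (esrc E e) xs \<and> etgt E e = b"
  by (auto simp: walk_append)

lemma is_pos_path_walk:
  "is_pos_path E a b es \<longleftrightarrow> a \<in> verts E \<and> set es \<subseteq> edges E \<and> walk E a b es"
proof -
  have w: "walk E a b es \<longleftrightarrow> (es = [] \<longrightarrow> a = b) \<and>
     (es \<noteq> [] \<longrightarrow> esrc E (hd es) = a \<and> etgt E (last es) = b \<and>
        (\<forall>i. Suc i < length es \<longrightarrow> etgt E (es ! i) = esrc E (es ! Suc i)))" for a
  proof (induction es arbitrary: a)
    case Nil then show ?case by simp
  next
    case (Cons e es)
    note IH = Cons.IH
    show ?case
    proof (cases es)
      case Nil then show ?thesis by auto
    next
      case (Cons e' es')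
      have "(\<forall>i. Suc i < length (e # es) \<longrightarrow> etgt E ((e # es) ! i) = esrc E ((e # es) ! Suc i))
        \<longleftrightarrow> etgt E e = esrc E (hd es) \<and> (\<forall>i. Suc i < length es \<longrightarrow> etgt E (es ! i) = esrc E (es ! Suc i))"
      proof
        assume H: "\<forall>i. Suc i < length (e # es) \<longrightarrow> etgt E ((e # es) ! i) = esrc E ((e # es) ! Suc i)"
        have "etgt E e = esrc E (hd es)" using H[rule_format, of 0] Cons by simp
        moreover have "\<forall>i. Suc i < length es \<longrightarrow> etgt E (es ! i) = esrc E (es ! Suc i)"
        proof (intro allI impI)
          fix i assume "Suc i < length es" then show "etgt E (es ! i) = esrc E (es ! Suc i)"
            using H[rule_format, of "Suc i"] by simp
        qed
        ultimately show "etgt E e = esrc E (hd es) \<and> (\<forall>i. Suc i < length es \<longrightarrow> etgt E (es ! i) = esrc E (es ! Suc i))" by blast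
      next
        assume H: "etgt E e = esrc E (hd es) \<and> (\<forall>i. Suc i < length es \<longrightarrow> etgt E (es ! i) = esrc E (es ! Suc i))"
        show "\<forall>i. Suc i < length (e # es) \<longrightarrow> etgt E ((e # es) ! i) = esrc E ((e # es) ! Suc i)"
        proof (intro allI impI)
          fix i assume "Suc i < length (e # es)"
          then show "etgt E ((e # es) ! i) = esrc E ((e # es) ! Suc i)"
            using H Cons by (cases i) auto
        qed
      qed
      moreover have ne: "es \<noteq> []" using Cons by simp
      ultimately show ?thesis using IH[of "etgt E e"] by (simp add: ne eq_commute[of "esrc E (hd es)"]) blast
    qed
  qed
  show ?thesis unfolding is_pos_path_def using w by auto
qed

definition lab :: "'a dgm \<Rightarrow> nat list \<Rightarrow> 'a list" where
  "lab E es = map (elab E) es"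

section \<open>Paths, splicing and stackings\<close>

definition gpath :: "'a dgm \<Rightarrow> dpath \<Rightarrow> bool" where
  "gpath E P \<longleftrightarrow> length (fst P) = Suc (length (snd P)) \<and> distinct (fst P) \<and>
     set (fst P) \<subseteq> verts E \<and> set (snd P) \<subseteq> edges E \<and>
     (\<forall>k < length (snd P). esrc E (snd P ! k) = fst P ! k \<and> etgt E (snd P ! k) = fst P ! Suc k)"

definition sub :: "nat \<Rightarrow> nat \<Rightarrow> dpath \<Rightarrow> dpath" where
  "sub p n P = (take (Suc n) (drop p (fst P)), take n (drop p (snd P)))"

definition splice :: "nat \<Rightarrow> nat \<Rightarrow> dpath \<Rightarrow> dpath \<Rightarrow> dpath" where
  "splice p n P Q = (take p (fst P) @ fst Q @ drop (Suc (p + n)) (fst P),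
                     take p (snd P) @ snd Q @ drop (p + n) (snd P))"

lemma sub_facts:
  assumes "length (fst P) = Suc (length (snd P))" "p + n \<le> length (snd P)"
  shows "length (fst (sub p n P)) = Suc n" "length (snd (sub p n P)) = n"
    "\<And>r. r \<le> n \<Longrightarrow> fst (sub p n P) ! r = fst P ! (p + r)"
    "\<And>r. r < n \<Longrightarrow> snd (sub p n P) ! r = snd P ! (p + r)"
  using assms by (auto simp: sub_def)

lemma gpath_sub:
  assumes g: "gpath E P" and pn: "p + n \<le> length (snd P)"
  shows "gpath E (sub p n P)"
proof -
  have l: "length (fst P) = Suc (length (snd P))" using g by (simp add: gpath_def)
  note sf = sub_facts[OF l pn]
  have sv: "set (fst (sub p n P)) \<subseteq> set (fst P)"
    unfolding sub_def by (auto dest: in_set_takeD in_set_dropD)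
  have se: "set (snd (sub p n P)) \<subseteq> set (snd P)"
    unfolding sub_def by (auto dest: in_set_takeD in_set_dropD)
  have c: "\<forall>k < length (snd P). esrc E (snd P ! k) = fst P ! k \<and> etgt E (snd P ! k) = fst P ! Suc k"
    using g by (simp add: gpath_def)
  show ?thesis unfolding gpath_def
  proof (intro conjI allI impI)
    show "length (fst (sub p n P)) = Suc (length (snd (sub p n P)))" using sf by simp
    show "distinct (fst (sub p n P))" using g by (simp add: gpath_def sub_def)
    show "set (fst (sub p n P)) \<subseteq> verts E" using g sv unfolding gpath_def by blast
    show "set (snd (sub p n P)) \<subseteq> edges E" using g se unfolding gpath_def by blast
    fix k assume k: "k < length (snd (sub p n P))"
    then have kn: "k < n" using sf by simp
    then have pk: "p + k < length (snd P)" using pn by simp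
    have "snd (sub p n P) ! k = snd P ! (p + k)" using sf(4)[OF kn] .
    moreover have "fst (sub p n P) ! k = fst P ! (p + k)" using sf(3)[of k] kn by simp
    moreover have "fst (sub p n P) ! Suc k = fst P ! Suc (p + k)" using sf(3)[of "Suc k"] kn by simp
    ultimately have X: "esrc E (snd (sub p n P) ! k) = fst (sub p n P) ! k \<and>
          etgt E (snd (sub p n P) ! k) = fst (sub p n P) ! Suc k"
      using c pk by simp
    then show "esrc E (snd (sub p n P) ! k) = fst (sub p n P) ! k" by simp
    show "etgt E (snd (sub p n P) ! k) = fst (sub p n P) ! Suc k" using X by simp
  qed
qed

lemma splice_len:
  assumes "length (fst P) = Suc (length (snd P))" "p + n \<le> length (snd P)"
    "length (fst Q) = Suc (length (snd Q))"
  shows "length (fst (splice p n P Q)) = Suc (length (snd (splice p n P Q)))"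
  using assms by (simp add: splice_def)

lemma sub_splice:
  assumes "length (fst P) = Suc (length (snd P))" "p + n \<le> length (snd P)"
    "length (fst Q) = Suc (length (snd Q))"
  shows "sub p (length (snd Q)) (splice p n P Q) = Q"
  using assms by (simp add: splice_def sub_def prod_eq_iff)

lemma walk_of_path:
  assumes "length vs = Suc (length es)"
    "\<forall>k<length es. esrc E (es ! k) = vs ! k \<and> etgt E (es ! k) = vs ! Suc k"
  shows "walk E (vs ! 0) (vs ! length es) es"
  using assms
proof (induction es arbitrary: vs)
  case Nil then show ?case by simp
next
  case (Cons e es)
  then obtain v vs' where vs: "vs = v # vs'" by (cases vs) auto
  have "walk E (vs' ! 0) (vs' ! length es) es"
    using Cons.prems vs by (intro Cons.IH) auto
  moreover have "esrc E e = v" "etgt E e = vs' ! 0" using Cons.prems(2)[rule_format, of 0] vs by auto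
  ultimately show ?case using vs by simp
qed

lemma gpath_walk:
  assumes "gpath E P"
  shows "walk E (fst P ! 0) (fst P ! length (snd P)) (snd P)"
  using assms walk_of_path unfolding gpath_def by blast

lemma gpath_edge:
  assumes "gpath E P" "e \<in> set (snd P)"
  shows "\<exists>k < length (snd P). snd P ! k = e \<and> esrc E e = fst P ! k \<and> etgt E e = fst P ! Suc k"
proof -
  obtain k where k: "k < length (snd P)" "snd P ! k = e" using assms(2) by (auto simp: in_set_conv_nth)
  then show ?thesis using assms(1) unfolding gpath_def by blast
qed

lemma gpath_walk_in:
  assumes g: "gpath E P" and w: "walk E a b es" and s: "set es \<subseteq> set (snd P)"
    and k: "k < length (fst P)" "a = fst P ! k"
  shows "k + length es < length (fst P) \<and> es = take (length es) (drop k (snd P)) \<and>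
         b = fst P ! (k + length es)"
  using w s k
proof (induction es arbitrary: a k)
  case Nil then show ?case by simp
next
  case (Cons e es)
  have "e \<in> set (snd P)" using Cons.prems by simp
  then obtain j where j: "j < length (snd P)" "snd P ! j = e" "esrc E e = fst P ! j" "etgt E e = fst P ! Suc j"
    using gpath_edge[OF g] by blast
  have l: "length (fst P) = Suc (length (snd P))" "distinct (fst P)" using g by (auto simp: gpath_def)
  have jl: "j < length (fst P)" using j(1) l(1) by simp
  have "fst P ! j = fst P ! k" using j Cons.prems by simp
  then have "j = k" using nth_eq_iff_index_eq[OF l(2) jl Cons.prems(3)] by simp
  have ih: "Suc k + length es < length (fst P) \<and> es = take (length es) (drop (Suc k) (snd P)) \<and>
         b = fst P ! (Suc k + length es)"
    using Cons.prems j \<open>j = k\<close> l by (intro Cons.IH[of "etgt E e"]) auto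
  have "drop k (snd P) = snd P ! k # drop (Suc k) (snd P)"
    using j \<open>j = k\<close> Cons_nth_drop_Suc by metis
  then show ?case using j \<open>j = k\<close> l ih by simp
qed

definition QF :: "('a list \<times> 'a list) set \<Rightarrow> 'a dgm \<Rightarrow> nat set \<Rightarrow> bool" where
  "QF R E F \<longleftrightarrow> (\<forall>a b es1 es2. walk E a b es1 \<longrightarrow> set es1 \<subseteq> F \<longrightarrow> walk E a b es2 \<longrightarrow>
      set es2 \<subseteq> F \<longrightarrow> eqv R (lab E es1) (lab E es2))"

lemma walk_start_in:
  assumes g: "gpath E P" and w: "walk E a b es" and s: "set es \<subseteq> set (snd P)" and ne: "es \<noteq> []"
  shows "\<exists>k < length (fst P). a = fst P ! k"
proof -
  obtain e es' where es: "es = e # es'" using ne by (cases es) auto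
  then obtain j where j: "j < length (snd P)" "esrc E e = fst P ! j"
    using gpath_edge[OF g, of e] s by auto
  have "a = fst P ! j" using w es j by simp
  then show ?thesis using j(1) g by (intro exI[of _ j]) (auto simp: gpath_def)
qed

lemma QF_gpath:
  assumes g: "gpath E P"
  shows "QF R E (set (snd P))"
  unfolding QF_def
proof (intro allI impI)
  fix a b es1 es2
  assume w1: "walk E a b es1" and s1: "set es1 \<subseteq> set (snd P)"
     and w2: "walk E a b es2" and s2: "set es2 \<subseteq> set (snd P)"
  have d: "distinct (fst P)" using g by (simp add: gpath_def)
  show "eqv R (lab E es1) (lab E es2)"
  proof (cases "es1 = [] \<and> es2 = []")
    case True then show ?thesis by simp
  next
    case False
    then obtain k where k: "k < length (fst P)" "a = fst P ! k"
      using walk_start_in[OF g w1 s1] walk_start_in[OF g w2 s2] by blast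
    note r1 = gpath_walk_in[OF g w1 s1 k] and r2 = gpath_walk_in[OF g w2 s2 k]
    have "fst P ! (k + length es1) = fst P ! (k + length es2)" using r1 r2 by simp
    then have "k + length es1 = k + length es2"
      using nth_eq_iff_index_eq[OF d] r1 r2 by blast
    then have "length es1 = length es2" by simp
    then have "es1 = es2" using r1 r2 by metis
    then show ?thesis by simp
  qed
qed

lemma inner_nth:
  assumes "0 < r" "Suc r < length xs"
  shows "xs ! r \<in> set (inner xs)"
proof -
  have "inner xs ! (r - 1) = xs ! r" using assms
    by (simp add: inner_def nth_butlast nth_tl)
  moreover have "r - 1 < length (inner xs)" using assms by (simp add: inner_def)
  ultimately show ?thesis by (metis nth_mem)
qed

lemma inner_nth_ex:
  assumes "x \<in> set (inner xs)"
  shows "\<exists>r. 0 < r \<and> Suc r < length xs \<and> xs ! r = x"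
proof -
  obtain j where j: "j < length (inner xs)" "inner xs ! j = x" using assms by (metis in_set_conv_nth)
  then have "xs ! Suc j = x" "Suc (Suc j) < length xs"
    by (auto simp: inner_def nth_butlast nth_tl)
  then show ?thesis by (intro exI[of _ "Suc j"]) auto
qed

locale qstep =
  fixes R :: "('a list \<times> 'a list) set" and E :: "'a dgm" and F W :: "nat set"
    and bv be te :: "nat list"
  assumes sg: "\<forall>(x, y) \<in> R. x \<noteq> [] \<and> y \<noteq> []"
    and QFF: "QF R E F"
    and lens: "length bv = Suc (length be)" and bene: "be \<noteq> []"
    and dist: "distinct bv"
    and cons: "\<forall>r<length be. esrc E (be ! r) = bv ! r \<and> etgt E (be ! r) = bv ! Suc r"
    and fresh_v: "set (inner bv) \<inter> W = {}"
    and FW: "\<forall>e\<in>F. esrc E e \<in> W \<and> etgt E e \<in> W"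
    and endW: "bv ! 0 \<in> W" "bv ! length be \<in> W"
    and top: "walk E (bv ! 0) (bv ! length be) te" "set te \<subseteq> F"
    and rl: "rel R (lab E te) (lab E be)"
begin

abbreviation "G \<equiv> F \<union> set be"
abbreviation "N \<equiv> set (inner bv)"

lemma N_iff: "x \<in> N \<longleftrightarrow> (\<exists>r. 0 < r \<and> r < length be \<and> x = bv ! r)"
  using inner_nth inner_nth_ex lens by (metis Suc_less_eq)

lemma notN_W: "x \<in> W \<Longrightarrow> x \<notin> N" using fresh_v by blast

lemma out_edge:
  assumes "e \<in> G" "esrc E e = bv ! r" "0 < r" "r < length be"
  shows "e = be ! r"
proof -
  have "bv ! r \<in> N" using N_iff assms by blast
  then have "e \<notin> F" using FW assms notN_W by metis
  then obtain s where s: "s < length be" "e = be ! s" using assms by (metis UnE in_set_conv_nth)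
  then have "bv ! s = bv ! r" using cons assms by auto
  moreover have "s < length bv" "r < length bv" using s assms lens by auto
  ultimately show ?thesis using s nth_eq_iff_index_eq[OF dist] by blast
qed

lemma in_edge:
  assumes "e \<in> G" "etgt E e = bv ! r" "0 < r" "r < length be"
  shows "e = be ! (r - 1)"
proof -
  have "bv ! r \<in> N" using N_iff assms by blast
  then have "e \<notin> F" using FW assms notN_W by metis
  then obtain s where s: "s < length be" "e = be ! s" using assms by (metis UnE in_set_conv_nth)
  then have "bv ! Suc s = bv ! r" using cons assms by auto
  moreover have "Suc s < length bv" "r < length bv" using s assms lens by auto
  ultimately have "Suc s = r" using nth_eq_iff_index_eq[OF dist] by blast
  then show ?thesis using s by (metis diff_Suc_1)
qed

lemma run:
  assumes "0 < r" "r \<le> length be" "walk E (bv ! r) b es" "set es \<subseteq> G" "b \<notin> N"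
  shows "\<exists>es'. es = drop r be @ es' \<and> walk E (bv ! length be) b es'"
  using assms
proof (induction "length be - r" arbitrary: r es)
  case 0
  then have "r = length be" by simp
  then show ?case using 0 by auto
next
  case (Suc m)
  then have rl: "r < length be" by simp
  then have "bv ! r \<in> N" using N_iff Suc.prems by blast
  then have "es \<noteq> []" using Suc.prems by auto
  then obtain e es1 where es: "es = e # es1" by (cases es) auto
  then have e: "e = be ! r" using out_edge Suc.prems rl by auto
  then have w: "walk E (bv ! Suc r) b es1" using Suc.prems es cons rl by auto
  have m: "m = length be - Suc r" using Suc.hyps(2) by arith
  have "set es1 \<subseteq> G" using Suc.prems es by simp
  then obtain es' where "es1 = drop (Suc r) be @ es'" "walk E (bv ! length be) b es'"
    using Suc.hyps(1)[OF m, of es1] Suc.prems rl w by auto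
  moreover have "drop r be = be ! r # drop (Suc r) be" using rl Cons_nth_drop_Suc by metis
  ultimately show ?case using es e by auto
qed

lemma te_ne: "te \<noteq> []"
proof
  assume "te = []"
  then have "bv ! 0 = bv ! length be" using top by simp
  moreover have "0 < length bv" "length be < length bv" using lens by auto
  ultimately have "0 = length be" using nth_eq_iff_index_eq[OF dist] by blast
  then show False using bene by simp
qed

lemma normalize:
  assumes "walk E a b es" "set es \<subseteq> G" "a \<notin> N" "b \<notin> N"
  shows "\<exists>es'. walk E a b es' \<and> set es' \<subseteq> F \<and> eqv R (lab E es) (lab E es') \<and> (es \<noteq> [] \<longrightarrow> es' \<noteq> [])"
  using assms
proof (induction "length es" arbitrary: a es rule: less_induct)
  case less
  show ?case
  proof (cases es)
    case Nil then show ?thesis using less.prems by (intro exI[of _ "[]"]) auto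
  next
    case (Cons e rest)
    show ?thesis
    proof (cases "e \<in> F")
      case True
      then have "etgt E e \<notin> N" using FW notN_W by blast
      then obtain rest' where r: "walk E (etgt E e) b rest'" "set rest' \<subseteq> F"
        "eqv R (lab E rest) (lab E rest')"
        using less.hyps[of rest "etgt E e"] less.prems Cons by auto
      have "eqv R ([elab E e] @ lab E rest) ([elab E e] @ lab E rest')"
        using eqv_app[OF eqv_refl r(3)] .
      then show ?thesis using r Cons less.prems True
        by (intro exI[of _ "e # rest'"]) (auto simp: lab_def)
    next
      case False
      then obtain r where r: "r < length be" "e = be ! r" using less.prems Cons
        by (metis UnE in_set_conv_nth insert_subset list.simps(15))
      have "esrc E e = a" using less.prems Cons by simp
      then have "a = bv ! r" using cons r by auto
      then have r0: "r = 0" using less.prems N_iff r by auto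
      have wr: "walk E (bv ! 1) b rest" using less.prems Cons r r0 cons by auto
      obtain es'' where es'': "es = be @ es''" "walk E (bv ! length be) b es''"
      proof (cases "length be = 1")
        case True
        then have "be = [e]" using r r0 by (cases be) auto
        then show ?thesis using that Cons wr True by auto
      next
        case False
        have "1 \<le> length be" using bene by (cases be) auto
        moreover have "set rest \<subseteq> G" using less.prems(2) Cons by simp
        ultimately obtain es' where "rest = drop 1 be @ es'" "walk E (bv ! length be) b es'"
          using run[of 1 b rest] wr less.prems(4) by auto
        moreover have "be = e # drop 1 be" using r r0 bene by (cases be) auto
        ultimately show ?thesis using that[of es'] Cons by (metis append_Cons)
      qed
      have lt: "length es'' < length es" using es'' bene by simp
      have "bv ! length be \<notin> N" using endW notN_W by blast
      then obtain es3 where e3: "walk E (bv ! length be) b es3" "set es3 \<subseteq> F"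
        "eqv R (lab E es'') (lab E es3)"
        using less.hyps[OF lt, of "bv ! length be"] less.prems es'' es''(2) by auto
      have "eqv R (lab E be @ lab E es'') (lab E te @ lab E es3)"
        using eqv_app[OF eqv_sym[OF rel_eqv[OF rl]] e3(3)] .
      moreover have "walk E a b (te @ es3)" using top e3 \<open>a = bv ! r\<close> r0 walk_append by fastforce
      ultimately show ?thesis using e3 top te_ne es''
        by (intro exI[of _ "te @ es3"]) (auto simp: lab_def)
    qed
  qed
qed

lemma nocycle_notN:
  assumes "walk E a a es" "set es \<subseteq> G" "es \<noteq> []" "a \<notin> N"
  shows False
proof -
  obtain es' where e: "walk E a a es'" "set es' \<subseteq> F" "eqv R (lab E es) (lab E es')" "es' \<noteq> []"
    using normalize assms by blast
  have "eqv R (lab E []) (lab E es')" using QFF e unfolding QF_def by force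
  then have "lab E es' = []" using eqv_Nil[OF sg, of "lab E es'"] by (simp add: lab_def)
  then show False using e by (simp add: lab_def)
qed

lemma nocycle_N:
  "walk E (bv ! r) (bv ! r) es \<Longrightarrow> set es \<subseteq> G \<Longrightarrow> es \<noteq> [] \<Longrightarrow> 0 < r \<Longrightarrow> r \<le> length be \<Longrightarrow> False"
  proof (induction "length be - r" arbitrary: r es)
    case 0
    then have "bv ! r \<notin> N" using endW notN_W by auto
    then show ?case using nocycle_notN 0 by blast
  next
    case (Suc m)
    then have rl: "r < length be" by simp
    obtain e es1 where es: "es = e # es1" using Suc.prems by (cases es) auto
    then have e: "e = be ! r" using out_edge Suc.prems rl by auto
    have w2: "walk E (bv ! Suc r) (bv ! Suc r) (es1 @ [e])"
      using Suc.prems es e cons rl by (auto simp: walk_snoc)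
    have m: "m = length be - Suc r" using Suc.hyps(2) by arith
    have s2: "set (es1 @ [e]) \<subseteq> G" using Suc.prems es by auto
    show ?case using Suc.hyps(1)[OF m w2 s2] rl by simp
  qed

lemma nocycle:
  assumes "walk E a a es" "set es \<subseteq> G" "es \<noteq> []"
  shows False
proof (cases "a \<in> N")
  case False then show ?thesis using nocycle_notN assms by blast
next
  case True
  then obtain r where r: "0 < r" "r < length be" "a = bv ! r" using N_iff by blast
  have wr: "walk E (bv ! r) (bv ! r) es" using assms r by simp
  show False using nocycle_N[OF wr assms(2,3) r(1)] r(2) by simp
qed

lemma QG_aux:
  "length es1 + length es2 \<le> n \<Longrightarrow> walk E a b es1 \<Longrightarrow> set es1 \<subseteq> G \<Longrightarrow>
   walk E a b es2 \<Longrightarrow> set es2 \<subseteq> G \<Longrightarrow> eqv R (lab E es1) (lab E es2)"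
proof (induction n arbitrary: a b es1 es2)
  case 0
  then show ?case by simp
next
  case (Suc n)
  note w1 = Suc.prems(2) and s1 = Suc.prems(3) and w2 = Suc.prems(4) and s2 = Suc.prems(5)
  show ?case
  proof (cases "a \<in> N")
    case True
    then obtain r where r: "0 < r" "r < length be" "a = bv ! r" using N_iff by blast
    show ?thesis
    proof (cases "es1 = [] \<or> es2 = []")
      case True
      then show ?thesis
      proof
        assume n1: "es1 = []"
        show ?thesis
        proof (cases "es2 = []")
          case True then show ?thesis using n1 by simp
        next
          case False
          have "a = b" using w1 n1 by simp
          then show ?thesis using nocycle[of a es2] w2 s2 False by simp
        qed
      next
        assume n2: "es2 = []"
        show ?thesis
        proof (cases "es1 = []")
          case True then show ?thesis using n2 by simp
        next
          case False
          have "a = b" using w2 n2 by simp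
          then show ?thesis using nocycle[of a es1] w1 s1 False by simp
        qed
      qed
    next
      case False
      then obtain e1 r1 e2 r2 where es: "es1 = e1 # r1" "es2 = e2 # r2"
        by (meson list.exhaust)
      have "e1 \<in> G" "esrc E e1 = bv ! r" using es w1 s1 r by auto
      then have e1: "e1 = be ! r" using out_edge r by blast
      have "e2 \<in> G" "esrc E e2 = bv ! r" using es w2 s2 r by auto
      then have e2: "e2 = be ! r" using out_edge r by blast
      have "walk E (etgt E e1) b r1" "walk E (etgt E e1) b r2" "set r1 \<subseteq> G" "set r2 \<subseteq> G"
        using es w1 w2 s1 s2 e1 e2 by auto
      moreover have "length r1 + length r2 \<le> n" using Suc.prems(1) es by simp
      ultimately have "eqv R (lab E r1) (lab E r2)" using Suc.IH by blast
      then have "eqv R ([elab E (be ! r)] @ lab E r1) ([elab E (be ! r)] @ lab E r2)"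
        using eqv_app[OF eqv_refl] by blast
      then show ?thesis using es e1 e2 by (simp add: lab_def)
    qed
  next
    case aN: False
    show ?thesis
    proof (cases "b \<in> N")
      case True
      then obtain r where r: "0 < r" "r < length be" "b = bv ! r" using N_iff by blast
      have ne: "es1 \<noteq> []" "es2 \<noteq> []" using w1 w2 aN True by auto
      obtain r1 e1 where es1: "es1 = r1 @ [e1]" using ne by (metis rev_exhaust)
      obtain r2 e2 where es2: "es2 = r2 @ [e2]" using ne by (metis rev_exhaust)
      have "e1 \<in> G" "etgt E e1 = bv ! r" using es1 w1 s1 r by (auto simp: walk_snoc)
      then have e1: "e1 = be ! (r - 1)" using in_edge r by blast
      have "e2 \<in> G" "etgt E e2 = bv ! r" using es2 w2 s2 r by (auto simp: walk_snoc)
      then have e2: "e2 = be ! (r - 1)" using in_edge r by blast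
      have "walk E a (esrc E e1) r1" "walk E a (esrc E e1) r2" "set r1 \<subseteq> G" "set r2 \<subseteq> G"
        using es1 es2 w1 w2 s1 s2 e1 e2 by (auto simp: walk_snoc)
      moreover have "length r1 + length r2 \<le> n" using Suc.prems(1) es1 es2 by simp
      ultimately have "eqv R (lab E r1) (lab E r2)" using Suc.IH by blast
      then have "eqv R (lab E r1 @ [elab E (be ! (r - 1))]) (lab E r2 @ [elab E (be ! (r - 1))])"
        using eqv_app[OF _ eqv_refl] by blast
      then show ?thesis using es1 es2 e1 e2 by (simp add: lab_def)
    next
      case False
      obtain f1 where f1: "walk E a b f1" "set f1 \<subseteq> F" "eqv R (lab E es1) (lab E f1)"
        using normalize w1 s1 aN False by blast
      obtain f2 where f2: "walk E a b f2" "set f2 \<subseteq> F" "eqv R (lab E es2) (lab E f2)"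
        using normalize w2 s2 aN False by blast
      have "eqv R (lab E f1) (lab E f2)" using QFF f1 f2 unfolding QF_def by blast
      then show ?thesis using f1 f2 eqv_trans eqv_sym by metis
    qed
  qed
qed

lemma QG: "QF R E G"
  unfolding QF_def using QG_aux by blast

end

definition UV :: "dpath list \<Rightarrow> nat \<Rightarrow> nat set" where
  "UV Ps i = (\<Union>j\<in>{..i}. set (fst (Ps ! j)))"

definition UE :: "dpath list \<Rightarrow> nat \<Rightarrow> nat set" where
  "UE Ps i = (\<Union>j\<in>{..i}. set (snd (Ps ! j)))"

definition cstepp :: "('a list \<times> 'a list) set \<Rightarrow> 'a dgm \<Rightarrow> nat \<Rightarrow> nat \<Rightarrow> dpath \<Rightarrow> dpath \<Rightarrow> bool" where
  "cstepp R E c p P P' \<longleftrightarrow> 0 < length (snd (ctop E c)) \<and> p + length (snd (ctop E c)) \<le> length (snd P) \<and>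
     ctop E c = sub p (length (snd (ctop E c))) P \<and>
     P' = splice p (length (snd (ctop E c))) P (cbot E c) \<and>
     snd (cbot E c) \<noteq> [] \<and> length (fst (cbot E c)) = Suc (length (snd (cbot E c))) \<and>
     hd (fst (cbot E c)) = fst P ! p \<and> last (fst (cbot E c)) = fst P ! (p + length (snd (ctop E c))) \<and>
     rel R (lab E (snd (ctop E c))) (lab E (snd (cbot E c)))"

definition stack :: "('a list \<times> 'a list) set \<Rightarrow> 'a dgm \<Rightarrow> nat option list \<Rightarrow> dpath list \<Rightarrow> bool" where
  "stack R E cs Ps \<longleftrightarrow> length Ps = Suc (length cs) \<and> Ps ! 0 = tpath E \<and> Ps ! length cs = bpath E \<and>
     (\<forall>j \<le> length cs. gpath E (Ps ! j)) \<and>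
     cells E = {c. Some c \<in> set cs} \<and>
     (\<forall>i < length cs. \<forall>j < length cs. \<forall>c. cs ! i = Some c \<longrightarrow> cs ! j = Some c \<longrightarrow> i = j) \<and>
     (\<forall>i < length cs. cs ! i = None \<longrightarrow> Ps ! Suc i = Ps ! i) \<and>
     (\<forall>i < length cs. \<forall>c. cs ! i = Some c \<longrightarrow> (\<exists>p. cstepp R E c p (Ps ! i) (Ps ! Suc i)) \<and>
        set (inner (fst (cbot E c))) \<inter> UV Ps i = {} \<and> set (snd (cbot E c)) \<inter> UE Ps i = {}) \<and>
     verts E = UV Ps (length cs) \<and> edges E = UE Ps (length cs)"

lemma stack_D:
  assumes "stack R E cs Ps"
  shows "length Ps = Suc (length cs)" "Ps ! 0 = tpath E" "Ps ! length cs = bpath E"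
     "\<forall>j \<le> length cs. gpath E (Ps ! j)"
     "cells E = {c. Some c \<in> set cs}"
     "\<forall>i < length cs. \<forall>j < length cs. \<forall>c. cs ! i = Some c \<longrightarrow> cs ! j = Some c \<longrightarrow> i = j"
     "\<forall>i < length cs. cs ! i = None \<longrightarrow> Ps ! Suc i = Ps ! i"
     "\<forall>i < length cs. \<forall>c. cs ! i = Some c \<longrightarrow> (\<exists>p. cstepp R E c p (Ps ! i) (Ps ! Suc i)) \<and>
        set (inner (fst (cbot E c))) \<inter> UV Ps i = {} \<and> set (snd (cbot E c)) \<inter> UE Ps i = {}"
     "verts E = UV Ps (length cs)" "edges E = UE Ps (length cs)"
  using assms unfolding stack_def by blast+

lemma distinct_take_iff:
  assumes "distinct xs" "a < length xs"
  shows "xs ! a \<in> set (take p xs) \<longleftrightarrow> a < p"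
proof
  assume "xs ! a \<in> set (take p xs)"
  then obtain k where k: "k < length (take p xs)" "take p xs ! k = xs ! a" by (metis in_set_conv_nth)
  then have "xs ! k = xs ! a" "k < length xs" "k < p" by auto
  then have "k = a" using nth_eq_iff_index_eq[OF assms(1)] assms(2) by blast
  then show "a < p" using k by simp
next
  assume "a < p"
  then show "xs ! a \<in> set (take p xs)" using assms by (metis in_set_conv_nth length_take min_less_iff_conj nth_take)
qed

lemma distinct_drop_iff:
  assumes "distinct xs" "a < length xs"
  shows "xs ! a \<in> set (drop q xs) \<longleftrightarrow> q \<le> a"
proof
  assume "xs ! a \<in> set (drop q xs)"
  then obtain k where k: "k < length (drop q xs)" "drop q xs ! k = xs ! a" by (metis in_set_conv_nth)
  then have "xs ! (q + k) = xs ! a" "q + k < length xs" by auto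
  then have "q + k = a" using nth_eq_iff_index_eq[OF assms(1)] assms(2) by blast
  then show "q \<le> a" by simp
next
  assume "q \<le> a"
  then have "drop q xs ! (a - q) = xs ! a" "a - q < length (drop q xs)" using assms by auto
  then show "xs ! a \<in> set (drop q xs)" by (metis nth_mem)
qed

lemma set_ends_inner:
  assumes "2 \<le> length xs"
  shows "set xs = {hd xs, last xs} \<union> set (inner xs)"
proof -
  obtain a ys where xs: "xs = a # ys" using assms by (cases xs) auto
  then have "ys \<noteq> []" using assms by auto
  then have "ys = butlast ys @ [last ys]" by simp
  then have "set ys = set (butlast ys) \<union> {last ys}" by (metis Un_insert_right set_append set_simps(2) sup_bot.right_neutral list.set(1))
  then show ?thesis using xs \<open>ys \<noteq> []\<close> by (auto simp: inner_def)
qed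

lemma gpath_edges_distinct:
  assumes g: "gpath E P"
  shows "distinct (snd P)"
proof -
  have l: "length (fst P) = Suc (length (snd P))" "distinct (fst P)"
    and c: "\<forall>k < length (snd P). esrc E (snd P ! k) = fst P ! k"
    using g by (auto simp: gpath_def)
  show ?thesis unfolding distinct_conv_nth
  proof (intro allI impI)
    fix i j assume ij: "i < length (snd P)" "j < length (snd P)" "i \<noteq> j"
    show "snd P ! i \<noteq> snd P ! j"
    proof
      assume "snd P ! i = snd P ! j"
      then have "fst P ! i = fst P ! j" using c ij by metis
      then show False using nth_eq_iff_index_eq[OF l(2)] ij l(1) by simp
    qed
  qed
qed

lemma sub_set: "set (fst (sub p n P)) \<subseteq> set (fst P)" "set (snd (sub p n P)) \<subseteq> set (snd P)"
  unfolding sub_def by (auto dest: in_set_takeD in_set_dropD)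

lemma gpath_sub_ends:
  assumes g: "gpath E P" and pn: "p + n \<le> length (snd P)"
  shows "fst (sub p n P) ! 0 = fst P ! p" "fst (sub p n P) ! n = fst P ! (p + n)"
  using sub_facts[of P p n] g pn by (auto simp: gpath_def)

locale stk =
  fixes R :: "('a list \<times> 'a list) set" and E :: "'a dgm" and cs :: "nat option list" and Ps :: "dpath list"
  assumes st: "stack R E cs Ps"
begin

lemma lenPs: "length Ps = Suc (length cs)" using stack_D(1)[OF st] .
lemma P0: "Ps ! 0 = tpath E" using stack_D(2)[OF st] .
lemma Pn: "Ps ! length cs = bpath E" using stack_D(3)[OF st] .
lemma gp: "j \<le> length cs \<Longrightarrow> gpath E (Ps ! j)" using stack_D(4)[OF st] by blast
lemma cells_iff: "c \<in> cells E \<longleftrightarrow> (\<exists>i<length cs. cs ! i = Some c)"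
  using stack_D(5)[OF st] by (auto simp: in_set_conv_nth)
lemma uniq: "i < length cs \<Longrightarrow> j < length cs \<Longrightarrow> cs ! i = Some c \<Longrightarrow> cs ! j = Some c \<Longrightarrow> i = j"
  using stack_D(6)[OF st] by blast
lemma nonestep: "i < length cs \<Longrightarrow> cs ! i = None \<Longrightarrow> Ps ! Suc i = Ps ! i"
  using stack_D(7)[OF st] by blast
lemma somestep: "i < length cs \<Longrightarrow> cs ! i = Some c \<Longrightarrow> \<exists>p. cstepp R E c p (Ps ! i) (Ps ! Suc i)"
  using stack_D(8)[OF st] by blast
lemma freshUV: "i < length cs \<Longrightarrow> cs ! i = Some c \<Longrightarrow> set (inner (fst (cbot E c))) \<inter> UV Ps i = {}"
  using stack_D(8)[OF st] by blast
lemma freshUE: "i < length cs \<Longrightarrow> cs ! i = Some c \<Longrightarrow> set (snd (cbot E c)) \<inter> UE Ps i = {}"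
  using stack_D(8)[OF st] by blast
lemma freshV: "i < length cs \<Longrightarrow> cs ! i = Some c \<Longrightarrow> x \<in> set (inner (fst (cbot E c))) \<Longrightarrow> j \<le> i \<Longrightarrow>
   x \<notin> set (fst (Ps ! j))"
  using freshUV unfolding UV_def by blast
lemma freshE: "i < length cs \<Longrightarrow> cs ! i = Some c \<Longrightarrow> e \<in> set (snd (cbot E c)) \<Longrightarrow> j \<le> i \<Longrightarrow>
   e \<notin> set (snd (Ps ! j))"
  using freshUE unfolding UE_def by blast
lemma vertsUV: "verts E = UV Ps (length cs)" using stack_D(9)[OF st] .
lemma edgesUE: "edges E = UE Ps (length cs)" using stack_D(10)[OF st] .
lemma verts_iff: "x \<in> verts E \<longleftrightarrow> (\<exists>j \<le> length cs. x \<in> set (fst (Ps ! j)))"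
  using vertsUV unfolding UV_def by auto
lemma edges_iff: "e \<in> edges E \<longleftrightarrow> (\<exists>j \<le> length cs. e \<in> set (snd (Ps ! j)))"
  using edgesUE unfolding UE_def by auto

lemma lenV: "j \<le> length cs \<Longrightarrow> length (fst (Ps ! j)) = Suc (length (snd (Ps ! j)))"
  using gp by (simp add: gpath_def)
lemma distV: "j \<le> length cs \<Longrightarrow> distinct (fst (Ps ! j))"
  using gp by (simp add: gpath_def)
lemma distE: "j \<le> length cs \<Longrightarrow> distinct (snd (Ps ! j))"
  using gp gpath_edges_distinct by blast

context
  fixes i c p
  assumes i: "i < length cs" and ci: "cs ! i = Some c" and cp: "cstepp R E c p (Ps ! i) (Ps ! Suc i)"
begin

abbreviation "tlen \<equiv> length (snd (ctop E c))"
abbreviation "blen \<equiv> length (snd (cbot E c))"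

lemma c_m: "0 < tlen" "p + tlen \<le> length (snd (Ps ! i))"
  using cp by (auto simp: cstepp_def)
lemma c_top: "ctop E c = sub p tlen (Ps ! i)" using cp by (simp add: cstepp_def)
lemma c_next: "Ps ! Suc i = splice p tlen (Ps ! i) (cbot E c)" using cp by (simp add: cstepp_def)
lemma c_k: "0 < blen" "length (fst (cbot E c)) = Suc blen" using cp by (auto simp: cstepp_def)
lemma c_hd: "hd (fst (cbot E c)) = fst (Ps ! i) ! p" using cp by (simp add: cstepp_def)
lemma c_last: "last (fst (cbot E c)) = fst (Ps ! i) ! (p + tlen)" using cp by (simp add: cstepp_def)
lemma c_rel: "rel R (lab E (snd (ctop E c))) (lab E (snd (cbot E c)))" using cp by (simp add: cstepp_def)

lemma c_gtop: "gpath E (ctop E c)"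
  using gp[of i] i c_m c_top gpath_sub by (metis less_imp_le)

lemma c_lenP: "length (fst (Ps ! i)) = Suc (length (snd (Ps ! i)))" using lenV i by simp

lemma c_bot_sub: "cbot E c = sub p blen (Ps ! Suc i)"
  using sub_splice[OF c_lenP c_m(2) c_k(2)] c_next by simp

lemma c_lenP': "length (snd (Ps ! Suc i)) = length (snd (Ps ! i)) - tlen + blen"
  using c_next c_m c_k by (simp add: splice_def)

lemma c_pk: "p + blen \<le> length (snd (Ps ! Suc i))"
  using c_lenP' c_m by simp

lemma c_gbot: "gpath E (cbot E c)"
  using gp[of "Suc i"] i c_bot_sub c_pk gpath_sub by (metis Suc_leI)

lemma c_top_nth: "r \<le> tlen \<Longrightarrow> fst (ctop E c) ! r = fst (Ps ! i) ! (p + r)"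
  "r < tlen \<Longrightarrow> snd (ctop E c) ! r = snd (Ps ! i) ! (p + r)"
  using sub_facts[OF c_lenP c_m(2)] c_top by auto

lemma c_lentop: "length (fst (ctop E c)) = Suc tlen"
  using c_gtop by (simp add: gpath_def)

lemma c_bot_nth: "r \<le> blen \<Longrightarrow> fst (cbot E c) ! r = fst (Ps ! Suc i) ! (p + r)"
  "r < blen \<Longrightarrow> snd (cbot E c) ! r = snd (Ps ! Suc i) ! (p + r)"
  using sub_facts[OF lenV[of "Suc i"] c_pk] c_bot_sub i by auto

lemma c_bot0: "fst (cbot E c) ! 0 = fst (Ps ! i) ! p"
  using c_hd c_k by (metis hd_conv_nth length_greater_0_conv zero_less_Suc)

lemma c_botk: "fst (cbot E c) ! blen = fst (Ps ! i) ! (p + tlen)"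
  using c_last c_k by (metis diff_Suc_1 last_conv_nth length_greater_0_conv zero_less_Suc)

lemma c_top0: "fst (ctop E c) ! 0 = fst (Ps ! i) ! p" using c_top_nth(1)[of 0] by simp
lemma c_topm: "fst (ctop E c) ! tlen = fst (Ps ! i) ! (p + tlen)" using c_top_nth(1)[of tlen] by simp

lemma c_top_sub: "set (fst (ctop E c)) \<subseteq> set (fst (Ps ! i))" "set (snd (ctop E c)) \<subseteq> set (snd (Ps ! i))"
  by (subst c_top, rule sub_set)+

lemma c_bot_sub': "set (fst (cbot E c)) \<subseteq> set (fst (Ps ! Suc i))" "set (snd (cbot E c)) \<subseteq> set (snd (Ps ! Suc i))"
  by (subst c_bot_sub, rule sub_set)+

lemma c_next_sub: "set (fst (Ps ! Suc i)) \<subseteq> set (fst (Ps ! i)) \<union> set (fst (cbot E c))"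
  "set (snd (Ps ! Suc i)) \<subseteq> set (snd (Ps ! i)) \<union> set (snd (cbot E c))"
  using c_next unfolding splice_def by (auto dest: in_set_takeD in_set_dropD)

lemma c_bot_ends: "set (fst (cbot E c)) = {fst (Ps ! i) ! p, fst (Ps ! i) ! (p + tlen)} \<union> set (inner (fst (cbot E c)))"
  using set_ends_inner[of "fst (cbot E c)"] c_k c_hd c_last by simp

lemma c_birthV: "x \<in> set (fst (Ps ! Suc i)) \<Longrightarrow> x \<notin> set (fst (Ps ! i)) \<Longrightarrow> x \<in> set (inner (fst (cbot E c)))"
proof -
  assume a: "x \<in> set (fst (Ps ! Suc i))" "x \<notin> set (fst (Ps ! i))"
  then have "x \<in> set (fst (cbot E c))" using c_next_sub by blast
  moreover have "fst (Ps ! i) ! p \<in> set (fst (Ps ! i))" "fst (Ps ! i) ! (p + tlen) \<in> set (fst (Ps ! i))"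
    using c_lenP c_m by auto
  ultimately show ?thesis using a c_bot_ends by auto
qed

lemma c_birthE: "e \<in> set (snd (Ps ! Suc i)) \<Longrightarrow> e \<notin> set (snd (Ps ! i)) \<Longrightarrow> e \<in> set (snd (cbot E c))"
  using c_next_sub by blast

lemma c_deathV: "x \<in> set (inner (fst (ctop E c))) \<Longrightarrow> x \<notin> set (fst (Ps ! Suc i))"
proof
  assume x: "x \<in> set (inner (fst (ctop E c)))" and x': "x \<in> set (fst (Ps ! Suc i))"
  obtain r where r: "0 < r" "Suc r < length (fst (ctop E c))" "fst (ctop E c) ! r = x"
    using inner_nth_ex[OF x] by blast
  have rm: "r < tlen" using r c_lentop by simp
  let ?V = "fst (Ps ! i)"
  have xv: "x = ?V ! (p + r)" using c_top_nth(1)[of r] r rm by simp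
  have pr: "p + r < length ?V" using c_m rm c_lenP by simp
  have d: "distinct ?V" using distV i by simp
  have "x \<in> set (take p ?V) \<or> x \<in> set (fst (cbot E c)) \<or> x \<in> set (drop (Suc (p + tlen)) ?V)"
    using x' c_next by (simp add: splice_def)
  moreover have "x \<notin> set (take p ?V)" using distinct_take_iff[OF d pr] xv by simp
  moreover have "x \<notin> set (drop (Suc (p + tlen)) ?V)" using distinct_drop_iff[OF d pr] xv rm by simp
  moreover have "x \<notin> set (inner (fst (cbot E c)))" using freshV[OF i ci, of x i] xv pr by auto
  moreover have "x \<noteq> ?V ! p" "x \<noteq> ?V ! (p + tlen)"
    using nth_eq_iff_index_eq[OF d] pr xv r rm c_m c_lenP by auto
  ultimately show False using c_bot_ends by blast
qed

lemma c_deathE: "e \<in> set (snd (ctop E c)) \<Longrightarrow> e \<notin> set (snd (Ps ! Suc i))"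
proof
  assume e: "e \<in> set (snd (ctop E c))" and e': "e \<in> set (snd (Ps ! Suc i))"
  obtain r where r: "r < tlen" "snd (ctop E c) ! r = e" using e by (metis in_set_conv_nth)
  let ?Es = "snd (Ps ! i)"
  have xv: "e = ?Es ! (p + r)" using c_top_nth(2)[of r] r by simp
  have pr: "p + r < length ?Es" using c_m r by simp
  have d: "distinct ?Es" using distE i by simp
  have "e \<in> set (take p ?Es) \<or> e \<in> set (snd (cbot E c)) \<or> e \<in> set (drop (p + tlen) ?Es)"
    using e' c_next by (simp add: splice_def)
  moreover have "e \<notin> set (take p ?Es)" using distinct_take_iff[OF d pr] xv by simp
  moreover have "e \<notin> set (drop (p + tlen) ?Es)" using distinct_drop_iff[OF d pr] xv r by simp
  moreover have "e \<notin> set (snd (cbot E c))" using freshE[OF i ci, of e i] xv pr by auto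
  ultimately show False by blast
qed

end

lemma birthV:
  assumes "i < length cs" "x \<in> set (fst (Ps ! Suc i))" "x \<notin> set (fst (Ps ! i))"
  shows "\<exists>c. cs ! i = Some c \<and> x \<in> set (inner (fst (cbot E c)))"
proof (cases "cs ! i")
  case None then show ?thesis using nonestep assms by simp
next
  case (Some c)
  then obtain p where "cstepp R E c p (Ps ! i) (Ps ! Suc i)" using somestep assms by blast
  then show ?thesis using c_birthV[OF assms(1) Some] assms Some by blast
qed

lemma birthE:
  assumes "i < length cs" "e \<in> set (snd (Ps ! Suc i))" "e \<notin> set (snd (Ps ! i))"
  shows "\<exists>c. cs ! i = Some c \<and> e \<in> set (snd (cbot E c))"
proof (cases "cs ! i")
  case None then show ?thesis using nonestep assms by simp
next
  case (Some c)
  then obtain p where "cstepp R E c p (Ps ! i) (Ps ! Suc i)" using somestep assms by blast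
  then show ?thesis using c_birthE[OF assms(1) Some] assms Some by blast
qed

lemma absentV:
  assumes "x \<in> set (fst (Ps ! a))" "x \<notin> set (fst (Ps ! m))" "a \<le> m" "m \<le> b" "b \<le> length cs"
  shows "x \<notin> set (fst (Ps ! b))"
  using assms(4,5)
proof (induction b rule: dec_induct)
  case base then show ?case using assms(2) by simp
next
  case (step b)
  show ?case
  proof
    assume xb: "x \<in> set (fst (Ps ! Suc b))"
    have "x \<notin> set (fst (Ps ! b))" using step by simp
    then obtain c where "cs ! b = Some c" "x \<in> set (inner (fst (cbot E c)))"
      using birthV[of b x] step xb by auto
    then show False using freshV[of b c x a] assms step by auto
  qed
qed

lemma persistV:
  assumes "x \<in> set (fst (Ps ! a))" "x \<in> set (fst (Ps ! b))" "a \<le> m" "m \<le> b" "b \<le> length cs"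
  shows "x \<in> set (fst (Ps ! m))"
  using absentV assms by blast

lemma absentE:
  assumes "x \<in> set (snd (Ps ! a))" "x \<notin> set (snd (Ps ! m))" "a \<le> m" "m \<le> b" "b \<le> length cs"
  shows "x \<notin> set (snd (Ps ! b))"
  using assms(4,5)
proof (induction b rule: dec_induct)
  case base then show ?case using assms(2) by simp
next
  case (step b)
  show ?case
  proof
    assume xb: "x \<in> set (snd (Ps ! Suc b))"
    have "x \<notin> set (snd (Ps ! b))" using step by simp
    then obtain c where "cs ! b = Some c" "x \<in> set (snd (cbot E c))"
      using birthE[of b x] step xb by auto
    then show False using freshE[of b c x a] assms step by auto
  qed
qed

lemma persistE:
  assumes "x \<in> set (snd (Ps ! a))" "x \<in> set (snd (Ps ! b))" "a \<le> m" "m \<le> b" "b \<le> length cs"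
  shows "x \<in> set (snd (Ps ! m))"
  using absentE assms by blast

section \<open>Labels of parallel positive paths agree\<close>

lemma UE_Suc: "UE Ps (Suc i) = UE Ps i \<union> set (snd (Ps ! Suc i))"
  unfolding UE_def by (auto simp: atMost_Suc)
lemma UV_Suc: "UV Ps (Suc i) = UV Ps i \<union> set (fst (Ps ! Suc i))"
  unfolding UV_def by (auto simp: atMost_Suc)

lemma Q_level:
  assumes sg: "\<forall>(x, y) \<in> R. x \<noteq> [] \<and> y \<noteq> []"
  shows "i \<le> length cs \<Longrightarrow> QF R E (UE Ps i)"
proof (induction i)
  case 0
  have "UE Ps 0 = set (snd (Ps ! 0))" by (simp add: UE_def)
  then show ?case using QF_gpath[OF gp[of 0]] by simp
next
  case (Suc i)
  then have i: "i < length cs" by simp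
  have IH: "QF R E (UE Ps i)" using Suc by simp
  show ?case
  proof (cases "cs ! i")
    case None
    have "set (snd (Ps ! Suc i)) \<subseteq> UE Ps i" using nonestep[OF i None] unfolding UE_def by auto
    then have "UE Ps (Suc i) = UE Ps i" using UE_Suc[of i] by auto
    then show ?thesis using IH by simp
  next
    case (Some c)
    then obtain p where cp: "cstepp R E c p (Ps ! i) (Ps ! Suc i)" using somestep i by blast
    note cc = c_m[OF i Some cp] c_k[OF i Some cp] c_gbot[OF i Some cp] c_gtop[OF i Some cp]
      c_bot0[OF i Some cp] c_botk[OF i Some cp] c_top0[OF i Some cp] c_topm[OF i Some cp]
      c_rel[OF i Some cp] c_top_sub[OF i Some cp] c_lenP[OF i Some cp]
    let ?bv = "fst (cbot E c)" and ?be = "snd (cbot E c)" and ?te = "snd (ctop E c)"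
    have "qstep R E (UE Ps i) (UV Ps i) ?bv ?be ?te"
    proof (unfold_locales)
      show "\<forall>(x, y) \<in> R. x \<noteq> [] \<and> y \<noteq> []" using sg .
      show "QF R E (UE Ps i)" using IH .
      show "length ?bv = Suc (length ?be)" using cc by simp
      show "?be \<noteq> []" using cc by auto
      show "distinct ?bv" using cc by (simp add: gpath_def)
      show "\<forall>r<length ?be. esrc E (?be ! r) = ?bv ! r \<and> etgt E (?be ! r) = ?bv ! Suc r"
        using cc by (simp add: gpath_def)
      show "set (inner ?bv) \<inter> UV Ps i = {}"
        using freshV[OF i Some] unfolding UV_def by blast
      show "\<forall>e\<in>UE Ps i. esrc E e \<in> UV Ps i \<and> etgt E e \<in> UV Ps i"
      proof
        fix e assume "e \<in> UE Ps i"
        then obtain j where j: "j \<le> i" "e \<in> set (snd (Ps ! j))" unfolding UE_def by blast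
        have jl: "j \<le> length cs" using j i by simp
        obtain q where q: "q < length (snd (Ps ! j))" "esrc E e = fst (Ps ! j) ! q" "etgt E e = fst (Ps ! j) ! Suc q"
          using gpath_edge[OF gp[OF jl] j(2)] by blast
        have "length (fst (Ps ! j)) = Suc (length (snd (Ps ! j)))" using lenV[OF jl] .
        then have "fst (Ps ! j) ! q \<in> set (fst (Ps ! j))" "fst (Ps ! j) ! Suc q \<in> set (fst (Ps ! j))"
          using q by auto
        then show "esrc E e \<in> UV Ps i \<and> etgt E e \<in> UV Ps i" using j q unfolding UV_def by auto
      qed
      have "p < length (fst (Ps ! i))" "p + tlen c < length (fst (Ps ! i))" using cc by simp_all
      then have "fst (Ps ! i) ! p \<in> set (fst (Ps ! i))" "fst (Ps ! i) ! (p + tlen c) \<in> set (fst (Ps ! i))"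
        by simp_all
      then have "fst (Ps ! i) ! p \<in> UV Ps i" "fst (Ps ! i) ! (p + tlen c) \<in> UV Ps i"
        unfolding UV_def by blast+
      then show "?bv ! 0 \<in> UV Ps i" "?bv ! length ?be \<in> UV Ps i" using cc by auto
      have "walk E (fst (ctop E c) ! 0) (fst (ctop E c) ! tlen c) ?te" using gpath_walk[OF cc(6)] by simp
      then show "walk E (?bv ! 0) (?bv ! length ?be) ?te" using cc by simp
      show "set ?te \<subseteq> UE Ps i" using cc unfolding UE_def by auto
      show "rel R (lab E ?te) (lab E ?be)" using cc by simp
    qed
    then have "QF R E (UE Ps i \<union> set ?be)" by (rule qstep.QG)
    moreover have "UE Ps (Suc i) = UE Ps i \<union> set ?be"
      using UE_Suc[of i] c_next_sub[OF i Some cp] c_bot_sub'[OF i Some cp] unfolding UE_def by auto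
    ultimately show ?thesis by simp
  qed
qed

theorem Q_all:
  assumes sg: "\<forall>(x, y) \<in> R. x \<noteq> [] \<and> y \<noteq> []"
    and p1: "is_pos_path E a b es1" and p2: "is_pos_path E a b es2"
  shows "eqv R (lab E es1) (lab E es2)"
proof -
  have "QF R E (UE Ps (length cs))" using Q_level[OF sg] by simp
  moreover have "edges E = UE Ps (length cs)" using edgesUE .
  ultimately show ?thesis using p1 p2 unfolding QF_def is_pos_path_walk by metis
qed

end

lemma gpath_eq:
  assumes g1: "gpath E P" and g2: "gpath E P'" and e: "snd P = snd P'" and ne: "snd P \<noteq> []"
  shows "P = P'"
proof -
  have l: "length (fst P) = length (fst P')" using g1 g2 e by (simp add: gpath_def)
  have "fst P ! t = fst P' ! t" if t: "t < length (fst P)" for t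
  proof (cases "t < length (snd P)")
    case True
    then show ?thesis using g1 g2 e unfolding gpath_def by metis
  next
    case False
    have "0 < length (snd P)" using ne by simp
    moreover have "t < Suc (length (snd P))" using t g1 by (simp add: gpath_def)
    ultimately have t': "t = Suc (t - 1)" "t - 1 < length (snd P)" using False by arith+
    then show ?thesis using g1 g2 e unfolding gpath_def by metis
  qed
  then have "fst P = fst P'" using l by (simp add: nth_equalityI)
  then show ?thesis using e by (simp add: prod_eq_iff)
qed

lemma splice_nthV:
  assumes lP: "length (fst P) = Suc (length (snd P))" and pn: "p + n \<le> length (snd P)"
    and lQ: "length (fst Q) = Suc (length (snd Q))"
    and endQ: "fst Q ! length (snd Q) = fst P ! (p + n)"
    and t: "t < length (fst (splice p n P Q))"
  shows "t < p \<Longrightarrow> fst (splice p n P Q) ! t = fst P ! t"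
    "p \<le> t \<Longrightarrow> t \<le> p + length (snd Q) \<Longrightarrow> fst (splice p n P Q) ! t = fst Q ! (t - p)"
    "p + length (snd Q) \<le> t \<Longrightarrow> fst (splice p n P Q) ! t = fst P ! (t - length (snd Q) + n)"
proof -
  let ?V = "fst P" and ?VQ = "fst Q" and ?k = "length (snd Q)"
  have sp: "fst (splice p n P Q) = take p ?V @ ?VQ @ drop (Suc (p + n)) ?V" by (simp add: splice_def)
  have ltp: "length (take p ?V) = p" using lP pn by simp
  show "t < p \<Longrightarrow> fst (splice p n P Q) ! t = fst P ! t" using sp ltp by (simp add: nth_append)
  show "p \<le> t \<Longrightarrow> t \<le> p + ?k \<Longrightarrow> fst (splice p n P Q) ! t = ?VQ ! (t - p)"
  proof -
    assume "p \<le> t" "t \<le> p + ?k"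
    then have "t - p < length ?VQ" using lQ by simp
    then show ?thesis using sp ltp \<open>p \<le> t\<close> by (simp add: nth_append)
  qed
  assume a: "p + ?k \<le> t"
  show "fst (splice p n P Q) ! t = ?V ! (t - ?k + n)"
  proof (cases "t = p + ?k")
    case True
    then show ?thesis using sp ltp lQ endQ by (simp add: nth_append)
  next
    case False
    then have "t > p + ?k" using a by simp
    then have "\<not> t < p" "\<not> (t - p < length ?VQ)" using lQ by simp_all
    then have "fst (splice p n P Q) ! t = drop (Suc (p + n)) ?V ! (t - p - Suc ?k)"
      using sp ltp lQ by (simp add: nth_append)
    also have "\<dots> = ?V ! (Suc (p + n) + (t - p - Suc ?k))"
      using t sp lP pn by (auto simp: nth_drop)
    also have "Suc (p + n) + (t - p - Suc ?k) = t - ?k + n" using \<open>t > p + ?k\<close> by simp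
    finally show ?thesis .
  qed
qed

lemma splice_nthE:
  assumes pn: "p + n \<le> length (snd P)"
    and t: "t < length (snd (splice p n P Q))"
  shows "t < p \<Longrightarrow> snd (splice p n P Q) ! t = snd P ! t"
    "p \<le> t \<Longrightarrow> t < p + length (snd Q) \<Longrightarrow> snd (splice p n P Q) ! t = snd Q ! (t - p)"
    "p + length (snd Q) \<le> t \<Longrightarrow> snd (splice p n P Q) ! t = snd P ! (t - length (snd Q) + n)"
proof -
  let ?Es = "snd P" and ?k = "length (snd Q)"
  have sp: "snd (splice p n P Q) = take p ?Es @ snd Q @ drop (p + n) ?Es" by (simp add: splice_def)
  have ltp: "length (take p ?Es) = p" using pn by simp
  show "t < p \<Longrightarrow> snd (splice p n P Q) ! t = ?Es ! t" using sp ltp by (simp add: nth_append)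
  show "p \<le> t \<Longrightarrow> t < p + ?k \<Longrightarrow> snd (splice p n P Q) ! t = snd Q ! (t - p)"
  proof -
    assume "p \<le> t" "t < p + ?k"
    then have "t - p < length (snd Q)" by simp
    then show ?thesis using sp ltp \<open>p \<le> t\<close> by (simp add: nth_append)
  qed
  assume a: "p + ?k \<le> t"
  then have "\<not> t < p" "\<not> (t - p < ?k)" by simp_all
  then have "snd (splice p n P Q) ! t = drop (p + n) ?Es ! (t - p - ?k)"
    using sp ltp by (simp add: nth_append)
  also have "\<dots> = ?Es ! (p + n + (t - p - ?k))"
    using t sp pn by (auto simp: nth_drop)
  also have "p + n + (t - p - ?k) = t - ?k + n" using a by simp
  finally show "snd (splice p n P Q) ! t = ?Es ! (t - ?k + n)" .
qed

lemma gpath_splice: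
  assumes gP: "gpath E P" and pn: "p + n \<le> length (snd P)" and gQ: "gpath E Q"
    and neQ: "snd Q \<noteq> []"
    and s0: "fst Q ! 0 = fst P ! p" and sk: "fst Q ! length (snd Q) = fst P ! (p + n)"
    and disj: "set (inner (fst Q)) \<inter> set (fst P) = {}"
  shows "gpath E (splice p n P Q)"
proof -
  let ?V = "fst P" and ?Es = "snd P" and ?VQ = "fst Q" and ?EQ = "snd Q" and ?k = "length (snd Q)"
  have lP: "length ?V = Suc (length ?Es)" and dP: "distinct ?V" using gP by (auto simp: gpath_def)
  have lQ: "length ?VQ = Suc ?k" and dQ: "distinct ?VQ" using gQ by (auto simp: gpath_def)
  have len: "length (fst (splice p n P Q)) = Suc (length (snd (splice p n P Q)))"
    using splice_len[OF lP pn lQ] .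
  have pl: "p < length ?V" "p + n < length ?V" using lP pn by auto
  have setQ: "set ?VQ = {?V ! p, ?V ! (p + n)} \<union> set (inner ?VQ)"
  proof -
    have "2 \<le> length ?VQ" using lQ neQ by (cases ?EQ) auto
    moreover have "?VQ \<noteq> []" using lQ by auto
    then have "hd ?VQ = ?VQ ! 0" "last ?VQ = ?VQ ! ?k" using lQ by (simp_all add: hd_conv_nth last_conv_nth)
    ultimately show ?thesis using set_ends_inner[of ?VQ] s0 sk by simp
  qed
  have dist: "distinct (fst (splice p n P Q))"
  proof -
    have "distinct (take p ?V)" "distinct (drop (Suc (p + n)) ?V)" using dP by auto
    moreover have "set (take p ?V) \<inter> set (drop (Suc (p + n)) ?V) = {}"
      using dP by (simp add: set_take_disj_set_drop_if_distinct)
    moreover have "set (take p ?V) \<inter> set ?VQ = {}"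
    proof -
      have h: "?V ! p \<notin> set (take p ?V)" "?V ! (p + n) \<notin> set (take p ?V)"
        using distinct_take_iff[OF dP] pl by auto
      have "y \<notin> set (take p ?V)" if y: "y \<in> set ?VQ" for y
      proof -
        have "y = ?V ! p \<or> y = ?V ! (p + n) \<or> y \<in> set (inner ?VQ)" using y setQ by blast
        then show ?thesis using h disj set_take_subset[of p ?V] by blast
      qed
      then show ?thesis by blast
    qed
    moreover have "set (drop (Suc (p + n)) ?V) \<inter> set ?VQ = {}"
    proof -
      have h: "?V ! p \<notin> set (drop (Suc (p + n)) ?V)" "?V ! (p + n) \<notin> set (drop (Suc (p + n)) ?V)"
        using distinct_drop_iff[OF dP] pl by auto
      have "y \<notin> set (drop (Suc (p + n)) ?V)" if y: "y \<in> set ?VQ" for y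
      proof -
        have "y = ?V ! p \<or> y = ?V ! (p + n) \<or> y \<in> set (inner ?VQ)" using y setQ by blast
        then show ?thesis using h disj set_drop_subset[of "Suc (p + n)" ?V] by blast
      qed
      then show ?thesis by blast
    qed
    ultimately show ?thesis using dQ by (auto simp: splice_def)
  qed
  have sv: "set (fst (splice p n P Q)) \<subseteq> verts E"
    using gP gQ unfolding gpath_def splice_def by (auto dest: in_set_takeD in_set_dropD)
  have se: "set (snd (splice p n P Q)) \<subseteq> edges E"
    using gP gQ unfolding gpath_def splice_def by (auto dest: in_set_takeD in_set_dropD)
  have cP: "\<forall>t < length ?Es. esrc E (?Es ! t) = ?V ! t \<and> etgt E (?Es ! t) = ?V ! Suc t"
    using gP by (simp add: gpath_def)
  have cQ: "\<forall>t < ?k. esrc E (?EQ ! t) = ?VQ ! t \<and> etgt E (?EQ ! t) = ?VQ ! Suc t"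
    using gQ by (simp add: gpath_def)
  have cons: "esrc E (snd (splice p n P Q) ! t) = fst (splice p n P Q) ! t \<and>
      etgt E (snd (splice p n P Q) ! t) = fst (splice p n P Q) ! Suc t"
    if t: "t < length (snd (splice p n P Q))" for t
  proof -
    have t1: "t < length (fst (splice p n P Q))" "Suc t < length (fst (splice p n P Q))" using t len by auto
    note nV = splice_nthV[OF lP pn lQ sk] and nE = splice_nthE[OF pn t]
    have lsp: "length (snd (splice p n P Q)) = length ?Es - n + ?k" using pn by (simp add: splice_def)
    consider (a) "t < p" | (b) "p \<le> t" "t < p + ?k" | (c) "p + ?k \<le> t" by linarith
    then show ?thesis
    proof cases
      case a
      have "fst (splice p n P Q) ! Suc t = ?V ! Suc t"
      proof (cases "Suc t < p")
        case True then show ?thesis using nV(1)[OF t1(2)] by simp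
      next
        case False
        then have "Suc t = p" using a by simp
        then show ?thesis using nV(2)[OF t1(2)] s0 by simp
      qed
      then show ?thesis using nE(1) a nV(1)[OF t1(1)] cP pn by simp
    next
      case b
      then show ?thesis using nE(2) nV(2)[OF t1(1)] nV(2)[OF t1(2)] cQ
        by (simp add: Suc_diff_le)
    next
      case c
      have tk: "t - ?k + n < length ?Es" using t lsp c by simp
      have "fst (splice p n P Q) ! Suc t = ?V ! (Suc t - ?k + n)" using nV(3)[OF t1(2)] c by simp
      moreover have "Suc t - ?k + n = Suc (t - ?k + n)" using c by simp
      ultimately show ?thesis using nE(3) c nV(3)[OF t1(1)] cP tk by simp
    qed
  qed
  show ?thesis unfolding gpath_def using len dist sv se cons by blast
qed

lemma map_splice: "map_dpath fv fe (splice p n P Q) = splice p n (map_dpath fv fe P) (map_dpath fv fe Q)"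
  by (simp add: map_dpath_def splice_def take_map drop_map)

lemma map_sub: "map_dpath fv fe (sub p n P) = sub p n (map_dpath fv fe P)"
  by (simp add: map_dpath_def sub_def take_map drop_map)

lemma inner_map: "inner (map f xs) = map f (inner xs)"
  by (simp add: inner_def map_butlast map_tl)

lemma Least_nth_distinct:
  assumes "distinct xs" "r < length xs"
  shows "(LEAST i. xs ! i = xs ! r) = r"
proof (rule Least_equality)
  show "xs ! r = xs ! r" by simp
  fix y assume "xs ! y = xs ! r"
  show "r \<le> y"
  proof (rule ccontr)
    assume "\<not> r \<le> y"
    then have "y < length xs" "y \<noteq> r" using assms by auto
    then show False using \<open>xs ! y = xs ! r\<close> nth_eq_iff_index_eq[OF assms(1)] assms(2) by blast
  qed
qed

lemma split_at: "p \<le> length xs \<Longrightarrow> \<exists>a r. xs = a @ r \<and> length a = p"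
  by (rule exI[of _ "take p xs"], rule exI[of _ "drop p xs"]) simp

lemma decomp5:
  assumes "p + n \<le> q" "q + mm \<le> length es"
  obtains a b c d f where "es = a @ b @ c @ d @ f" "length a = p" "length b = n"
    "length c = q - p - n" "length d = mm"
proof -
  obtain a r1 where 1: "es = a @ r1" "length a = p" using split_at[of p es] assms by auto
  obtain b r2 where 2: "r1 = b @ r2" "length b = n" using split_at[of n r1] assms 1 by auto
  have "q - p - n \<le> length r2" using assms 1 2 by simp
  then obtain c r3 where 3: "r2 = c @ r3" "length c = q - p - n" using split_at[of "q - p - n" r2] by auto
  have "mm \<le> length r3" using assms 1 2 3 by simp
  then obtain d f where 4: "r3 = d @ f" "length d = mm" using split_at[of mm r3] by auto
  show ?thesis using that[of a b c d f] 1 2 3 4 by simp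
qed

lemma ea_sub1:
  assumes "p + n \<le> q" "q + mm \<le> length es"
  shows "take n (drop p (take q es @ ey @ drop (q + mm) es)) = take n (drop p es)"
proof -
  obtain a b c d f where es: "es = a @ b @ c @ d @ f" and l: "length a = p" "length b = n"
    "length c = q - p - n" "length d = mm" using decomp5[OF assms] by blast
  have q: "q = length a + length b + length c" using l assms by simp
  show ?thesis unfolding es q using l by simp
qed

lemma ea_splice1:
  assumes "p + n \<le> q" "q + mm \<le> length es"
  shows "take (q - n + length ex) (take p es @ ex @ drop (p + n) es) @ ey @
          drop (q - n + length ex + mm) (take p es @ ex @ drop (p + n) es)
       = take p (take q es @ ey @ drop (q + mm) es) @ ex @ drop (p + n) (take q es @ ey @ drop (q + mm) es)"
proof -
  obtain a b c d f where es: "es = a @ b @ c @ d @ f" and l: "length a = p" "length b = n"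
    "length c = q - p - n" "length d = mm" using decomp5[OF assms] by blast
  have q: "q = length a + length b + length c" using l assms by simp
  show ?thesis unfolding es q using l by simp
qed

lemma ea_pos1:
  assumes "p + n \<le> q" "q + mm \<le> length es"
  shows "take mm (drop (q - n + length ex) (take p es @ ex @ drop (p + n) es)) = take mm (drop q es)"
proof -
  obtain a b c d f where es: "es = a @ b @ c @ d @ f" and l: "length a = p" "length b = n"
    "length c = q - p - n" "length d = mm" using decomp5[OF assms] by blast
  have q: "q = length a + length b + length c" using l assms by simp
  show ?thesis unfolding es q using l by simp
qed

lemma ea_sub2:
  assumes "q + mm \<le> p" "p + n \<le> length es"
  shows "take n (drop (p - mm + length ey) (take q es @ ey @ drop (q + mm) es)) = take n (drop p es)"
proof -
  obtain a b c d f where es: "es = a @ b @ c @ d @ f" and l: "length a = q" "length b = mm"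
    "length c = p - q - mm" "length d = n" using decomp5[OF assms] by blast
  have p: "p = length a + length b + length c" using l assms by simp
  show ?thesis unfolding es p using l by simp
qed

lemma ea_splice2:
  assumes "q + mm \<le> p" "p + n \<le> length es"
  shows "take q (take p es @ ex @ drop (p + n) es) @ ey @ drop (q + mm) (take p es @ ex @ drop (p + n) es)
       = take (p - mm + length ey) (take q es @ ey @ drop (q + mm) es) @ ex @
         drop (p - mm + length ey + n) (take q es @ ey @ drop (q + mm) es)"
proof -
  obtain a b c d f where es: "es = a @ b @ c @ d @ f" and l: "length a = q" "length b = mm"
    "length c = p - q - mm" "length d = n" using decomp5[OF assms] by blast
  have p: "p = length a + length b + length c" using l assms by simp
  show ?thesis unfolding es p using l by simp
qed

lemma ea_pos2:
  assumes "q + mm \<le> p" "p + n \<le> length es"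
  shows "take mm (drop q (take p es @ ex @ drop (p + n) es)) = take mm (drop q es)"
proof -
  obtain a b c d f where es: "es = a @ b @ c @ d @ f" and l: "length a = q" "length b = mm"
    "length c = p - q - mm" "length d = n" using decomp5[OF assms] by blast
  have p: "p = length a + length b + length c" using l assms by simp
  show ?thesis unfolding es p using l by simp
qed

lemma ea_undo:
  assumes "p + m \<le> length es" "length em = mm"
  shows "take p (take p es @ em @ drop (p + m) es) @ take m (drop p es) @
         drop (p + mm) (take p es @ em @ drop (p + m) es) = es"
proof -
  have "take p (take p es @ em @ drop (p + m) es) = take p es" using assms by simp
  moreover have "drop (p + mm) (take p es @ em @ drop (p + m) es) = drop (p + m) es"
    using assms by (simp add: drop_append)
  ultimately show ?thesis using assms
    by (metis append_take_drop_id drop_drop take_add add.commute)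
qed

locale dip = stk R E cs Ps
  for R :: "('a list \<times> 'a list) set" and E cs Ps +
  fixes c1 c2 i1 i2 p1 p2
  assumes sg: "\<forall>(x, y) \<in> R. x \<noteq> [] \<and> y \<noteq> []"
    and i1: "i1 < length cs" "cs ! i1 = Some c1" "cstepp R E c1 p1 (Ps ! i1) (Ps ! Suc i1)"
    and i2: "i2 < length cs" "cs ! i2 = Some c2" "cstepp R E c2 p2 (Ps ! i2) (Ps ! Suc i2)"
    and dp: "is_dipole E c1 c2"
begin

abbreviation "tv \<equiv> fst (ctop E c1)"
abbreviation "te \<equiv> snd (ctop E c1)"
abbreviation "mv \<equiv> fst (cbot E c1)"
abbreviation "me \<equiv> snd (cbot E c1)"
abbreviation "bv \<equiv> fst (cbot E c2)"
abbreviation "be \<equiv> snd (cbot E c2)"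
abbreviation "mlen \<equiv> length te"
abbreviation "mmid \<equiv> length me"

lemma c12: "c1 \<noteq> c2" using dp by (simp add: is_dipole_def)
lemma mid2: "ctop E c2 = cbot E c1" using dp by (simp add: is_dipole_def)
lemma labtb: "map (elab E) te = map (elab E) be" using dp by (simp add: is_dipole_def)
lemma lenbe: "length be = mlen" using labtb by (metis length_map)

lemma inner_subset: "set (inner xs) \<subseteq> set xs"
  by (cases xs) (auto simp: inner_def dest: in_set_butlastD)

lemmas s1 = c_m[OF i1] c_top[OF i1] c_next[OF i1] c_k[OF i1] c_gtop[OF i1] c_gbot[OF i1]
  c_bot_sub[OF i1] c_top_nth[OF i1] c_bot_nth[OF i1] c_bot0[OF i1] c_botk[OF i1]
  c_top0[OF i1] c_topm[OF i1] c_top_sub[OF i1] c_bot_sub'[OF i1] c_lentop[OF i1] c_rel[OF i1]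
lemmas s2 = c_m[OF i2] c_top[OF i2] c_next[OF i2] c_k[OF i2] c_gtop[OF i2] c_gbot[OF i2]
  c_bot_sub[OF i2] c_top_nth[OF i2] c_bot_nth[OF i2] c_bot0[OF i2] c_botk[OF i2]
  c_top0[OF i2] c_topm[OF i2] c_top_sub[OF i2] c_bot_sub'[OF i2] c_lentop[OF i2]

lemma lens: "0 < mlen" "0 < mmid" "length tv = Suc mlen" "length mv = Suc mmid" "length bv = Suc mlen"
  using s1 s2 lenbe mid2 by auto

lemma i12: "i1 < i2"
proof (rule ccontr)
  assume "\<not> i1 < i2"
  then have le: "i2 \<le> i1" by simp
  have "me ! 0 \<in> set me" using lens by simp
  moreover have "set me \<subseteq> set (snd (Ps ! i2))" using c_top_sub[OF i2] mid2 by simp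
  ultimately show False using freshE[OF i1(1,2), of "me ! 0" i2] le by blast
qed

lemma gtop: "gpath E (ctop E c1)" using s1 by simp
lemma gmid: "gpath E (cbot E c1)" using s1 by simp
lemma gbot: "gpath E (cbot E c2)" using s2 by simp

lemma dtv: "distinct tv" using gtop by (simp add: gpath_def)
lemma dmv: "distinct mv" using gmid by (simp add: gpath_def)
lemma dbv: "distinct bv" using gbot by (simp add: gpath_def)
lemma dte: "distinct te" using gtop gpath_edges_distinct by fastforce
lemma dme: "distinct me" using gmid gpath_edges_distinct by fastforce
lemma dbe: "distinct be" using gbot gpath_edges_distinct by fastforce

lemma ctop_cons: "r < mlen \<Longrightarrow> esrc E (te ! r) = tv ! r \<and> etgt E (te ! r) = tv ! Suc r"
  using gtop by (simp add: gpath_def)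
lemma cmid_cons: "r < mmid \<Longrightarrow> esrc E (me ! r) = mv ! r \<and> etgt E (me ! r) = mv ! Suc r"
  using gmid by (simp add: gpath_def)
lemma cbot_cons: "r < mlen \<Longrightarrow> esrc E (be ! r) = bv ! r \<and> etgt E (be ! r) = bv ! Suc r"
  using gbot lenbe by (simp add: gpath_def)

lemma ends: "tv ! 0 = mv ! 0" "bv ! 0 = mv ! 0" "tv ! mlen = mv ! mmid" "bv ! mlen = mv ! mmid"
proof -
  show "tv ! 0 = mv ! 0" using s1 by simp
  have "fst (ctop E c2) ! 0 = fst (Ps ! i2) ! p2" using s2 by simp
  then show "bv ! 0 = mv ! 0" using s2 mid2 by simp
  show "tv ! mlen = mv ! mmid" using s1 by simp
  have "fst (ctop E c2) ! length (snd (ctop E c2)) = fst (Ps ! i2) ! (p2 + length (snd (ctop E c2)))"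
    using s2 by simp
  then show "bv ! mlen = mv ! mmid" using s2 mid2 lenbe by simp
qed

lemma tvI: "x \<in> set (inner tv) \<Longrightarrow> x \<in> set (fst (Ps ! j)) \<Longrightarrow> j \<le> length cs \<Longrightarrow> j \<le> i1"
proof (rule ccontr)
  assume x: "x \<in> set (inner tv)" "x \<in> set (fst (Ps ! j))" "j \<le> length cs" "\<not> j \<le> i1"
  have "x \<in> set (fst (Ps ! i1))" using x(1) c_top_sub(1)[OF i1] inner_subset[of tv] by blast
  moreover have "x \<notin> set (fst (Ps ! Suc i1))" using c_deathV[OF i1] x(1) by blast
  ultimately have "x \<notin> set (fst (Ps ! j))" using absentV[of x i1 "Suc i1" j] x by simp
  then show False using x by simp
qed

lemma teI: "e \<in> set te \<Longrightarrow> e \<in> set (snd (Ps ! j)) \<Longrightarrow> j \<le> length cs \<Longrightarrow> j \<le> i1"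
proof (rule ccontr)
  assume x: "e \<in> set te" "e \<in> set (snd (Ps ! j))" "j \<le> length cs" "\<not> j \<le> i1"
  have "e \<in> set (snd (Ps ! i1))" using x(1) c_top_sub[OF i1] by blast
  moreover have "e \<notin> set (snd (Ps ! Suc i1))" using c_deathE[OF i1] x(1) by blast
  ultimately have "e \<notin> set (snd (Ps ! j))" using absentE[of e i1 "Suc i1" j] x by simp
  then show False using x by simp
qed

lemma mvI: "x \<in> set (inner mv) \<Longrightarrow> x \<in> set (fst (Ps ! j)) \<Longrightarrow> j \<le> length cs \<Longrightarrow> i1 < j \<and> j \<le> i2"
proof -
  assume x: "x \<in> set (inner mv)" "x \<in> set (fst (Ps ! j))" "j \<le> length cs"
  have "\<not> j \<le> i1" using freshV[OF i1(1,2) x(1)] x(2) by blast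
  moreover have "j \<le> i2"
  proof (rule ccontr)
    assume "\<not> j \<le> i2"
    have "x \<in> set (fst (Ps ! i2))" using x(1) c_top_sub(1)[OF i2] mid2 inner_subset[of mv] by auto
    moreover have "x \<notin> set (fst (Ps ! Suc i2))" using c_deathV[OF i2] x(1) mid2 by simp
    ultimately have "x \<notin> set (fst (Ps ! j))" using absentV[of x i2 "Suc i2" j] x \<open>\<not> j \<le> i2\<close> by simp
    then show False using x by simp
  qed
  ultimately show ?thesis by simp
qed

lemma meI: "e \<in> set me \<Longrightarrow> e \<in> set (snd (Ps ! j)) \<Longrightarrow> j \<le> length cs \<Longrightarrow> i1 < j \<and> j \<le> i2"
proof -
  assume x: "e \<in> set me" "e \<in> set (snd (Ps ! j))" "j \<le> length cs"
  have "\<not> j \<le> i1" using freshE[OF i1(1,2) x(1)] x(2) by blast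
  moreover have "j \<le> i2"
  proof (rule ccontr)
    assume "\<not> j \<le> i2"
    have "e \<in> set (snd (Ps ! i2))" using x(1) c_top_sub[OF i2] mid2 by auto
    moreover have "e \<notin> set (snd (Ps ! Suc i2))" using c_deathE[OF i2] x(1) mid2 by simp
    ultimately have "e \<notin> set (snd (Ps ! j))" using absentE[of e i2 "Suc i2" j] x \<open>\<not> j \<le> i2\<close> by simp
    then show False using x by simp
  qed
  ultimately show ?thesis by simp
qed

lemma mvA: "x \<in> set mv \<Longrightarrow> i1 < j \<Longrightarrow> j \<le> i2 \<Longrightarrow> x \<in> set (fst (Ps ! j))"
proof -
  assume a: "x \<in> set mv" "i1 < j" "j \<le> i2"
  have "x \<in> set (fst (Ps ! Suc i1))" using a c_bot_sub'[OF i1] by blast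
  moreover have "x \<in> set (fst (Ps ! i2))" using a c_top_sub[OF i2] mid2 by auto
  ultimately show ?thesis using persistV[of x "Suc i1" i2 j] a i2 by simp
qed

lemma meA: "e \<in> set me \<Longrightarrow> i1 < j \<Longrightarrow> j \<le> i2 \<Longrightarrow> e \<in> set (snd (Ps ! j))"
proof -
  assume a: "e \<in> set me" "i1 < j" "j \<le> i2"
  have "e \<in> set (snd (Ps ! Suc i1))" using a c_bot_sub'[OF i1] by blast
  moreover have "e \<in> set (snd (Ps ! i2))" using a c_top_sub[OF i2] mid2 by auto
  ultimately show ?thesis using persistE[of e "Suc i1" i2 j] a i2 by simp
qed

lemma bvI: "x \<in> set (inner bv) \<Longrightarrow> x \<in> set (fst (Ps ! j)) \<Longrightarrow> i2 < j"
  using freshV[OF i2(1,2)] by (meson not_le)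

lemma beI: "e \<in> set be \<Longrightarrow> e \<in> set (snd (Ps ! j)) \<Longrightarrow> i2 < j"
  using freshE[OF i2(1,2)] by (meson not_le)

lemma tv_in: "set tv \<subseteq> set (fst (Ps ! i1))" using c_top_sub[OF i1] by simp
lemma te_in: "set te \<subseteq> set (snd (Ps ! i1))" using c_top_sub[OF i1] by simp

lemma tv_bv: "x \<in> set tv \<Longrightarrow> x \<notin> set (inner bv)"
  using tv_in bvI i12 by fastforce
lemma te_be: "e \<in> set te \<Longrightarrow> e \<notin> set be"
  using te_in beI i12 by fastforce
lemma tv_mv: "x \<in> set tv \<Longrightarrow> x \<notin> set (inner mv)"
  using tv_in mvI i1 by fastforce
lemma te_me: "e \<in> set te \<Longrightarrow> e \<notin> set me"
  using te_in meI i1 by fastforce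

lemma inner_iff: "length xs = Suc k \<Longrightarrow> x \<in> set (inner xs) \<longleftrightarrow> (\<exists>r. 0 < r \<and> r < k \<and> x = xs ! r)"
  using inner_nth inner_nth_ex by (metis Suc_less_eq)

lemma me_out:
  assumes e: "e \<in> edges E" "esrc E e = mv ! r" and r: "0 < r" "r < mmid"
  shows "e = me ! r"
proof -
  obtain j where j: "j \<le> length cs" "e \<in> set (snd (Ps ! j))" using e edges_iff by blast
  obtain t where t: "t < length (snd (Ps ! j))" "snd (Ps ! j) ! t = e" "esrc E e = fst (Ps ! j) ! t"
    using gpath_edge[OF gp[OF j(1)] j(2)] by blast
  have inn: "mv ! r \<in> set (inner mv)" using inner_nth[of r mv] r lens(4) by simp
  have "mv ! r \<in> set (fst (Ps ! j))" using t e lenV[OF j(1)] by (metis Suc_less_eq less_SucI nth_mem)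
  then have jj: "i1 < j" "j \<le> i2" using mvI[OF inn _ j(1)] by auto
  have "me ! r \<in> set (snd (Ps ! j))" using meA[OF _ jj] r by simp
  then obtain t' where t': "t' < length (snd (Ps ! j))" "snd (Ps ! j) ! t' = me ! r"
    "esrc E (me ! r) = fst (Ps ! j) ! t'"
    using gpath_edge[OF gp[OF j(1)]] by blast
  have "fst (Ps ! j) ! t = fst (Ps ! j) ! t'" using t t' e cmid_cons r by simp
  then have "t = t'" using nth_eq_iff_index_eq[OF distV[OF j(1)]] t t' lenV[OF j(1)] by simp
  then show ?thesis using t t' by simp
qed

lemma me_in:
  assumes e: "e \<in> edges E" "etgt E e = mv ! r" and r: "0 < r" "r < mmid"
  shows "e = me ! (r - 1)"
proof -
  obtain j where j: "j \<le> length cs" "e \<in> set (snd (Ps ! j))" using e edges_iff by blast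
  obtain t where t: "t < length (snd (Ps ! j))" "snd (Ps ! j) ! t = e" "etgt E e = fst (Ps ! j) ! Suc t"
    using gpath_edge[OF gp[OF j(1)] j(2)] by blast
  have inn: "mv ! r \<in> set (inner mv)" using inner_nth[of r mv] r lens(4) by simp
  have "mv ! r \<in> set (fst (Ps ! j))" using t e lenV[OF j(1)] by (metis Suc_less_eq nth_mem)
  then have jj: "i1 < j" "j \<le> i2" using mvI[OF inn _ j(1)] by auto
  have "me ! (r - 1) \<in> set (snd (Ps ! j))" using meA[OF _ jj] r by simp
  then obtain t' where t': "t' < length (snd (Ps ! j))" "snd (Ps ! j) ! t' = me ! (r - 1)"
    "etgt E (me ! (r - 1)) = fst (Ps ! j) ! Suc t'"
    using gpath_edge[OF gp[OF j(1)]] by blast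
  have "etgt E (me ! (r - 1)) = mv ! r" using cmid_cons[of "r - 1"] r by simp
  then have "fst (Ps ! j) ! Suc t = fst (Ps ! j) ! Suc t'" using t t' e by simp
  then have "t = t'" using nth_eq_iff_index_eq[OF distV[OF j(1)]] t t' lenV[OF j(1)] by simp
  then show ?thesis using t t' by simp
qed

end

context dip
begin

lemma pos_unique:
  assumes j: "j \<le> length cs"
    and q: "q + mmid \<le> length (snd (Ps ! j))" "sub q mmid (Ps ! j) = cbot E c1"
    and q': "q' + mmid \<le> length (snd (Ps ! j))" "sub q' mmid (Ps ! j) = cbot E c1"
  shows "q = q'"
proof -
  have l: "length (fst (Ps ! j)) = Suc (length (snd (Ps ! j)))" using lenV[OF j] .
  have "fst (sub q mmid (Ps ! j)) ! 0 = fst (Ps ! j) ! q" using sub_facts(3)[OF l q(1), of 0] by simp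
  moreover have "fst (sub q' mmid (Ps ! j)) ! 0 = fst (Ps ! j) ! q'" using sub_facts(3)[OF l q'(1), of 0] by simp
  ultimately have "fst (Ps ! j) ! q = fst (Ps ! j) ! q'" using q q' by simp
  moreover have "q < length (fst (Ps ! j))" "q' < length (fst (Ps ! j))" using q q' l by auto
  ultimately show ?thesis using nth_eq_iff_index_eq[OF distV[OF j]] by blast
qed

definition posj :: "nat \<Rightarrow> nat" where
  "posj j = (SOME q. q + mmid \<le> length (snd (Ps ! j)) \<and> sub q mmid (Ps ! j) = cbot E c1)"

lemma posj_eq:
  assumes j: "j \<le> length cs"
    and q: "q + mmid \<le> length (snd (Ps ! j))" "sub q mmid (Ps ! j) = cbot E c1"
  shows "posj j = q"
proof -
  have "posj j + mmid \<le> length (snd (Ps ! j)) \<and> sub (posj j) mmid (Ps ! j) = cbot E c1"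
    unfolding posj_def using q by (rule someI[where x = q, OF conjI])
  then show ?thesis using pos_unique[OF j] q by blast
qed

lemma between:
  assumes j: "i1 < j" "j < i2" and c: "cs ! j = Some c" and cp: "cstepp R E c p (Ps ! j) (Ps ! Suc j)"
    and q: "q + mmid \<le> length (snd (Ps ! j))" "sub q mmid (Ps ! j) = cbot E c1"
  shows "(p + tlen c \<le> q \<and> q - tlen c + blen c + mmid \<le> length (snd (Ps ! Suc j)) \<and>
           sub (q - tlen c + blen c) mmid (Ps ! Suc j) = cbot E c1) \<or>
         (q + mmid \<le> p \<and> q + mmid \<le> length (snd (Ps ! Suc j)) \<and> sub q mmid (Ps ! Suc j) = cbot E c1)"
proof -
  have jl: "j < length cs" using j i2 by simp
  let ?n = "tlen c" and ?k = "blen c" and ?Es = "snd (Ps ! j)"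
  have lP: "length (fst (Ps ! j)) = Suc (length ?Es)" using lenV jl by simp
  have pn: "0 < ?n" "p + ?n \<le> length ?Es" using c_m[OF jl c cp] by auto
  have disj: "p + ?n \<le> q \<or> q + mmid \<le> p"
  proof (rule ccontr)
    assume "\<not> (p + ?n \<le> q \<or> q + mmid \<le> p)"
    then have ov: "q < p + ?n" "p < q + mmid" by auto
    define t where "t = max p q"
    have t: "p \<le> t" "t < p + ?n" "q \<le> t" "t < q + mmid" using ov pn lens unfolding t_def by auto
    have "snd (ctop E c) ! (t - p) = ?Es ! t" using c_top_nth(2)[OF jl c cp, of "t - p"] t by simp
    then have "?Es ! t \<in> set (snd (ctop E c))" using t by (metis diff_less_mono nth_mem add.commute less_diff_conv2)
    then have d: "?Es ! t \<notin> set (snd (Ps ! Suc j))" using c_deathE[OF jl c cp] by blast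
    have "snd (sub q mmid (Ps ! j)) ! (t - q) = ?Es ! t" using sub_facts(4)[OF lP q(1), of "t - q"] t by simp
    then have "me ! (t - q) = ?Es ! t" using q by simp
    moreover have "me ! (t - q) \<in> set me" using t by simp
    ultimately have "?Es ! t \<in> set (snd (Ps ! Suc j))" using meA[of _ "Suc j"] j by force
    then show False using d by simp
  qed
  have lP': "length (snd (Ps ! Suc j)) = length ?Es - ?n + ?k" using c_lenP'[OF jl c cp] .
  have nxt: "Ps ! Suc j = splice p ?n (Ps ! j) (cbot E c)" using c_next[OF jl c cp] .
  have gj': "gpath E (Ps ! Suc j)" using gp jl by simp
  have men: "me \<noteq> []" using lens by auto
  show ?thesis using disj
  proof
    assume d1: "p + ?n \<le> q"
    let ?q' = "q - ?n + ?k"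
    have b: "?q' + mmid \<le> length (snd (Ps ! Suc j))" using lP' d1 q by simp
    have "snd (sub ?q' mmid (Ps ! Suc j)) = take mmid (drop ?q' (take p ?Es @ snd (cbot E c) @ drop (p + ?n) ?Es))"
      using nxt by (simp add: sub_def splice_def)
    also have "\<dots> = take mmid (drop q ?Es)" using ea_pos1[OF d1 q(1)] by simp
    also have "\<dots> = me" using arg_cong[OF q(2), of snd] by (simp add: sub_def)
    finally have "sub ?q' mmid (Ps ! Suc j) = cbot E c1"
      using gpath_eq[OF gpath_sub[OF gj' b] gmid] men by simp
    then show ?thesis using d1 b by simp
  next
    assume d2: "q + mmid \<le> p"
    have b: "q + mmid \<le> length (snd (Ps ! Suc j))" using lP' d2 pn by simp
    have "snd (sub q mmid (Ps ! Suc j)) = take mmid (drop q (take p ?Es @ snd (cbot E c) @ drop (p + ?n) ?Es))"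
      using nxt by (simp add: sub_def splice_def)
    also have "\<dots> = take mmid (drop q ?Es)" using ea_pos2[OF d2 pn(2)] by simp
    also have "\<dots> = me" using arg_cong[OF q(2), of snd] by (simp add: sub_def)
    finally have "sub q mmid (Ps ! Suc j) = cbot E c1"
      using gpath_eq[OF gpath_sub[OF gj' b] gmid] men by simp
    then show ?thesis using d2 b by simp
  qed
qed

lemma contig:
  assumes "i1 < j" "j \<le> i2"
  shows "\<exists>q. q + mmid \<le> length (snd (Ps ! j)) \<and> sub q mmid (Ps ! j) = cbot E c1"
proof -
  have "Suc i1 \<le> j" using assms by simp
  then show ?thesis using assms(2)
  proof (induction j rule: dec_induct)
    case base
    have "cbot E c1 = sub p1 mmid (Ps ! Suc i1)" using c_bot_sub[OF i1] .
    moreover have "p1 + mmid \<le> length (snd (Ps ! Suc i1))" using c_pk[OF i1] .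
    ultimately show ?case by auto
  next
    case (step j)
    then have jl: "j < length cs" "j < i2" "i1 < j" using i2 by auto
    obtain q where q: "q + mmid \<le> length (snd (Ps ! j))" "sub q mmid (Ps ! j) = cbot E c1"
      using step by auto
    show ?case
    proof (cases "cs ! j")
      case None
      then show ?thesis using nonestep[OF jl(1)] q by auto
    next
      case (Some c)
      then obtain p where "cstepp R E c p (Ps ! j) (Ps ! Suc j)" using somestep jl by blast
      then show ?thesis using between[OF jl(3) jl(2) Some _ q] by blast
    qed
  qed
qed

lemma posj_spec:
  assumes "i1 < j" "j \<le> i2"
  shows "posj j + mmid \<le> length (snd (Ps ! j)) \<and> sub (posj j) mmid (Ps ! j) = cbot E c1"
proof -
  obtain q where q: "q + mmid \<le> length (snd (Ps ! j))" "sub q mmid (Ps ! j) = cbot E c1"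
    using contig[OF assms] by blast
  have "j \<le> length cs" using assms i2 by simp
  then show ?thesis using posj_eq q by simp
qed

lemma posj_V:
  assumes "i1 < j" "j \<le> i2" "r \<le> mmid"
  shows "fst (Ps ! j) ! (posj j + r) = mv ! r"
proof -
  have jl: "j \<le> length cs" using assms i2 by simp
  note ps = posj_spec[OF assms(1,2)]
  show ?thesis using sub_facts(3)[OF lenV[OF jl] conjunct1[OF ps] assms(3)] conjunct2[OF ps] by simp
qed

lemma posj_E:
  assumes "i1 < j" "j \<le> i2" "r < mmid"
  shows "snd (Ps ! j) ! (posj j + r) = me ! r"
proof -
  have jl: "j \<le> length cs" using assms i2 by simp
  note ps = posj_spec[OF assms(1,2)]
  show ?thesis using sub_facts(4)[OF lenV[OF jl] conjunct1[OF ps] assms(3)] conjunct2[OF ps] by simp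
qed

section \<open>The modified stacking paths\<close>

definition W :: "nat \<Rightarrow> dpath" where
  "W j = (if i1 < j \<and> j \<le> i2 then splice (posj j) mmid (Ps ! j) (ctop E c1) else Ps ! j)"

lemma W_out: "\<not> (i1 < j \<and> j \<le> i2) \<Longrightarrow> W j = Ps ! j" unfolding W_def by auto
lemma W_in: "i1 < j \<Longrightarrow> j \<le> i2 \<Longrightarrow> W j = splice (posj j) mmid (Ps ! j) (ctop E c1)" by (simp add: W_def)

lemma W_gpath:
  assumes j: "j \<le> length cs"
  shows "gpath E (W j)"
proof (cases "i1 < j \<and> j \<le> i2")
  case False then show ?thesis using W_out gp j by simp
next
  case True
  note ps = posj_spec[OF conjunct1[OF True] conjunct2[OF True]]
  have s0: "fst (ctop E c1) ! 0 = fst (Ps ! j) ! posj j" using posj_V[of j 0] True ends by simp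
  have sk: "fst (ctop E c1) ! length (snd (ctop E c1)) = fst (Ps ! j) ! (posj j + mmid)"
    using posj_V[of j mmid] True ends by simp
  have d: "set (inner tv) \<inter> set (fst (Ps ! j)) = {}" using tvI j True by fastforce
  have "te \<noteq> []" using lens by auto
  then show ?thesis using W_in True gpath_splice[OF gp[OF j] conjunct1[OF ps] gtop _ s0 sk d] by simp
qed

lemma W_split:
  assumes "i1 < j" "j \<le> i2"
  shows "fst (Ps ! j) = take (posj j) (fst (Ps ! j)) @ mv @ drop (Suc (posj j + mmid)) (fst (Ps ! j))"
    "snd (Ps ! j) = take (posj j) (snd (Ps ! j)) @ me @ drop (posj j + mmid) (snd (Ps ! j))"
proof -
  note ps = posj_spec[OF assms]
  have "mv = take (Suc mmid) (drop (posj j) (fst (Ps ! j)))" using ps by (simp add: sub_def prod_eq_iff)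
  then show "fst (Ps ! j) = take (posj j) (fst (Ps ! j)) @ mv @ drop (Suc (posj j + mmid)) (fst (Ps ! j))"
    by (metis append_take_drop_id drop_drop add_Suc_right add.commute)
  have "me = take mmid (drop (posj j) (snd (Ps ! j)))" using ps by (simp add: sub_def prod_eq_iff)
  then show "snd (Ps ! j) = take (posj j) (snd (Ps ! j)) @ me @ drop (posj j + mmid) (snd (Ps ! j))"
    by (metis append_take_drop_id drop_drop add.commute)
qed

lemma W_setV:
  assumes "i1 < j" "j \<le> i2"
  shows "set (fst (W j)) = set (take (posj j) (fst (Ps ! j))) \<union> set tv \<union> set (drop (Suc (posj j + mmid)) (fst (Ps ! j)))"
  using W_in[OF assms] by (auto simp: splice_def)

lemma W_setE:
  assumes "i1 < j" "j \<le> i2"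
  shows "set (snd (W j)) = set (take (posj j) (snd (Ps ! j))) \<union> set te \<union> set (drop (posj j + mmid) (snd (Ps ! j)))"
  using W_in[OF assms] by (auto simp: splice_def)

lemma W_subV: "x \<in> set (fst (W j)) \<Longrightarrow> x \<in> set (fst (Ps ! j)) \<or> (x \<in> set tv \<and> i1 < j \<and> j \<le> i2)"
proof (cases "i1 < j \<and> j \<le> i2")
  case False then show "x \<in> set (fst (W j)) \<Longrightarrow> ?thesis" using W_out by simp
next
  case True
  then show "x \<in> set (fst (W j)) \<Longrightarrow> ?thesis" using W_setV[of j]
    by (auto dest: in_set_takeD in_set_dropD)
qed

lemma W_subE: "e \<in> set (snd (W j)) \<Longrightarrow> e \<in> set (snd (Ps ! j)) \<or> (e \<in> set te \<and> i1 < j \<and> j \<le> i2)"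
proof (cases "i1 < j \<and> j \<le> i2")
  case False then show "e \<in> set (snd (W j)) \<Longrightarrow> ?thesis" using W_out by simp
next
  case True
  then show "e \<in> set (snd (W j)) \<Longrightarrow> ?thesis" using W_setE[of j]
    by (auto dest: in_set_takeD in_set_dropD)
qed

lemma mv_ends: "set mv = {tv ! 0, tv ! mlen} \<union> set (inner mv)"
proof -
  have "2 \<le> length mv" using lens(2,4) by linarith
  moreover have "mv \<noteq> []" using lens by auto
  then have "hd mv = mv ! 0" "last mv = mv ! mmid" using lens by (simp_all add: hd_conv_nth last_conv_nth)
  ultimately show ?thesis using set_ends_inner[of mv] ends by simp
qed

lemma tv_ends: "tv ! 0 \<in> set tv" "tv ! mlen \<in> set tv" using lens by auto

lemma W_supV:
  assumes j: "j \<le> length cs" and x: "x \<in> set (fst (Ps ! j))" "x \<notin> set (inner mv)"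
  shows "x \<in> set (fst (W j))"
proof (cases "i1 < j \<and> j \<le> i2")
  case False then show ?thesis using W_out x by simp
next
  case True
  have "x \<in> set (take (posj j) (fst (Ps ! j))) \<or> x \<in> set mv \<or> x \<in> set (drop (Suc (posj j + mmid)) (fst (Ps ! j)))"
    using W_split(1)[of j] True x by (metis Un_iff set_append)
  then show ?thesis using W_setV[of j] True mv_ends x tv_ends by auto
qed

lemma W_supE:
  assumes j: "j \<le> length cs" and x: "e \<in> set (snd (Ps ! j))" "e \<notin> set me"
  shows "e \<in> set (snd (W j))"
proof (cases "i1 < j \<and> j \<le> i2")
  case False then show ?thesis using W_out x by simp
next
  case True
  have "e \<in> set (take (posj j) (snd (Ps ! j))) \<or> e \<in> set me \<or> e \<in> set (drop (posj j + mmid) (snd (Ps ! j)))"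
    using W_split(2)[of j] True x by (metis Un_iff set_append)
  then show ?thesis using W_setE[of j] True x by auto
qed

lemma W_noMV:
  assumes j: "j \<le> length cs" and x: "x \<in> set (fst (W j))"
  shows "x \<notin> set (inner mv)"
proof
  assume xm: "x \<in> set (inner mv)"
  show False
  proof (cases "i1 < j \<and> j \<le> i2")
    case False then show ?thesis using W_out x mvI[OF xm _ j] by simp
  next
    case True
    obtain r where r: "0 < r" "r < mmid" "x = mv ! r" using xm inner_iff[OF lens(4)] by blast
    note ps = posj_spec[OF conjunct1[OF True] conjunct2[OF True]]
    let ?V = "fst (Ps ! j)" and ?q = "posj j"
    have xv: "x = ?V ! (?q + r)" using posj_V[of j r] True r by simp
    have lt: "?q + r < length ?V" using ps r lenV[OF j] by simp
    have d: "distinct ?V" using distV[OF j] .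
    have "x \<notin> set (take ?q ?V)" using distinct_take_iff[OF d lt] xv by simp
    moreover have "x \<notin> set (drop (Suc (?q + mmid)) ?V)" using distinct_drop_iff[OF d lt] xv r by simp
    moreover have "x \<notin> set tv" using tv_mv xm by blast
    ultimately show False using x W_setV[of j] True by blast
  qed
qed

lemma W_noME:
  assumes j: "j \<le> length cs" and x: "e \<in> set (snd (W j))"
  shows "e \<notin> set me"
proof
  assume xm: "e \<in> set me"
  show False
  proof (cases "i1 < j \<and> j \<le> i2")
    case False then show ?thesis using W_out x meI[OF xm _ j] by simp
  next
    case True
    obtain r where r: "r < mmid" "e = me ! r" using xm by (metis in_set_conv_nth)
    note ps = posj_spec[OF conjunct1[OF True] conjunct2[OF True]]
    let ?Es = "snd (Ps ! j)" and ?q = "posj j"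
    have xv: "e = ?Es ! (?q + r)" using posj_E[of j r] True r by simp
    have lt: "?q + r < length ?Es" using ps r by simp
    have d: "distinct ?Es" using distE[OF j] .
    have "e \<notin> set (take ?q ?Es)" using distinct_take_iff[OF d lt] xv by simp
    moreover have "e \<notin> set (drop (?q + mmid) ?Es)" using distinct_drop_iff[OF d lt] xv r by simp
    moreover have "e \<notin> set te" using te_me xm by blast
    ultimately show False using x W_setE[of j] True by blast
  qed
qed

lemma W_noBV: "j \<le> i2 \<Longrightarrow> x \<in> set (fst (W j)) \<Longrightarrow> x \<notin> set (inner bv)"
  using W_subV bvI tv_bv by fastforce
lemma W_noBE: "j \<le> i2 \<Longrightarrow> e \<in> set (snd (W j)) \<Longrightarrow> e \<notin> set be"
  using W_subE beI te_be by fastforce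
lemma W_noTV: "i2 < j \<Longrightarrow> j \<le> length cs \<Longrightarrow> x \<in> set (fst (W j)) \<Longrightarrow> x \<notin> set (inner tv)"
  using W_out tvI i12 by fastforce

end

context dip
begin

definition fv :: "nat \<Rightarrow> nat" where
  "fv = (\<lambda>x. if x \<in> set (inner bv) then tv ! (LEAST i. bv ! i = x) else x)"
definition fe :: "nat \<Rightarrow> nat" where
  "fe = (\<lambda>e. if e \<in> set be then te ! (LEAST i. be ! i = e) else e)"

abbreviation "E' \<equiv> remove_dipole E c1 c2"
abbreviation "M \<equiv> map_dpath fv fe"

lemma E'_verts: "verts E' = fv ` (verts E - set (inner mv))"
  by (simp add: remove_dipole_def Let_def fv_def)
lemma E'_edges: "edges E' = fe ` (edges E - set me)"
  by (simp add: remove_dipole_def Let_def fe_def)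
lemma E'_esrc: "esrc E' e = fv (esrc E e)"
  by (simp add: remove_dipole_def Let_def fv_def)
lemma E'_etgt: "etgt E' e = fv (etgt E e)"
  by (simp add: remove_dipole_def Let_def fv_def)
lemma E'_elab: "elab E' = elab E"
  by (simp add: remove_dipole_def Let_def)
lemma E'_cells: "cells E' = cells E - {c1, c2}"
  by (simp add: remove_dipole_def Let_def)
lemma E'_ctop: "ctop E' c = M (ctop E c)"
  by (simp add: remove_dipole_def Let_def fv_def fe_def)
lemma E'_cbot: "cbot E' c = M (cbot E c)"
  by (simp add: remove_dipole_def Let_def fv_def fe_def)
lemma E'_tpath: "tpath E' = M (tpath E)"
  by (simp add: remove_dipole_def Let_def fv_def fe_def)
lemma E'_bpath: "bpath E' = M (bpath E)"
  by (simp add: remove_dipole_def Let_def fv_def fe_def)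

lemma fv_bv: "0 < r \<Longrightarrow> r < mlen \<Longrightarrow> fv (bv ! r) = tv ! r"
proof -
  assume r: "0 < r" "r < mlen"
  have "bv ! r \<in> set (inner bv)" using inner_nth[of r bv] r lens(5) by simp
  moreover have "(LEAST i. bv ! i = bv ! r) = r" using Least_nth_distinct[OF dbv] r lens(5) by simp
  ultimately show ?thesis by (simp add: fv_def)
qed

lemma fv_id: "x \<notin> set (inner bv) \<Longrightarrow> fv x = x" by (simp add: fv_def)

lemma fe_be: "r < mlen \<Longrightarrow> fe (be ! r) = te ! r"
proof -
  assume r: "r < mlen"
  have "be ! r \<in> set be" using r lenbe by simp
  moreover have "(LEAST i. be ! i = be ! r) = r" using Least_nth_distinct[OF dbe] r lenbe by simp
  ultimately show ?thesis by (simp add: fe_def)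
qed

lemma fe_id: "e \<notin> set be \<Longrightarrow> fe e = e" by (simp add: fe_def)

lemma fv_tv: "x \<in> set tv \<Longrightarrow> fv x = x" using fv_id tv_bv by blast
lemma fe_te: "e \<in> set te \<Longrightarrow> fe e = e" using fe_id te_be by blast

lemma elab_fe: "elab E (fe e) = elab E e"
proof (cases "e \<in> set be")
  case True
  then obtain r where r: "r < mlen" "e = be ! r" using lenbe by (metis in_set_conv_nth)
  have "elab E (te ! r) = elab E (be ! r)" using labtb r lenbe by (metis nth_map)
  then show ?thesis using fe_be r by simp
next
  case False then show ?thesis using fe_id by simp
qed

lemma lab_fe: "lab E' (map fe es) = lab E es"
  by (simp add: lab_def E'_elab elab_fe)

lemma fv_bv_any: "r \<le> mlen \<Longrightarrow> fv (bv ! r) = tv ! r"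
proof -
  assume r: "r \<le> mlen"
  consider "r = 0" | "0 < r \<and> r < mlen" | "r = mlen" using r by linarith
  then show ?thesis
  proof cases
    case 1 then show ?thesis using ends fv_tv tv_ends by simp
  next
    case 2 then show ?thesis using fv_bv by simp
  next
    case 3 then show ?thesis using ends fv_tv tv_ends by simp
  qed
qed

lemma M_top: "M (ctop E c1) = ctop E c1"
proof -
  have "map fv tv = tv" using fv_tv by (simp add: map_idI)
  moreover have "map fe te = te" using fe_te by (simp add: map_idI)
  ultimately show ?thesis by (simp add: map_dpath_def)
qed

lemma M_bot: "M (cbot E c2) = ctop E c1"
proof -
  have "map fv bv = tv"
  proof (rule nth_equalityI)
    show "length (map fv bv) = length tv" using lens by simp
    fix r assume "r < length (map fv bv)"
    then have "r \<le> mlen" using lens by simp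
    then show "map fv bv ! r = tv ! r" using fv_bv_any lens by simp
  qed
  moreover have "map fe be = te"
  proof (rule nth_equalityI)
    show "length (map fe be) = length te" using lenbe by simp
    fix r assume "r < length (map fe be)"
    then show "map fe be ! r = te ! r" using fe_be lenbe by simp
  qed
  ultimately show ?thesis by (simp add: map_dpath_def)
qed

lemma src_fe:
  assumes e: "e \<in> edges E"
  shows "fv (esrc E (fe e)) = fv (esrc E e) \<and> fv (etgt E (fe e)) = fv (etgt E e)"
proof (cases "e \<in> set be")
  case True
  then obtain r where r: "r < mlen" "e = be ! r" using lenbe by (metis in_set_conv_nth)
  have "fe e = te ! r" using fe_be r by simp
  moreover have "esrc E (te ! r) = tv ! r" "etgt E (te ! r) = tv ! Suc r" using ctop_cons r by auto
  moreover have "esrc E e = bv ! r" "etgt E e = bv ! Suc r" using cbot_cons r by auto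
  moreover have "fv (tv ! r) = tv ! r" "fv (tv ! Suc r) = tv ! Suc r"
    using fv_tv r lens by auto
  moreover have "fv (bv ! r) = tv ! r" "fv (bv ! Suc r) = tv ! Suc r" using fv_bv_any r by auto
  ultimately show ?thesis by simp
next
  case False then show ?thesis using fe_id by simp
qed

lemma gpath_M:
  assumes g: "gpath E P" and nv: "set (fst P) \<inter> set (inner mv) = {}" and ne: "set (snd P) \<inter> set me = {}"
    and inj: "inj_on fv (set (fst P))"
  shows "gpath E' (M P)"
  unfolding gpath_def
proof (intro conjI allI impI)
  show "length (fst (M P)) = Suc (length (snd (M P)))" using g by (simp add: gpath_def map_dpath_def)
  show "distinct (fst (M P))" using g inj by (simp add: gpath_def map_dpath_def distinct_map)
  show "set (fst (M P)) \<subseteq> verts E'" using g nv unfolding E'_verts gpath_def map_dpath_def by auto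
  show "set (snd (M P)) \<subseteq> edges E'" using g ne unfolding E'_edges gpath_def map_dpath_def by auto
  fix k assume k: "k < length (snd (M P))"
  then have k': "k < length (snd P)" by (simp add: map_dpath_def)
  have c: "esrc E (snd P ! k) = fst P ! k" "etgt E (snd P ! k) = fst P ! Suc k" using g k' by (auto simp: gpath_def)
  have ed: "snd P ! k \<in> edges E" using g k' by (auto simp: gpath_def)
  have l: "length (fst P) = Suc (length (snd P))" using g by (simp add: gpath_def)
  show "esrc E' (snd (M P) ! k) = fst (M P) ! k" using src_fe[OF ed] c k' l
    by (simp add: map_dpath_def E'_esrc)
  show "etgt E' (snd (M P) ! k) = fst (M P) ! Suc k" using src_fe[OF ed] c k' l
    by (simp add: map_dpath_def E'_etgt)
qed

lemma inj_W:
  assumes j: "j \<le> length cs"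
  shows "inj_on fv (set (fst (W j)))"
proof (cases "j \<le> i2")
  case True
  then have "\<forall>x \<in> set (fst (W j)). fv x = x" using W_noBV fv_id by blast
  then show ?thesis by (metis inj_on_def)
next
  case False
  then have gt: "i2 < j" by simp
  show ?thesis unfolding inj_on_def
  proof (intro ballI impI)
    fix x y assume x: "x \<in> set (fst (W j))" and y: "y \<in> set (fst (W j))" and xy: "fv x = fv y"
    have tvx: "\<And>z r. z \<in> set (fst (W j)) \<Longrightarrow> 0 < r \<Longrightarrow> r < mlen \<Longrightarrow> z \<noteq> tv ! r"
    proof
      fix z r assume "z \<in> set (fst (W j))" "0 < r" "r < mlen" "z = tv ! r"
      moreover have "tv ! r \<in> set (inner tv)" using inner_nth[of r tv] lens \<open>0 < r\<close> \<open>r < mlen\<close> by simp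
      ultimately show False using W_noTV[OF gt j] by blast
    qed
    show "x = y"
    proof (cases "x \<in> set (inner bv)")
      case True
      then obtain r where r: "0 < r" "r < mlen" "x = bv ! r" using inner_iff[OF lens(5)] by blast
      show ?thesis
      proof (cases "y \<in> set (inner bv)")
        case True
        then obtain s where s: "0 < s" "s < mlen" "y = bv ! s" using inner_iff[OF lens(5)] by blast
        have "tv ! r = tv ! s" using xy r s fv_bv by simp
        then have "r = s" using nth_eq_iff_index_eq[OF dtv] r s lens by simp
        then show ?thesis using r s by simp
      next
        case False
        then have "y = tv ! r" using xy r fv_bv fv_id by simp
        then show ?thesis using tvx[OF y r(1,2)] by simp
      qed
    next
      case False
      show ?thesis
      proof (cases "y \<in> set (inner bv)")
        case True
        then obtain s where s: "0 < s" "s < mlen" "y = bv ! s" using inner_iff[OF lens(5)] by blast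
        then have "x = tv ! s" using xy False fv_bv fv_id by simp
        then show ?thesis using tvx[OF x s(1,2)] by simp
      next
        case False
        then show ?thesis using xy \<open>x \<notin> set (inner bv)\<close> fv_id by simp
      qed
    qed
  qed
qed

lemma gpath_MW: "j \<le> length cs \<Longrightarrow> gpath E' (M (W j))"
  using gpath_M[OF W_gpath _ _ inj_W] W_noMV W_noME by blast

end

context dip
begin

lemma Wstep_from:
  assumes i: "i < length cs" and c: "cs ! i = Some c" and cp: "cstepp R E c p (Ps ! i) (Ps ! Suc i)"
    and b: "p' + tlen c \<le> length (snd (W i))"
    and top: "snd (ctop E c) = snd (sub p' (tlen c) (W i))"
    and nxt: "snd (W (Suc i)) = snd (splice p' (tlen c) (W i) (cbot E c))"
    and disj: "set (inner (fst (cbot E c))) \<inter> set (fst (W i)) = {}"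
  shows "ctop E c = sub p' (tlen c) (W i) \<and> W (Suc i) = splice p' (tlen c) (W i) (cbot E c)"
proof -
  have gi: "gpath E (W i)" using W_gpath i by simp
  have gsi: "gpath E (W (Suc i))" using W_gpath i by simp
  have tne: "snd (ctop E c) \<noteq> []" using c_m[OF i c cp] by auto
  have t: "ctop E c = sub p' (tlen c) (W i)"
    using gpath_eq[OF c_gtop[OF i c cp] gpath_sub[OF gi b] top tne] .
  have lW: "length (fst (W i)) = Suc (length (snd (W i)))" using gi by (simp add: gpath_def)
  have s0: "fst (cbot E c) ! 0 = fst (W i) ! p'"
  proof -
    have "fst (cbot E c) ! 0 = fst (ctop E c) ! 0" using c_bot0[OF i c cp] c_top0[OF i c cp] by simp
    also have "\<dots> = fst (W i) ! p'" using t sub_facts(3)[OF lW b, of 0] by simp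
    finally show ?thesis .
  qed
  have sk: "fst (cbot E c) ! length (snd (cbot E c)) = fst (W i) ! (p' + tlen c)"
  proof -
    have "fst (cbot E c) ! length (snd (cbot E c)) = fst (ctop E c) ! tlen c"
      using c_botk[OF i c cp] c_topm[OF i c cp] by simp
    also have "\<dots> = fst (W i) ! (p' + tlen c)" using t sub_facts(3)[OF lW b, of "tlen c"] by simp
    finally show ?thesis .
  qed
  have bne: "snd (cbot E c) \<noteq> []" using c_k[OF i c cp] by auto
  have gs: "gpath E (splice p' (tlen c) (W i) (cbot E c))"
    using gpath_splice[OF gi b c_gbot[OF i c cp] bne s0 sk disj] .
  have "snd (W (Suc i)) \<noteq> []" using nxt bne by (simp add: splice_def)
  then have "W (Suc i) = splice p' (tlen c) (W i) (cbot E c)" using gpath_eq[OF gsi gs nxt] by simp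
  then show ?thesis using t by simp
qed

lemma disj_W:
  assumes i: "i < length cs" and c: "cs ! i = Some c"
  shows "set (inner (fst (cbot E c))) \<inter> set (fst (W i)) = {}"
proof -
  have "y \<notin> set (fst (W i))" if y: "y \<in> set (inner (fst (cbot E c)))" for y
  proof
    assume "y \<in> set (fst (W i))"
    then have "y \<in> set (fst (Ps ! i)) \<or> (y \<in> set tv \<and> i1 < i)" using W_subV by blast
    then show False
    proof
      assume "y \<in> set (fst (Ps ! i))" then show False using freshV[OF i c y, of i] by simp
    next
      assume "y \<in> set tv \<and> i1 < i"
      then have "y \<in> set (fst (Ps ! i1))" "i1 \<le> i" using tv_in by auto
      then show False using freshV[OF i c y] by blast
    qed
  qed
  then show ?thesis by blast
qed

lemma Wstep:
  assumes i: "i < length cs" and c: "cs ! i = Some c" and ne: "i \<noteq> i1" "i \<noteq> i2"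
    and cp: "cstepp R E c p (Ps ! i) (Ps ! Suc i)"
  shows "\<exists>p'. p' + tlen c \<le> length (snd (W i)) \<and>
     ctop E c = sub p' (tlen c) (W i) \<and> W (Suc i) = splice p' (tlen c) (W i) (cbot E c)"
proof (cases "i1 < i \<and> i < i2")
  case False
  then have "\<not> (i1 < i \<and> i \<le> i2)" "\<not> (i1 < Suc i \<and> Suc i \<le> i2)" using ne by auto
  then have w: "W i = Ps ! i" "W (Suc i) = Ps ! Suc i" using W_out by auto
  show ?thesis using w c_m[OF i c cp] c_top[OF i c cp] c_next[OF i c cp] by (intro exI[of _ p]) simp
next
  case True
  let ?n = "tlen c" and ?k = "blen c" and ?Es = "snd (Ps ! i)" and ?q = "posj i"
  note ps = posj_spec[of i] True
  have q: "?q + mmid \<le> length ?Es" "sub ?q mmid (Ps ! i) = cbot E c1" using posj_spec[of i] True by auto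
  have wi: "W i = splice ?q mmid (Ps ! i) (ctop E c1)" using W_in True by simp
  have wsi: "W (Suc i) = splice (posj (Suc i)) mmid (Ps ! Suc i) (ctop E c1)" using W_in True by simp
  have snd_wi: "snd (W i) = take ?q ?Es @ te @ drop (?q + mmid) ?Es" using wi by (simp add: splice_def)
  have lwi: "length (snd (W i)) = length ?Es - mmid + mlen" using snd_wi q by simp
  have pn: "p + ?n \<le> length ?Es" using c_m[OF i c cp] by simp
  have topE: "snd (ctop E c) = take ?n (drop p ?Es)" using c_top[OF i c cp] by (metis snd_conv sub_def)
  have nxtE: "snd (Ps ! Suc i) = take p ?Es @ snd (cbot E c) @ drop (p + ?n) ?Es"
    using c_next[OF i c cp] by (simp add: splice_def)
  have sil: "Suc i \<le> length cs" using i by simp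
  have disj: "set (inner (fst (cbot E c))) \<inter> set (fst (W i)) = {}" using disj_W[OF i c] .
  from between[OF conjunct1[OF True] conjunct2[OF True] c cp q]
  show ?thesis
  proof
    assume d: "p + ?n \<le> ?q \<and> ?q - ?n + ?k + mmid \<le> length (snd (Ps ! Suc i)) \<and>
           sub (?q - ?n + ?k) mmid (Ps ! Suc i) = cbot E c1"
    have ps': "posj (Suc i) = ?q - ?n + ?k" using posj_eq[OF sil, of "?q - ?n + ?k"] d by blast
    have "p + ?n \<le> ?q" using d by simp
    then have b: "p + ?n \<le> length (snd (W i))" using lwi q(1) by linarith
    have top: "snd (ctop E c) = snd (sub p ?n (W i))"
      using topE snd_wi ea_sub1[of p ?n ?q mmid ?Es te] d q by (simp add: sub_def)
    have nxt: "snd (W (Suc i)) = snd (splice p ?n (W i) (cbot E c))"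
    proof -
      have "snd (W (Suc i)) = take (?q - ?n + ?k) (snd (Ps ! Suc i)) @ te @ drop (?q - ?n + ?k + mmid) (snd (Ps ! Suc i))"
        using wsi ps' by (simp add: splice_def)
      also have "\<dots> = take p (snd (W i)) @ snd (cbot E c) @ drop (p + ?n) (snd (W i))"
        using ea_splice1[of p ?n ?q mmid ?Es "snd (cbot E c)" te] d q nxtE snd_wi by simp
      finally show ?thesis by (simp add: splice_def)
    qed
    show ?thesis using Wstep_from[OF i c cp b top nxt disj] b by blast
  next
    assume d: "?q + mmid \<le> p \<and> ?q + mmid \<le> length (snd (Ps ! Suc i)) \<and> sub ?q mmid (Ps ! Suc i) = cbot E c1"
    have ps': "posj (Suc i) = ?q" using posj_eq[OF sil] d by simp
    let ?p' = "p - mmid + mlen"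
    have b: "?p' + ?n \<le> length (snd (W i))" using lwi d pn by simp
    have top: "snd (ctop E c) = snd (sub ?p' ?n (W i))"
      using topE snd_wi ea_sub2[of ?q mmid p ?n ?Es te] d pn by (simp add: sub_def)
    have nxt: "snd (W (Suc i)) = snd (splice ?p' ?n (W i) (cbot E c))"
    proof -
      have "snd (W (Suc i)) = take ?q (snd (Ps ! Suc i)) @ te @ drop (?q + mmid) (snd (Ps ! Suc i))"
        using wsi ps' by (simp add: splice_def)
      also have "\<dots> = take ?p' (snd (W i)) @ snd (cbot E c) @ drop (?p' + ?n) (snd (W i))"
        using ea_splice2[of ?q mmid p ?n ?Es "snd (cbot E c)" te] d pn nxtE snd_wi by simp
      finally show ?thesis by (simp add: splice_def)
    qed
    show ?thesis using Wstep_from[OF i c cp b top nxt disj] b by blast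
  qed
qed

end

context dip
begin

definition cs' :: "nat option list" where
  "cs' = map (\<lambda>ox. if ox = Some c1 \<or> ox = Some c2 then None else ox) cs"
definition Ps' :: "dpath list" where
  "Ps' = map (\<lambda>j. M (W j)) [0..<Suc (length cs)]"

lemma len_cs': "length cs' = length cs" by (simp add: cs'_def)
lemma len_Ps': "length Ps' = Suc (length cs)" by (simp add: Ps'_def)
lemma Ps'_nth: "j \<le> length cs \<Longrightarrow> Ps' ! j = M (W j)"
  by (simp add: Ps'_def nth_map_upt del: upt_Suc)
lemma cs'_nth: "i < length cs \<Longrightarrow> cs' ! i = (if cs ! i = Some c1 \<or> cs ! i = Some c2 then None else cs ! i)"
  by (simp add: cs'_def)

lemma cs'_Some:
  assumes "i < length cs" "cs' ! i = Some c"
  shows "cs ! i = Some c \<and> c \<noteq> c1 \<and> c \<noteq> c2 \<and> i \<noteq> i1 \<and> i \<noteq> i2"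
  using assms cs'_nth i1 i2 by (auto split: if_splits)

lemma cs'_None:
  assumes "i < length cs" "cs' ! i = None"
  shows "cs ! i = None \<or> i = i1 \<or> i = i2"
  using assms cs'_nth uniq[OF assms(1) i1(1) _ i1(2)] uniq[OF assms(1) i2(1) _ i2(2)]
  by (auto split: if_splits)

lemma W0: "W 0 = Ps ! 0" using W_out by simp
lemma Wn: "W (length cs) = Ps ! length cs" using W_out i2 by simp

lemma W_i1: "W (Suc i1) = W i1"
proof -
  have wi1: "W i1 = Ps ! i1" using W_out by simp
  have ps: "posj (Suc i1) = p1"
    using posj_eq[of "Suc i1" p1] c_bot_sub[OF i1] c_pk[OF i1] i1 by simp
  have w: "W (Suc i1) = splice p1 mmid (Ps ! Suc i1) (ctop E c1)" using W_in[of "Suc i1"] ps i12 by simp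
  let ?Es = "snd (Ps ! i1)"
  have nx: "snd (Ps ! Suc i1) = take p1 ?Es @ me @ drop (p1 + mlen) ?Es"
    using c_next[OF i1] by (simp add: splice_def)
  have tp: "te = take mlen (drop p1 ?Es)" using c_top[OF i1] by (metis snd_conv sub_def)
  have b: "p1 + mlen \<le> length ?Es" using c_m[OF i1] by simp
  have "snd (W (Suc i1)) = take p1 (snd (Ps ! Suc i1)) @ te @ drop (p1 + mmid) (snd (Ps ! Suc i1))"
    using w by (simp add: splice_def)
  also have "\<dots> = ?Es" using ea_undo[OF b, of me mmid] nx tp by simp
  finally have e: "snd (W (Suc i1)) = snd (W i1)" using wi1 by simp
  have ne: "snd (W (Suc i1)) \<noteq> []" using e wi1 b lens by auto
  have g1: "gpath E (W (Suc i1))" using W_gpath i1 i12 i2 by simp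
  have g2: "gpath E (W i1)" using W_gpath i1 by simp
  show ?thesis using gpath_eq[OF g1 g2 e ne] .
qed

lemma W_i2: "M (W (Suc i2)) = M (W i2)"
proof -
  have ws: "W (Suc i2) = Ps ! Suc i2" using W_out by simp
  have ps: "posj i2 = p2" using posj_eq[of i2 p2] c_top[OF i2] c_m[OF i2] mid2 i2 by simp
  have w: "W i2 = splice p2 mmid (Ps ! i2) (ctop E c1)" using W_in[of i2] ps i12 by simp
  have nx: "Ps ! Suc i2 = splice p2 mmid (Ps ! i2) (cbot E c2)" using c_next[OF i2] mid2 by simp
  show ?thesis using ws w nx map_splice M_top M_bot by metis
qed

lemma UV'_eq: "UV Ps' i = (\<Union>l\<in>{..i}. fv ` set (fst (W l)))" if "i \<le> length cs"
  using that Ps'_nth unfolding UV_def by (auto simp: map_dpath_def)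
lemma UE'_eq: "UE Ps' i = (\<Union>l\<in>{..i}. fe ` set (snd (W l)))" if "i \<le> length cs"
  using that Ps'_nth unfolding UE_def by (auto simp: map_dpath_def)

lemma born_not_bv:
  assumes i: "i < length cs" "cs ! i = Some c" "i \<noteq> i2" and y: "y \<in> set (inner (fst (cbot E c)))"
  shows "y \<notin> set (inner bv)"
proof
  assume yb: "y \<in> set (inner bv)"
  obtain p where cp: "cstepp R E c p (Ps ! i) (Ps ! Suc i)" using somestep i by blast
  have "y \<in> set (fst (Ps ! Suc i))" using c_bot_sub'[OF i(1,2) cp] inner_subset[of "fst (cbot E c)"] y by blast
  moreover have "y \<in> set (fst (Ps ! Suc i2))" using c_bot_sub'[OF i2] inner_subset[of bv] yb by blast
  ultimately have both: "y \<in> set (fst (Ps ! Suc i))" "y \<in> set (fst (Ps ! Suc i2))" by auto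
  consider (lt) "i < i2" | (gt) "i2 < i" using i(3) by linarith
  then show False
  proof cases
    case lt
    then have "Suc i \<le> i2" by simp
    then show False using freshV[OF i2(1,2) yb, of "Suc i"] \<open>y \<in> set (fst (Ps ! Suc i))\<close> by simp
  next
    case gt
    then have "Suc i2 \<le> i" by simp
    then show False using freshV[OF i(1,2) y, of "Suc i2"] \<open>y \<in> set (fst (Ps ! Suc i2))\<close> by simp
  qed
qed

lemma born_not_be:
  assumes i: "i < length cs" "cs ! i = Some c" "i \<noteq> i2" and y: "y \<in> set (snd (cbot E c))"
  shows "y \<notin> set be"
proof
  assume yb: "y \<in> set be"
  obtain p where cp: "cstepp R E c p (Ps ! i) (Ps ! Suc i)" using somestep i by blast
  have "y \<in> set (snd (Ps ! Suc i))" using c_bot_sub'[OF i(1,2) cp] y by blast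
  moreover have "y \<in> set (snd (Ps ! Suc i2))" using c_bot_sub'[OF i2] yb by blast
  ultimately have both: "y \<in> set (snd (Ps ! Suc i))" "y \<in> set (snd (Ps ! Suc i2))" by auto
  consider (lt) "i < i2" | (gt) "i2 < i" using i(3) by linarith
  then show False
  proof cases
    case lt
    then have "Suc i \<le> i2" by simp
    then show False using freshE[OF i2(1,2) yb, of "Suc i"] \<open>y \<in> set (snd (Ps ! Suc i))\<close> by simp
  next
    case gt
    then have "Suc i2 \<le> i" by simp
    then show False using freshE[OF i(1,2) y, of "Suc i2"] \<open>y \<in> set (snd (Ps ! Suc i2))\<close> by simp
  qed
qed

lemma fresh'V:
  assumes i: "i < length cs" "cs ! i = Some c" "i \<noteq> i2"
  shows "set (inner (fst (cbot E' c))) \<inter> UV Ps' i = {}"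
proof -
  have "fv y \<notin> UV Ps' i" if y: "y \<in> set (inner (fst (cbot E c)))" for y
  proof
    assume "fv y \<in> UV Ps' i"
    then obtain l z where l: "l \<le> i" "z \<in> set (fst (W l))" "fv z = fv y" using UV'_eq i by auto
    have fy: "fv y = y" using fv_id born_not_bv[OF i y] by simp
    show False
    proof (cases "z \<in> set (inner bv)")
      case True
      then obtain r where r: "0 < r" "r < mlen" "z = bv ! r" using inner_iff[OF lens(5)] by blast
      have "z \<in> set (fst (Ps ! l))" using W_subV[OF l(2)] tv_bv True by blast
      then have "i2 < l" using bvI True by blast
      have "y = tv ! r" using l(3) fy r fv_bv by simp
      then have "y \<in> set (fst (Ps ! i1))" using tv_in r lens by auto
      moreover have "i1 \<le> i" using \<open>i2 < l\<close> l(1) i12 by simp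
      ultimately show False using freshV[OF i(1,2) y] by blast
    next
      case False
      then have zy: "z = y" using l(3) fy fv_id by simp
      then have "y \<in> set (fst (Ps ! l)) \<or> (y \<in> set tv \<and> i1 < l)" using W_subV[OF l(2)] by blast
      then show False
      proof
        assume "y \<in> set (fst (Ps ! l))" then show False using freshV[OF i(1,2) y l(1)] by simp
      next
        assume "y \<in> set tv \<and> i1 < l"
        then have "y \<in> set (fst (Ps ! i1))" "i1 \<le> i" using tv_in l(1) by auto
        then show False using freshV[OF i(1,2) y] by blast
      qed
    qed
  qed
  moreover have "fst (cbot E' c) = map fv (fst (cbot E c))" by (simp add: E'_cbot map_dpath_def)
  ultimately show ?thesis by (auto simp: inner_map)
qed

lemma fresh'E:
  assumes i: "i < length cs" "cs ! i = Some c" "i \<noteq> i2"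
  shows "set (snd (cbot E' c)) \<inter> UE Ps' i = {}"
proof -
  have "fe y \<notin> UE Ps' i" if y: "y \<in> set (snd (cbot E c))" for y
  proof
    assume "fe y \<in> UE Ps' i"
    then obtain l z where l: "l \<le> i" "z \<in> set (snd (W l))" "fe z = fe y" using UE'_eq i by auto
    have fy: "fe y = y" using fe_id born_not_be[OF i y] by simp
    show False
    proof (cases "z \<in> set be")
      case True
      then obtain r where r: "r < mlen" "z = be ! r" using lenbe by (metis in_set_conv_nth)
      have "z \<in> set (snd (Ps ! l))" using W_subE[OF l(2)] te_be True by blast
      then have "i2 < l" using beI True by blast
      have "y = te ! r" using l(3) fy r fe_be by simp
      then have "y \<in> set (snd (Ps ! i1))" using te_in r by auto
      moreover have "i1 \<le> i" using \<open>i2 < l\<close> l(1) i12 by simp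
      ultimately show False using freshE[OF i(1,2) y] by blast
    next
      case False
      then have zy: "z = y" using l(3) fy fe_id by simp
      then have "y \<in> set (snd (Ps ! l)) \<or> (y \<in> set te \<and> i1 < l)" using W_subE[OF l(2)] by blast
      then show False
      proof
        assume "y \<in> set (snd (Ps ! l))" then show False using freshE[OF i(1,2) y l(1)] by simp
      next
        assume "y \<in> set te \<and> i1 < l"
        then have "y \<in> set (snd (Ps ! i1))" "i1 \<le> i" using te_in l(1) by auto
        then show False using freshE[OF i(1,2) y] by blast
      qed
    qed
  qed
  moreover have "snd (cbot E' c) = map fe (snd (cbot E c))" by (simp add: E'_cbot map_dpath_def)
  ultimately show ?thesis by auto
qed

lemma cstep':
  assumes i: "i < length cs" and c: "cs ! i = Some c" and ne: "i \<noteq> i1" "i \<noteq> i2"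
  shows "\<exists>p. cstepp R E' c p (M (W i)) (M (W (Suc i)))"
proof -
  obtain p where cp: "cstepp R E c p (Ps ! i) (Ps ! Suc i)" using somestep i c by blast
  obtain p' where p': "p' + tlen c \<le> length (snd (W i))" "ctop E c = sub p' (tlen c) (W i)"
    "W (Suc i) = splice p' (tlen c) (W i) (cbot E c)" using Wstep[OF i c ne cp] by blast
  have gi: "gpath E (W i)" using W_gpath i by simp
  have lW: "length (fst (W i)) = Suc (length (snd (W i)))" using gi by (simp add: gpath_def)
  have tl: "length (snd (ctop E' c)) = tlen c" by (simp add: E'_ctop map_dpath_def)
  have bl: "length (snd (cbot E' c)) = blen c" "length (fst (cbot E' c)) = length (fst (cbot E c))"
    by (simp_all add: E'_cbot map_dpath_def)
  have h0: "fst (cbot E c) ! 0 = fst (W i) ! p'"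
    using c_bot0[OF i c cp] c_top0[OF i c cp] p'(2) sub_facts(3)[OF lW p'(1), of 0] by simp
  have hk: "fst (cbot E c) ! blen c = fst (W i) ! (p' + tlen c)"
    using c_botk[OF i c cp] c_topm[OF i c cp] p'(2) sub_facts(3)[OF lW p'(1), of "tlen c"] by simp
  have kk: "0 < blen c" "length (fst (cbot E c)) = Suc (blen c)" using c_k[OF i c cp] by auto
  have pl: "p' < length (fst (W i))" "p' + tlen c < length (fst (W i))" using p'(1) lW by auto
  have "cstepp R E' c p' (M (W i)) (M (W (Suc i)))"
    unfolding cstepp_def
  proof (intro conjI)
    show "0 < length (snd (ctop E' c))" using tl c_m[OF i c cp] by simp
    show "p' + length (snd (ctop E' c)) \<le> length (snd (M (W i)))" using tl p'(1) by (simp add: map_dpath_def)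
    show "ctop E' c = sub p' (length (snd (ctop E' c))) (M (W i))" using tl p'(2) E'_ctop map_sub by metis
    show "M (W (Suc i)) = splice p' (length (snd (ctop E' c))) (M (W i)) (cbot E' c)"
      using tl p'(3) E'_cbot map_splice by metis
    show "snd (cbot E' c) \<noteq> []" using bl kk by auto
    show "length (fst (cbot E' c)) = Suc (length (snd (cbot E' c)))" using bl kk by simp
    have nb: "fst (cbot E c) \<noteq> []" using kk by auto
    show "hd (fst (cbot E' c)) = fst (M (W i)) ! p'"
    proof -
      have "hd (fst (cbot E' c)) = fv (hd (fst (cbot E c)))" using nb by (simp add: E'_cbot map_dpath_def hd_map)
      also have "\<dots> = fv (fst (W i) ! p')" using h0 nb by (simp add: hd_conv_nth)
      also have "\<dots> = fst (M (W i)) ! p'" using pl by (simp add: map_dpath_def)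
      finally show ?thesis .
    qed
    show "last (fst (cbot E' c)) = fst (M (W i)) ! (p' + length (snd (ctop E' c)))"
    proof -
      have "last (fst (cbot E' c)) = fv (last (fst (cbot E c)))" using nb by (simp add: E'_cbot map_dpath_def last_map)
      also have "\<dots> = fv (fst (W i) ! (p' + tlen c))" using hk nb kk by (simp add: last_conv_nth)
      also have "\<dots> = fst (M (W i)) ! (p' + tlen c)" using pl by (simp add: map_dpath_def)
      finally show ?thesis using tl by simp
    qed
    show "rel R (lab E' (snd (ctop E' c))) (lab E' (snd (cbot E' c)))"
      using c_rel[OF i c cp] lab_fe by (simp add: E'_ctop E'_cbot map_dpath_def)
  qed
  then show ?thesis by blast
qed

lemma UW_V: "(\<Union>l\<in>{..length cs}. set (fst (W l))) = verts E - set (inner mv)"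
proof
  show "(\<Union>l\<in>{..length cs}. set (fst (W l))) \<subseteq> verts E - set (inner mv)"
  proof
    fix z assume "z \<in> (\<Union>l\<in>{..length cs}. set (fst (W l)))"
    then obtain l where l: "l \<le> length cs" "z \<in> set (fst (W l))" by auto
    have "z \<notin> set (inner mv)" using W_noMV l by blast
    moreover have "z \<in> verts E" using W_subV[OF l(2)] tv_in i1 verts_iff l(1)
      by (meson le_less_linear less_imp_le_nat not_less_eq_eq subsetD)
    ultimately show "z \<in> verts E - set (inner mv)" by simp
  qed
  show "verts E - set (inner mv) \<subseteq> (\<Union>l\<in>{..length cs}. set (fst (W l)))"
    using verts_iff W_supV by fastforce
qed

lemma UW_E: "(\<Union>l\<in>{..length cs}. set (snd (W l))) = edges E - set me"
proof
  show "(\<Union>l\<in>{..length cs}. set (snd (W l))) \<subseteq> edges E - set me"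
  proof
    fix z assume "z \<in> (\<Union>l\<in>{..length cs}. set (snd (W l)))"
    then obtain l where l: "l \<le> length cs" "z \<in> set (snd (W l))" by auto
    have "z \<notin> set me" using W_noME l by blast
    moreover have "z \<in> edges E" using W_subE[OF l(2)] te_in i1 edges_iff l(1)
      by (meson le_less_linear less_imp_le_nat not_less_eq_eq subsetD)
    ultimately show "z \<in> edges E - set me" by simp
  qed
  show "edges E - set me \<subseteq> (\<Union>l\<in>{..length cs}. set (snd (W l)))"
    using edges_iff W_supE by fastforce
qed

theorem stack': "stack R E' cs' Ps'"
  unfolding stack_def
proof (intro conjI allI impI)
  show "length Ps' = Suc (length cs')" using len_Ps' len_cs' by simp
  show "Ps' ! 0 = tpath E'" using Ps'_nth[of 0] W0 P0 E'_tpath by simp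
  show "Ps' ! length cs' = bpath E'" using Ps'_nth[of "length cs"] Wn Pn E'_bpath len_cs' by simp
  fix j assume "j \<le> length cs'"
  then show "gpath E' (Ps' ! j)" using Ps'_nth gpath_MW len_cs' by simp
next
  show "cells E' = {c. Some c \<in> set cs'}"
  proof -
    have "Some c \<in> set cs' \<longleftrightarrow> Some c \<in> set cs \<and> c \<noteq> c1 \<and> c \<noteq> c2" for c
      unfolding cs'_def by (auto split: if_splits)
    then show ?thesis using E'_cells cells_iff by (auto simp: in_set_conv_nth)
  qed
next
  fix i j c assume "i < length cs'" "j < length cs'" "cs' ! i = Some c" "cs' ! j = Some c"
  then show "i = j" using cs'_Some uniq len_cs' by metis
next
  fix i assume i: "i < length cs'" "cs' ! i = None"
  then have i': "i < length cs" using len_cs' by simp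
  have "Ps' ! Suc i = M (W (Suc i))" "Ps' ! i = M (W i)" using Ps'_nth i' by auto
  moreover have "M (W (Suc i)) = M (W i)"
  proof -
    consider "cs ! i = None" | "i = i1" | "i = i2" using cs'_None[OF i' i(2)] by auto
    then show ?thesis
    proof cases
      case 1
      then have "i \<noteq> i1" "i \<noteq> i2" using i1 i2 by auto
      then have "(i1 < i \<and> i \<le> i2) = (i1 < Suc i \<and> Suc i \<le> i2)" by auto
      moreover have "Ps ! Suc i = Ps ! i" using nonestep[OF i' 1] .
      ultimately show ?thesis unfolding W_def posj_def by simp
    next
      case 2 then show ?thesis using W_i1 by simp
    next
      case 3 then show ?thesis using W_i2 by simp
    qed
  qed
  ultimately show "Ps' ! Suc i = Ps' ! i" by simp
next
  fix i c assume i: "i < length cs'" "cs' ! i = Some c"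
  then have i': "i < length cs" using len_cs' by simp
  note cs = cs'_Some[OF i' i(2)]
  have "Ps' ! Suc i = M (W (Suc i))" "Ps' ! i = M (W i)" using Ps'_nth i' by auto
  then show "(\<exists>p. cstepp R E' c p (Ps' ! i) (Ps' ! Suc i))" using cstep'[OF i'] cs by simp
  show "set (inner (fst (cbot E' c))) \<inter> UV Ps' i = {}" using fresh'V[OF i'] cs by simp
  show "set (snd (cbot E' c)) \<inter> UE Ps' i = {}" using fresh'E[OF i'] cs by simp
next
  have "UV Ps' (length cs) = fv ` (\<Union>l\<in>{..length cs}. set (fst (W l)))"
    using UV'_eq[of "length cs"] by (simp add: image_UN)
  then show "verts E' = UV Ps' (length cs')" using UW_V E'_verts len_cs' by simp
  have "UE Ps' (length cs) = fe ` (\<Union>l\<in>{..length cs}. set (snd (W l)))"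
    using UE'_eq[of "length cs"] by (simp add: image_UN)
  then show "edges E' = UE Ps' (length cs')" using UW_E E'_edges len_cs' by simp
qed

end

lemma run_gen:
  assumes lens: "length vs = Suc (length es0)"
    and cons: "\<forall>r<length es0. esrc E (es0 ! r) = vs ! r \<and> etgt E (es0 ! r) = vs ! Suc r"
    and out: "\<forall>e\<in>G. \<forall>r. 0 < r \<longrightarrow> r < length es0 \<longrightarrow> esrc E e = vs ! r \<longrightarrow> e = es0 ! r"
    and b: "b \<notin> set (inner vs)"
  shows "0 < r \<Longrightarrow> r \<le> length es0 \<Longrightarrow> walk E (vs ! r) b es \<Longrightarrow> set es \<subseteq> G \<Longrightarrow>
    \<exists>es'. es = drop r es0 @ es' \<and> walk E (vs ! length es0) b es'"
proof (induction "length es0 - r" arbitrary: r es)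
  case 0
  then have "r = length es0" by simp
  then show ?case using 0 by auto
next
  case (Suc m)
  then have rl: "r < length es0" by simp
  then have "vs ! r \<in> set (inner vs)" using inner_nth[of r vs] Suc.prems lens by simp
  then have "es \<noteq> []" using Suc.prems b by auto
  then obtain e es1 where es: "es = e # es1" by (cases es) auto
  have "e \<in> G" "esrc E e = vs ! r" using es Suc.prems by auto
  then have e: "e = es0 ! r" using out Suc.prems rl by blast
  then have w: "walk E (vs ! Suc r) b es1" using Suc.prems es cons rl by auto
  have m: "m = length es0 - Suc r" using Suc.hyps(2) by arith
  have "set es1 \<subseteq> G" using Suc.prems es by simp
  then obtain es' where "es1 = drop (Suc r) es0 @ es'" "walk E (vs ! length es0) b es'"
    using Suc.hyps(1)[OF m, of es1] rl w by auto
  moreover have "drop r es0 = es0 ! r # drop (Suc r) es0" using rl Cons_nth_drop_Suc by metis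
  ultimately show ?case using es e by auto
qed

definition Pp :: "('a list \<times> 'a list) set \<Rightarrow> 'a dgm \<Rightarrow> nat \<Rightarrow> bool" where
  "Pp R D L \<longleftrightarrow> (\<forall>ov0 es1 es2. is_pos_path D ov0 (fst (tpath D) ! L) es1 \<longrightarrow>
      is_pos_path D ov0 (fst (bpath D) ! L) es2 \<longrightarrow> eqv R (lab D es1) (lab D es2))"

context dip
begin

lemma run_mid:
  assumes "0 < r" "r \<le> mmid" "walk E (mv ! r) b es" "set es \<subseteq> edges E" "b \<notin> set (inner mv)"
  shows "\<exists>es'. es = drop r me @ es' \<and> walk E (mv ! mmid) b es'"
proof -
  have "\<forall>e\<in>edges E. \<forall>r. 0 < r \<longrightarrow> r < mmid \<longrightarrow> esrc E e = mv ! r \<longrightarrow> e = me ! r"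
    using me_out by blast
  moreover have "\<forall>r<mmid. esrc E (me ! r) = mv ! r \<and> etgt E (me ! r) = mv ! Suc r" using cmid_cons by blast
  ultimately show ?thesis using run_gen[OF lens(4) _ _ assms(5) assms(1-4)] by blast
qed

lemma walk_te: "walk E' (tv ! 0) (tv ! mlen) te"
proof -
  have "\<forall>k<mlen. esrc E' (te ! k) = tv ! k \<and> etgt E' (te ! k) = tv ! Suc k"
    using ctop_cons fv_tv lens by (simp add: E'_esrc E'_etgt)
  then show ?thesis using walk_of_path[of tv te E'] lens by simp
qed

lemma te_E': "set te \<subseteq> edges E'"
proof
  fix e assume e: "e \<in> set te"
  then have "e \<in> edges E - set me" using te_in te_me edges_iff i1 by fastforce
  moreover have "fe e = e" using fe_te e by simp
  ultimately show "e \<in> edges E'" unfolding E'_edges by (metis imageI)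
qed

lemma map_walk:
  assumes "walk E a b es" "set es \<subseteq> edges E" "a \<notin> set (inner mv)" "b \<notin> set (inner mv)"
  shows "\<exists>es'. walk E' (fv a) (fv b) es' \<and> set es' \<subseteq> edges E' \<and> eqv R (lab E es) (lab E' es')"
  using assms
proof (induction "length es" arbitrary: a es rule: less_induct)
  case less
  show ?case
  proof (cases es)
    case Nil then show ?thesis using less.prems by (intro exI[of _ "[]"]) (auto simp: lab_def)
  next
    case (Cons e rest)
    have e: "e \<in> edges E" "esrc E e = a" "walk E (etgt E e) b rest" "set rest \<subseteq> edges E"
      using less.prems Cons by auto
    show ?thesis
    proof (cases "e \<in> set me")
      case False
      have "etgt E e \<notin> set (inner mv)"
      proof
        assume "etgt E e \<in> set (inner mv)"
        then obtain r where "0 < r" "r < mmid" "etgt E e = mv ! r" using inner_iff[OF lens(4)] by blast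
        then have "e = me ! (r - 1)" using me_in e(1) by blast
        then show False using False \<open>r < mmid\<close> by simp
      qed
      then obtain rest' where r: "walk E' (fv (etgt E e)) (fv b) rest'" "set rest' \<subseteq> edges E'"
        "eqv R (lab E rest) (lab E' rest')"
        using less.hyps[of rest "etgt E e"] less.prems Cons e by auto
      have fe: "fe e \<in> edges E'" using e(1) False unfolding E'_edges by blast
      have w: "walk E' (fv a) (fv b) (fe e # rest')"
        using r(1) src_fe[OF e(1)] e(2) by (simp add: E'_esrc E'_etgt)
      have "eqv R ([elab E e] @ lab E rest) ([elab E e] @ lab E' rest')" using eqv_app[OF eqv_refl r(3)] .
      then have "eqv R (lab E es) (lab E' (fe e # rest'))" using Cons by (simp add: lab_def E'_elab elab_fe)
      then show ?thesis using w fe r(2) by (intro exI[of _ "fe e # rest'"]) auto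
    next
      case True
      then obtain r where r: "r < mmid" "e = me ! r" by (metis in_set_conv_nth)
      have "a = mv ! r" using e(2) cmid_cons r by simp
      then have r0: "r = 0" using less.prems(3) inner_nth[of r mv] lens r by (cases "r = 0") auto
      obtain es'' where es'': "es = me @ es''" "walk E (mv ! mmid) b es''"
      proof (cases "mmid = 1")
        case True
        then have "me = [e]" using r r0 by (cases me) auto
        moreover have "etgt E e = mv ! mmid" using cmid_cons r r0 True by simp
        ultimately show ?thesis using that Cons e by auto
      next
        case False
        have w1: "walk E (mv ! 1) b rest" using e cmid_cons r r0 by simp
        obtain es' where "rest = drop 1 me @ es'" "walk E (mv ! mmid) b es'"
          using run_mid[of 1 b rest] w1 e(4) less.prems(4) False lens by auto
        moreover have "me = e # drop 1 me" using r r0 lens by (cases me) auto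
        ultimately show ?thesis using that[of es'] Cons by (metis append_Cons)
      qed
      have lt: "length es'' < length es" using es'' lens by simp
      have Bn: "mv ! mmid \<notin> set (inner mv)" using tv_mv ends tv_ends by metis
      have "set es'' \<subseteq> edges E" using less.prems(2) es'' by simp
      then obtain es3 where e3: "walk E' (fv (mv ! mmid)) (fv b) es3" "set es3 \<subseteq> edges E'"
        "eqv R (lab E es'') (lab E' es3)"
        using less.hyps[OF lt, of "mv ! mmid"] es''(2) Bn less.prems(4) by blast
      have fa: "fv a = tv ! 0" using \<open>a = mv ! r\<close> r0 ends fv_tv tv_ends by simp
      have fB: "fv (mv ! mmid) = tv ! mlen" using ends fv_tv tv_ends by simp
      have w: "walk E' (fv a) (fv b) (te @ es3)" using walk_te e3(1) fa fB walk_append by fastforce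
      have "eqv R (lab E me) (lab E te)" using eqv_sym[OF rel_eqv[OF c_rel[OF i1]]] .
      then have "eqv R (lab E me @ lab E es'') (lab E te @ lab E' es3)" using eqv_app e3(3) by blast
      then have "eqv R (lab E es) (lab E' (te @ es3))" using es'' by (simp add: lab_def E'_elab)
      then show ?thesis using w e3(2) te_E' by (intro exI[of _ "te @ es3"]) auto
    qed
  qed
qed

lemma o1_notmv: "L < length (fst (tpath E)) \<Longrightarrow> fst (tpath E) ! L \<notin> set (inner mv)"
  using mvI[of _ 0] P0 by (metis bot_nat_0.extremum nth_mem not_less0)

lemma o2_notmv: "L < length (fst (bpath E)) \<Longrightarrow> fst (bpath E) ! L \<notin> set (inner mv)"
proof
  assume a: "L < length (fst (bpath E))" "fst (bpath E) ! L \<in> set (inner mv)"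
  then have "fst (bpath E) ! L \<in> set (fst (Ps ! length cs))" using Pn by simp
  then show False using mvI[OF a(2)] i2 by fastforce
qed

lemma Pp_back:
  assumes L: "L < length (fst (tpath E))" "L < length (fst (bpath E))" and P': "Pp R E' L"
  shows "Pp R E L"
proof -
  let ?o1 = "fst (tpath E) ! L" and ?o2 = "fst (bpath E) ! L"
  have t': "fst (tpath E') ! L = fv ?o1" using L by (simp add: E'_tpath map_dpath_def)
  have b': "fst (bpath E') ! L = fv ?o2" using L by (simp add: E'_bpath map_dpath_def)
  have n1: "?o1 \<notin> set (inner mv)" using o1_notmv L by simp
  have n2: "?o2 \<notin> set (inner mv)" using o2_notmv L by simp
  have case1: "eqv R (lab E es1) (lab E es2)"
    if ov0: "ov0 \<in> verts E" "ov0 \<notin> set (inner mv)" and w: "walk E ov0 ?o1 es1" "set es1 \<subseteq> edges E"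
      "walk E ov0 ?o2 es2" "set es2 \<subseteq> edges E" for ov0 es1 es2
  proof -
    obtain f1 where f1: "walk E' (fv ov0) (fv ?o1) f1" "set f1 \<subseteq> edges E'" "eqv R (lab E es1) (lab E' f1)"
      using map_walk[OF w(1,2) ov0(2) n1] by blast
    obtain f2 where f2: "walk E' (fv ov0) (fv ?o2) f2" "set f2 \<subseteq> edges E'" "eqv R (lab E es2) (lab E' f2)"
      using map_walk[OF w(3,4) ov0(2) n2] by blast
    have ov: "fv ov0 \<in> verts E'" using ov0 unfolding E'_verts by blast
    have "eqv R (lab E' f1) (lab E' f2)"
      using P' f1 f2 ov t' b' unfolding Pp_def is_pos_path_walk by metis
    then show ?thesis using f1 f2 eqv_trans eqv_sym by metis
  qed
  show ?thesis unfolding Pp_def is_pos_path_walk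
  proof (intro allI impI)
    fix ov0 es1 es2
    assume a1: "ov0 \<in> verts E \<and> set es1 \<subseteq> edges E \<and> walk E ov0 ?o1 es1"
      and a2: "ov0 \<in> verts E \<and> set es2 \<subseteq> edges E \<and> walk E ov0 ?o2 es2"
    show "eqv R (lab E es1) (lab E es2)"
    proof (cases "ov0 \<in> set (inner mv)")
      case False then show ?thesis using case1 a1 a2 by blast
    next
      case True
      then obtain r where r: "0 < r" "r < mmid" "ov0 = mv ! r" using inner_iff[OF lens(4)] by blast
      obtain g1 where g1: "es1 = drop r me @ g1" "walk E (mv ! mmid) ?o1 g1"
        using run_mid[of r ?o1 es1] r a1 n1 by auto
      obtain g2 where g2: "es2 = drop r me @ g2" "walk E (mv ! mmid) ?o2 g2"
        using run_mid[of r ?o2 es2] r a2 n2 by auto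
      have Bv: "mv ! mmid \<in> verts E" using gmid lens unfolding gpath_def by (metis lessI nth_mem subsetD)
      have Bn: "mv ! mmid \<notin> set (inner mv)" using tv_mv ends tv_ends by metis
      have "eqv R (lab E g1) (lab E g2)" using case1[OF Bv Bn g1(2) _ g2(2)] a1 a2 g1 g2 by auto
      then show ?thesis using g1 g2 eqv_app[OF eqv_refl] by (simp add: lab_def)
    qed
  qed
qed

end

theorem dipole_step:
  assumes sg: "\<forall>(x, y) \<in> R. x \<noteq> [] \<and> y \<noteq> []" and st: "stack R E cs Ps" and dp: "is_dipole E c1 c2"
  shows "\<exists>cs' Ps'. stack R (remove_dipole E c1 c2) cs' Ps'"
    "L < length (fst (tpath E)) \<Longrightarrow> L < length (fst (bpath E)) \<Longrightarrow> Pp R (remove_dipole E c1 c2) L \<Longrightarrow> Pp R E L"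
proof -
  interpret stk R E cs Ps using st by (unfold_locales)
  have "c1 \<in> cells E" "c2 \<in> cells E" using dp by (auto simp: is_dipole_def)
  then obtain i1 i2 where i: "i1 < length cs" "cs ! i1 = Some c1" "i2 < length cs" "cs ! i2 = Some c2"
    using cells_iff by blast
  obtain p1 where p1: "cstepp R E c1 p1 (Ps ! i1) (Ps ! Suc i1)" using somestep i by blast
  obtain p2 where p2: "cstepp R E c2 p2 (Ps ! i2) (Ps ! Suc i2)" using somestep i by blast
  interpret d: dip R E cs Ps c1 c2 i1 i2 p1 p2
    using st sg i p1 p2 dp by (unfold_locales) auto
  show "\<exists>cs' Ps'. stack R (remove_dipole E c1 c2) cs' Ps'" using d.stack' by blast
  show "L < length (fst (tpath E)) \<Longrightarrow> L < length (fst (bpath E)) \<Longrightarrow> Pp R (remove_dipole E c1 c2) L \<Longrightarrow> Pp R E L"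
    using d.Pp_back by blast
qed

section \<open>Built diagrams admit stackings\<close>

definition binv :: "('a list \<times> 'a list) set \<Rightarrow> nat \<Rightarrow> 'a dgm \<Rightarrow> 'a list \<Rightarrow> dpath list \<Rightarrow> bool" where
  "binv R k D w Ps \<longleftrightarrow> stack R D (map Some [0..<k]) Ps \<and> map (elab D) (snd (bpath D)) = w \<and>
     (\<forall>x\<in>verts D. fst (prod_decode x) \<le> k) \<and> (\<forall>e\<in>edges D. fst (prod_decode e) \<le> k)"

lemma binv_init: "binv R 0 (init_dgm w) w [tpath (init_dgm w)]"
proof -
  let ?vs = "map (\<lambda>j. prod_encode (0, j)) [0..<Suc (length w)]"
  let ?es = "map (\<lambda>j. prod_encode (0, j)) [0..<length w]"
  have tp: "tpath (init_dgm w) = (?vs, ?es)" "bpath (init_dgm w) = (?vs, ?es)"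
    "verts (init_dgm w) = set ?vs" "edges (init_dgm w) = set ?es" "cells (init_dgm w) = {}"
    by (simp_all add: init_dgm_def Let_def del: upt_Suc)
  have g: "gpath (init_dgm w) (?vs, ?es)"
    unfolding gpath_def
  proof (intro conjI allI impI)
    show "distinct (fst (?vs, ?es))" by (simp add: distinct_map inj_on_def del: upt_Suc)
    fix k assume "k < length (snd (?vs, ?es))"
    then show "esrc (init_dgm w) (snd (?vs, ?es) ! k) = fst (?vs, ?es) ! k"
      "etgt (init_dgm w) (snd (?vs, ?es) ! k) = fst (?vs, ?es) ! Suc k"
      by (simp_all add: init_dgm_def Let_def nth_append del: upt_Suc)
  qed (simp_all add: tp del: upt_Suc)
  have "stack R (init_dgm w) (map Some [0..<0]) [tpath (init_dgm w)]"
    unfolding stack_def using g tp by (simp add: UV_def UE_def del: upt_Suc)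
  moreover have "map (elab (init_dgm w)) (snd (bpath (init_dgm w))) = w"
    by (simp add: init_dgm_def Let_def comp_def map_nth del: upt_Suc)
  ultimately show ?thesis unfolding binv_def using tp by (auto simp del: upt_Suc)
qed

lemma inner_three: "inner ([a] @ xs @ [b]) = xs" by (simp add: inner_def)

lemma binv_step:
  assumes inv: "binv R k D w Ps" and r: "(x, y) \<in> R \<or> (y, x) \<in> R" and xy: "x \<noteq> []" "y \<noteq> []"
    and pl: "p + length x \<le> length w" and tx: "take (length x) (drop p w) = x"
  shows "binv R (Suc k) (apply_step k (p, x, y) D) (take p w @ y @ drop (p + length x) w)
          (Ps @ [bpath (apply_step k (p, x, y) D)])"
proof -
  let ?cs = "map Some [0..<k]"
  have st: "stack R D ?cs Ps" and wd: "map (elab D) (snd (bpath D)) = w"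
    and nmv: "\<forall>x\<in>verts D. fst (prod_decode x) \<le> k" and nme: "\<forall>e\<in>edges D. fst (prod_decode e) \<le> k"
    using inv by (auto simp: binv_def)
  interpret stk R D ?cs Ps using st by unfold_locales
  let ?bv = "fst (bpath D)" and ?be = "snd (bpath D)"
  let ?mid = "map (\<lambda>j. prod_encode (Suc k, j)) [1..<length y]"
  let ?nv = "[?bv ! p] @ ?mid @ [?bv ! (p + length x)]"
  let ?ne = "map (\<lambda>j. prod_encode (Suc k, j)) [0..<length y]"
  let ?isnew = "\<lambda>e. fst (prod_decode e) = Suc k \<and> snd (prod_decode e) < length y"
  let ?D' = "apply_step k (p, x, y) D"
  have lcs: "length ?cs = k" by simp
  have gB: "gpath D (bpath D)" using gp[of k] Pn by simp
  have lbe: "length ?be = length w" using wd by (metis length_map)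
  have lbv: "length ?bv = Suc (length w)" using gB lbe by (simp add: gpath_def)
  have dbv: "distinct ?bv" using gB by (simp add: gpath_def)
  have D'_verts: "verts ?D' = verts D \<union> set ?nv" by (simp add: apply_step_def Let_def)
  have D'_edges: "edges ?D' = edges D \<union> set ?ne" by (simp add: apply_step_def Let_def)
  have D'_esrc: "esrc ?D' e = (if ?isnew e then ?nv ! snd (prod_decode e) else esrc D e)" for e
    by (simp add: apply_step_def Let_def)
  have D'_etgt: "etgt ?D' e = (if ?isnew e then ?nv ! Suc (snd (prod_decode e)) else etgt D e)" for e
    by (simp add: apply_step_def Let_def)
  have D'_elab: "elab ?D' e = (if ?isnew e then y ! snd (prod_decode e) else elab D e)" for e
    by (simp add: apply_step_def Let_def)
  have D'_cells: "cells ?D' = insert k (cells D)" by (simp add: apply_step_def Let_def)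
  have D'_ctop: "ctop ?D' = (ctop D)(k := sub p (length x) (bpath D))"
    by (simp add: apply_step_def Let_def sub_def)
  have D'_cbot: "cbot ?D' = (cbot D)(k := (?nv, ?ne))" by (simp add: apply_step_def Let_def)
  have D'_tpath: "tpath ?D' = tpath D" by (simp add: apply_step_def Let_def)
  have D'_bpath: "bpath ?D' = splice p (length x) (bpath D) (?nv, ?ne)"
    by (simp add: apply_step_def Let_def splice_def)
  have old: "\<not> ?isnew e" if "e \<in> edges D" for e using nme that by fastforce
  have oldv: "x' \<notin> set ?mid" if "x' \<in> verts D" for x' using nmv that by fastforce
  have old_src: "esrc ?D' e = esrc D e" "etgt ?D' e = etgt D e" "elab ?D' e = elab D e" if "e \<in> edges D" for e
    using old[OF that] D'_esrc D'_etgt D'_elab by auto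
  have mono: "gpath ?D' P" if g: "gpath D P" for P
  proof -
    have "set (snd P) \<subseteq> edges D" using g by (simp add: gpath_def)
    then show ?thesis using g unfolding gpath_def D'_verts D'_edges using old_src by (auto simp: subset_iff)
  qed
  have ly: "0 < length y" using xy by simp
  have lnv: "length ?nv = Suc (length ?ne)" using ly by simp
  have nv_nth: "?nv ! j = (if j = 0 then ?bv ! p else if j = length y then ?bv ! (p + length x) else prod_encode (Suc k, j))"
    if "j \<le> length y" for j
    using that ly by (auto simp: nth_append nth_Cons')
  have pv: "p < length ?bv" "p + length x < length ?bv" using pl lbv by auto
  have bvD: "set ?bv \<subseteq> verts D" using gB by (simp add: gpath_def)
  have gQ: "gpath ?D' (?nv, ?ne)"
    unfolding gpath_def
  proof (intro conjI allI impI)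
    show "length (fst (?nv, ?ne)) = Suc (length (snd (?nv, ?ne)))" using lnv by simp
    have "?bv ! p \<noteq> ?bv ! (p + length x)" using nth_eq_iff_index_eq[OF dbv pv] xy by simp
    moreover have "?bv ! p \<in> verts D" "?bv ! (p + length x) \<in> verts D" using bvD pv nth_mem by blast+
    then have "?bv ! p \<notin> set ?mid" "?bv ! (p + length x) \<notin> set ?mid" using oldv by blast+
    moreover have "distinct ?mid" by (simp add: distinct_map inj_on_def)
    ultimately show "distinct (fst (?nv, ?ne))" by simp
    show "set (fst (?nv, ?ne)) \<subseteq> verts ?D'" using D'_verts by auto
    show "set (snd (?nv, ?ne)) \<subseteq> edges ?D'" using D'_edges by auto
    fix j assume j: "j < length (snd (?nv, ?ne))"
    then have "?isnew (?ne ! j)" by simp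
    then show "esrc ?D' (snd (?nv, ?ne) ! j) = fst (?nv, ?ne) ! j"
      "etgt ?D' (snd (?nv, ?ne) ! j) = fst (?nv, ?ne) ! Suc j"
      using j D'_esrc D'_etgt by simp_all
  qed
  have innv: "inner ?nv = ?mid" by (rule inner_three)
  have gB': "gpath ?D' (bpath ?D')"
  proof -
    have "fst (?nv, ?ne) ! 0 = fst (bpath D) ! p" by simp
    moreover have "fst (?nv, ?ne) ! length (snd (?nv, ?ne)) = fst (bpath D) ! (p + length x)"
      using ly by (simp add: nth_append)
    moreover have "set (inner (fst (?nv, ?ne))) \<inter> set (fst (bpath D)) = {}" using innv oldv bvD by auto
    moreover have "p + length x \<le> length (snd (bpath D))" using pl lbe by simp
    ultimately show ?thesis using gpath_splice[OF mono[OF gB] _ gQ] ly D'_bpath by simp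
  qed
  let ?cs' = "map Some [0..<Suc k]"
  let ?Ps' = "Ps @ [bpath ?D']"
  have lPs: "length Ps = Suc k" using lenPs by simp
  have Ps'_nth: "?Ps' ! j = Ps ! j" if "j \<le> k" for j using that lPs by (simp add: nth_append)
  have Ps'_last: "?Ps' ! Suc k = bpath ?D'" using lPs by (simp add: nth_append)
  have UV': "UV ?Ps' j = UV Ps j" "UE ?Ps' j = UE Ps j" if "j \<le> k" for j
    using that Ps'_nth unfolding UV_def UE_def by auto
  have topE: "snd (sub p (length x) (bpath D)) = take (length x) (drop p ?be)" by (simp add: sub_def)
  have lab_top: "lab ?D' (snd (sub p (length x) (bpath D))) = x"
  proof -
    have "set (take (length x) (drop p ?be)) \<subseteq> edges D" using gB
      by (auto simp: gpath_def dest: in_set_takeD in_set_dropD)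
    then have "lab ?D' (take (length x) (drop p ?be)) = lab D (take (length x) (drop p ?be))"
      using old_src by (simp add: lab_def subset_iff)
    also have "\<dots> = take (length x) (drop p w)" by (simp add: wd[symmetric] lab_def take_map drop_map)
    finally show ?thesis using tx topE by simp
  qed
  have lab_bot: "lab ?D' ?ne = y"
  proof -
    have "map (\<lambda>j. elab ?D' (prod_encode (Suc k, j))) [0..<length y] = map (\<lambda>j. y ! j) [0..<length y]"
      by (rule map_cong) (auto simp: D'_elab)
    then show ?thesis by (simp add: lab_def comp_def map_nth)
  qed
  have stack': "stack R ?D' ?cs' ?Ps'"
    unfolding stack_def
  proof (intro conjI allI impI)
    show "length ?Ps' = Suc (length ?cs')" using lPs by simp
    show "?Ps' ! 0 = tpath ?D'" using Ps'_nth[of 0] P0 D'_tpath by simp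
    show "?Ps' ! length ?cs' = bpath ?D'" using Ps'_last by simp
    fix j assume "j \<le> length ?cs'"
    then show "gpath ?D' (?Ps' ! j)"
      using Ps'_nth Ps'_last gB' mono gp by (cases "j = Suc k") auto
  next
    show "cells ?D' = {c. Some c \<in> set ?cs'}" using D'_cells cells_iff by (auto simp: less_Suc_eq)
  next
    fix i j c assume "i < length ?cs'" "j < length ?cs'" "?cs' ! i = Some c" "?cs' ! j = Some c"
    then show "i = j" by (simp del: upt_Suc)
  next
    fix i assume "i < length ?cs'" "?cs' ! i = None"
    then show "?Ps' ! Suc i = ?Ps' ! i" by (simp del: upt_Suc)
  next
    fix i c assume i: "i < length ?cs'" "?cs' ! i = Some c"
    then have ci: "c = i" "i \<le> k" by (auto simp del: upt_Suc)
    show "\<exists>p. cstepp R ?D' c p (?Ps' ! i) (?Ps' ! Suc i)"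
    proof (cases "i = k")
      case True
      have "cstepp R ?D' k p (bpath D) (bpath ?D')"
        unfolding cstepp_def D'_ctop D'_cbot
      proof (simp only: fun_upd_same, intro conjI)
        show "0 < length (snd (sub p (length x) (bpath D)))" using topE pl lbe xy by simp
        show "p + length (snd (sub p (length x) (bpath D))) \<le> length (snd (bpath D))" using topE pl lbe by simp
        have lt: "length (snd (sub p (length x) (bpath D))) = length x" using topE pl lbe by simp
        show "sub p (length x) (bpath D) = sub p (length (snd (sub p (length x) (bpath D)))) (bpath D)"
          using lt by simp
        show "bpath ?D' = splice p (length (snd (sub p (length x) (bpath D)))) (bpath D) (?nv, ?ne)"
          using lt D'_bpath by simp
        show "snd (?nv, ?ne) \<noteq> []" using ly by simp
        show "length (fst (?nv, ?ne)) = Suc (length (snd (?nv, ?ne)))" using lnv by simp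
        show "hd (fst (?nv, ?ne)) = fst (bpath D) ! p" by simp
        show "last (fst (?nv, ?ne)) = fst (bpath D) ! (p + length (snd (sub p (length x) (bpath D))))"
          using lt by simp
        show "rel R (lab ?D' (snd (sub p (length x) (bpath D)))) (lab ?D' (snd (?nv, ?ne)))"
          using lab_top lab_bot r by (simp add: rel_def)
      qed
      then show ?thesis using True ci Ps'_nth[of k] Ps'_last Pn by auto
    next
      case False
      then have ik: "i < k" using ci by simp
      obtain q where cq: "cstepp R D i q (Ps ! i) (Ps ! Suc i)" using somestep[of i i] ik by auto
      have ct: "ctop ?D' i = ctop D i" "cbot ?D' i = cbot D i" using D'_ctop D'_cbot ik by auto
      have "set (snd (ctop D i)) \<subseteq> edges D" "set (snd (cbot D i)) \<subseteq> edges D"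
        using c_gtop[of i i q] c_gbot[of i i q] ik cq by (auto simp: gpath_def)
      then have "lab ?D' (snd (ctop D i)) = lab D (snd (ctop D i))" "lab ?D' (snd (cbot D i)) = lab D (snd (cbot D i))"
        using old_src by (auto simp: lab_def subset_iff)
      then have "cstepp R ?D' i q (Ps ! i) (Ps ! Suc i)" using cq ct by (simp add: cstepp_def)
      then show ?thesis using Ps'_nth ik ci by auto
    qed
    show "set (inner (fst (cbot ?D' c))) \<inter> UV ?Ps' i = {}"
    proof (cases "i = k")
      case True
      have "UV ?Ps' k = verts D" using UV'[of k] vertsUV by simp
      then show ?thesis using True ci D'_cbot innv oldv by auto
    next
      case False
      then have ik: "i < k" using ci by simp
      then show ?thesis using freshUV[of i i] UV'[of i] D'_cbot ci by simp
    qed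
    show "set (snd (cbot ?D' c)) \<inter> UE ?Ps' i = {}"
    proof (cases "i = k")
      case True
      have "UE ?Ps' k = edges D" using UV'[of k] edgesUE by simp
      then show ?thesis using True ci D'_cbot nme by fastforce
    next
      case False
      then have ik: "i < k" using ci by simp
      then show ?thesis using freshUE[of i i] UV'[of i] D'_cbot ci by simp
    qed
  next
    have "UV ?Ps' (Suc k) = UV Ps k \<union> set (fst (bpath ?D'))"
      using UV_Suc[of k] UV' Ps'_last unfolding UV_def by (auto simp: atMost_Suc)
    moreover have "set (fst (bpath ?D')) \<subseteq> verts D \<union> set ?nv" "set ?nv \<subseteq> set (fst (bpath ?D'))"
      using D'_bpath bvD by (auto simp: splice_def dest: in_set_takeD in_set_dropD)
    ultimately show "verts ?D' = UV ?Ps' (length ?cs')" using D'_verts vertsUV by auto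
  next
    have "UE ?Ps' (Suc k) = UE Ps k \<union> set (snd (bpath ?D'))"
      using UE_Suc[of k] UV' Ps'_last unfolding UE_def by (auto simp: atMost_Suc)
    moreover have "set ?be \<subseteq> edges D" using gB by (simp add: gpath_def)
    then have "set (snd (bpath ?D')) \<subseteq> edges D \<union> set ?ne" "set ?ne \<subseteq> set (snd (bpath ?D'))"
      using D'_bpath by (auto simp: splice_def dest: in_set_takeD in_set_dropD)
    ultimately show "edges ?D' = UE ?Ps' (length ?cs')" using D'_edges edgesUE by auto
  qed
  have word: "map (elab ?D') (snd (bpath ?D')) = take p w @ y @ drop (p + length x) w"
  proof -
    have "set ?be \<subseteq> edges D" using gB by (simp add: gpath_def)
    then have mm: "map (elab ?D') ?be = map (elab D) ?be" using old_src by (auto intro!: map_cong)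
    then have "map (elab ?D') (take p ?be) = take p w" "map (elab ?D') (drop (p + length x) ?be) = drop (p + length x) w"
      using wd by (simp_all add: take_map[symmetric] drop_map[symmetric])
    then show ?thesis using D'_bpath lab_bot by (simp add: splice_def lab_def)
  qed
  have names: "\<forall>x\<in>verts ?D'. fst (prod_decode x) \<le> Suc k" "\<forall>e\<in>edges ?D'. fst (prod_decode e) \<le> Suc k"
  proof -
    have "?bv ! p \<in> verts D" "?bv ! (p + length x) \<in> verts D" using bvD pv nth_mem by blast+
    then have "fst (prod_decode (?bv ! p)) \<le> k" "fst (prod_decode (?bv ! (p + length x))) \<le> k" using nmv by auto
    then show "\<forall>x\<in>verts ?D'. fst (prod_decode x) \<le> Suc k" "\<forall>e\<in>edges ?D'. fst (prod_decode e) \<le> Suc k"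
      using D'_verts D'_edges nmv nme by auto
  qed
  show ?thesis unfolding binv_def using stack' word names by simp
qed

lemma binv_build:
  assumes sg: "\<forall>(x, y) \<in> R. x \<noteq> [] \<and> y \<noteq> []"
  shows "binv R k D w Ps \<Longrightarrow> valid_steps R w ss \<Longrightarrow>
     \<exists>Ps'. binv R (k + length ss) (build_aux k D ss) (final_word w ss) Ps'"
proof (induction ss arbitrary: k D w Ps)
  case Nil then show ?case by auto
next
  case (Cons s ss)
  obtain p a b where s: "s = (p, a, b)" by (cases s) auto
  have v: "(a, b) \<in> R \<or> (b, a) \<in> R" "p + length a \<le> length w" "take (length a) (drop p w) = a"
    "valid_steps R (take p w @ b @ drop (p + length a) w) ss"
    using Cons.prems s by auto
  have ne: "a \<noteq> []" "b \<noteq> []" using v(1) sg by auto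
  have "binv R (Suc k) (apply_step k (p, a, b) D) (take p w @ b @ drop (p + length a) w)
          (Ps @ [bpath (apply_step k (p, a, b) D)])"
    using binv_step[OF Cons.prems(1) v(1) ne v(2,3)] .
  then obtain Ps' where "binv R (Suc k + length ss) (build_aux (Suc k) (apply_step k (p, a, b) D) ss)
        (final_word (take p w @ b @ drop (p + length a) w) ss) Ps'"
    using Cons.IH v(4) by blast
  then show ?case using s by auto
qed

theorem build_stack:
  assumes sg: "\<forall>(x, y) \<in> R. x \<noteq> [] \<and> y \<noteq> []" and v: "valid_steps R w ss"
  shows "\<exists>cs Ps. stack R (build w ss) cs Ps \<and> map (elab (build w ss)) (snd (bpath (build w ss))) = final_word w ss"
proof -
  obtain Ps where "binv R (0 + length ss) (build_aux 0 (init_dgm w) ss) (final_word w ss) Ps"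
    using binv_build[OF sg binv_init v] by blast
  then show ?thesis unfolding binv_def build_def by blast
qed

section \<open>The junction vertex of a sum\<close>

lemma bp_step:
  assumes y: "y \<noteq> []" and pl: "p + length x < length (fst (bpath D))"
  shows "length (fst (bpath (apply_step k (p, x, y) D))) = length (fst (bpath D)) - length x + length y"
    "L \<le> p \<Longrightarrow> fst (bpath (apply_step k (p, x, y) D)) ! L = fst (bpath D) ! L"
    "p + length x \<le> L' \<Longrightarrow> L' < length (fst (bpath D)) \<Longrightarrow>
       fst (bpath (apply_step k (p, x, y) D)) ! (L' - length x + length y) = fst (bpath D) ! L'"
proof -
  let ?V = "fst (bpath D)"
  define nv where "nv = [?V ! p] @ map (\<lambda>j. prod_encode (Suc k, j)) [1..<length y] @ [?V ! (p + length x)]"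
  have V': "fst (bpath (apply_step k (p, x, y) D)) = take p ?V @ nv @ drop (Suc (p + length x)) ?V"
    by (simp add: apply_step_def Let_def nv_def)
  have lnv: "length nv = Suc (length y)" using y by (simp add: nv_def)
  have nv0: "nv ! 0 = ?V ! p" by (simp add: nv_def)
  have nvy: "nv ! length y = ?V ! (p + length x)" using y by (simp add: nv_def nth_append)
  have ltp: "length (take p ?V) = p" using pl by simp
  show "length (fst (bpath (apply_step k (p, x, y) D))) = length ?V - length x + length y"
    using V' lnv pl by simp
  show "L \<le> p \<Longrightarrow> fst (bpath (apply_step k (p, x, y) D)) ! L = ?V ! L"
  proof -
    assume L: "L \<le> p"
    show ?thesis
    proof (cases "L < p")
      case True then show ?thesis using V' ltp by (simp add: nth_append)
    next
      case False then have "L = p" using L by simp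
      then show ?thesis using V' ltp nv0 lnv by (simp add: nth_append)
    qed
  qed
  assume L: "p + length x \<le> L'" "L' < length ?V"
  let ?i = "L' - length x + length y"
  have ip: "\<not> ?i < p" using L by simp
  show "fst (bpath (apply_step k (p, x, y) D)) ! ?i = ?V ! L'"
  proof (cases "L' = p + length x")
    case True
    then have "?i - p = length y" by simp
    then show ?thesis using V' ltp ip lnv True nvy by (simp add: nth_append)
  next
    case False
    then have gt: "L' > p + length x" using L by simp
    then have "\<not> (?i - p < length nv)" using lnv by simp
    then have "fst (bpath (apply_step k (p, x, y) D)) ! ?i = drop (Suc (p + length x)) ?V ! (?i - p - length nv)"
      using V' ltp ip by (simp add: nth_append)
    also have "\<dots> = ?V ! (Suc (p + length x) + (?i - p - length nv))" using L gt lnv by (simp add: nth_drop)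
    also have "Suc (p + length x) + (?i - p - length nv) = L'" using gt lnv by simp
    finally show ?thesis .
  qed
qed

lemma J1:
  assumes sg: "\<forall>(x, y) \<in> R. x \<noteq> [] \<and> y \<noteq> []"
  shows "valid_steps R w1 ss \<Longrightarrow> length (fst (bpath D)) = length w1 + m + 1 \<Longrightarrow>
    fst (bpath (build_aux k D ss)) ! length (final_word w1 ss) = fst (bpath D) ! length w1 \<and>
    length (fst (bpath (build_aux k D ss))) = length (final_word w1 ss) + m + 1"
proof (induction ss arbitrary: k D w1)
  case Nil then show ?case by simp
next
  case (Cons s ss)
  obtain p a b where s: "s = (p, a, b)" by (cases s) auto
  have v: "(a, b) \<in> R \<or> (b, a) \<in> R" "p + length a \<le> length w1"
    "valid_steps R (take p w1 @ b @ drop (p + length a) w1) ss" using Cons.prems s by auto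
  have ne: "b \<noteq> []" using v(1) sg by auto
  let ?D' = "apply_step k (p, a, b) D" and ?w' = "take p w1 @ b @ drop (p + length a) w1"
  have pl: "p + length a < length (fst (bpath D))" using v(2) Cons.prems(2) by simp
  have lw': "length ?w' = length w1 - length a + length b" using v(2) by simp
  have l': "length (fst (bpath ?D')) = length ?w' + m + 1" using bp_step(1)[OF ne pl] Cons.prems(2) lw' v(2) by simp
  have j': "fst (bpath ?D') ! length ?w' = fst (bpath D) ! length w1"
    using bp_step(3)[OF ne pl, of "length w1"] lw' v(2) Cons.prems(2) by simp
  show ?case using Cons.IH[OF v(3) l', of "Suc k"] j' s by simp
qed

lemma J2:
  assumes sg: "\<forall>(x, y) \<in> R. x \<noteq> [] \<and> y \<noteq> []"
  shows "valid_steps R w2 ss \<Longrightarrow> length (fst (bpath D)) = L + length w2 + 1 \<Longrightarrow>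
    fst (bpath (build_aux k D (map (\<lambda>(p, a, b). (p + L, a, b)) ss))) ! L = fst (bpath D) ! L \<and>
    length (fst (bpath (build_aux k D (map (\<lambda>(p, a, b). (p + L, a, b)) ss)))) = L + length (final_word w2 ss) + 1"
proof (induction ss arbitrary: k D w2)
  case Nil then show ?case by simp
next
  case (Cons s ss)
  obtain p a b where s: "s = (p, a, b)" by (cases s) auto
  have v: "(a, b) \<in> R \<or> (b, a) \<in> R" "p + length a \<le> length w2"
    "valid_steps R (take p w2 @ b @ drop (p + length a) w2) ss" using Cons.prems s by auto
  have ne: "b \<noteq> []" using v(1) sg by auto
  let ?D' = "apply_step k (p + L, a, b) D" and ?w' = "take p w2 @ b @ drop (p + length a) w2"
  have pl: "p + L + length a < length (fst (bpath D))" using v(2) Cons.prems(2) by simp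
  have lw': "length ?w' = length w2 - length a + length b" using v(2) by simp
  have l': "length (fst (bpath ?D')) = L + length ?w' + 1" using bp_step(1)[OF ne pl] Cons.prems(2) lw' v(2) by simp
  have j': "fst (bpath ?D') ! L = fst (bpath D) ! L" using bp_step(2)[OF ne pl, of L] by simp
  show ?case using Cons.IH[OF v(3) l', of "Suc k"] j' s by simp
qed

lemma build_aux_append: "build_aux k D (xs @ ys) = build_aux (k + length xs) (build_aux k D xs) ys"
  by (induction xs arbitrary: k D) auto

lemma tpath_build_aux: "tpath (build_aux k D ss) = tpath D"
  by (induction ss arbitrary: k D) (auto simp: apply_step_def Let_def split: prod.splits)

lemma valid_append_right: "valid_steps R w ss \<Longrightarrow> valid_steps R (w @ t) ss \<and> final_word (w @ t) ss = final_word w ss @ t"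
proof (induction ss arbitrary: w)
  case Nil then show ?case by simp
next
  case (Cons s ss)
  obtain p a b where s: "s = (p, a, b)" by (cases s) auto
  have v: "(a, b) \<in> R \<or> (b, a) \<in> R" "p + length a \<le> length w" "take (length a) (drop p w) = a"
    "valid_steps R (take p w @ b @ drop (p + length a) w) ss" using Cons.prems s by auto
  have e: "take p (w @ t) @ b @ drop (p + length a) (w @ t) = (take p w @ b @ drop (p + length a) w) @ t"
    using v(2) by simp
  have "take (length a) (drop p (w @ t)) = a" using v(2,3) by simp
  then show ?case using Cons.IH[OF v(4)] v s e by simp
qed

theorem junction:
  assumes sg: "\<forall>(x, y) \<in> R. x \<noteq> [] \<and> y \<noteq> []"
    and d1: "is_diagram R u ss1 u" and d2: "is_diagram R v ss2 v"
  shows "fst (tpath (build (u @ v) (sum_steps u ss1 ss2))) ! length u =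
         fst (bpath (build (u @ v) (sum_steps u ss1 ss2))) ! length u \<and>
         length u < length (fst (tpath (build (u @ v) (sum_steps u ss1 ss2)))) \<and>
         length u < length (fst (bpath (build (u @ v) (sum_steps u ss1 ss2))))"
proof -
  have v1: "valid_steps R u ss1" "final_word u ss1 = u" using d1 by (auto simp: is_diagram_def)
  have v2: "valid_steps R v ss2" "final_word v ss2 = v" using d2 by (auto simp: is_diagram_def)
  let ?I = "init_dgm (u @ v)"
  let ?D1 = "build_aux 0 ?I ss1"
  have lI: "length (fst (bpath ?I)) = length u + length v + 1"
    by (simp add: init_dgm_def Let_def del: upt_Suc)
  have tI: "length (fst (tpath ?I)) = length u + length v + 1"
    by (simp add: init_dgm_def Let_def del: upt_Suc)
  have bt: "fst (bpath ?I) = fst (tpath ?I)" by (simp add: init_dgm_def Let_def)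
  obtain h1: "fst (bpath ?D1) ! length u = fst (bpath ?I) ! length u"
    and h2: "length (fst (bpath ?D1)) = length u + length v + 1"
    using J1[OF sg v1(1), of ?I "length v" 0] lI v1(2) by auto
  have ss: "sum_steps u ss1 ss2 = ss1 @ map (\<lambda>(p, a, b). (p + length u, a, b)) ss2"
    using v1(2) by (simp add: sum_steps_def)
  have S: "build (u @ v) (sum_steps u ss1 ss2) = build_aux (length ss1) ?D1 (map (\<lambda>(p, a, b). (p + length u, a, b)) ss2)"
    unfolding build_def ss build_aux_append by simp
  obtain h3: "fst (bpath (build (u @ v) (sum_steps u ss1 ss2))) ! length u = fst (bpath ?D1) ! length u"
    and h4: "length (fst (bpath (build (u @ v) (sum_steps u ss1 ss2)))) = length u + length v + 1"
    using J2[OF sg v2(1), of ?D1 "length u" "length ss1"] h2 v2(2) S by auto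
  have t: "tpath (build (u @ v) (sum_steps u ss1 ss2)) = tpath ?I" by (simp add: build_def tpath_build_aux)
  show ?thesis using h1 h3 h4 t bt tI by simp
qed

lemma rd_paths:
  assumes "dipole_red E E'"
  shows "\<exists>f g. tpath E' = map_dpath f g (tpath E) \<and> bpath E' = map_dpath f g (bpath E)"
proof -
  obtain c1 c2 where "E' = remove_dipole E c1 c2" using assms unfolding dipole_red_def by blast
  then show ?thesis unfolding remove_dipole_def Let_def by (simp only: dgm.select_convs) blast
qed

lemma chainD:
  assumes sg: "\<forall>(x, y) \<in> R. x \<noteq> [] \<and> y \<noteq> []"
  shows "dipole_red\<^sup>*\<^sup>* E E1 \<Longrightarrow> (\<exists>cs Ps. stack R E cs Ps) \<Longrightarrow> L < length (fst (tpath E)) \<Longrightarrow>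
    L < length (fst (bpath E)) \<Longrightarrow>
    (\<exists>cs Ps. stack R E1 cs Ps) \<and> L < length (fst (tpath E1)) \<and> L < length (fst (bpath E1)) \<and>
    (Pp R E1 L \<longrightarrow> Pp R E L)"
proof (induction rule: converse_rtranclp_induct)
  case base then show ?case by simp
next
  case (step E E')
  obtain c1 c2 where d: "is_dipole E c1 c2" "E' = remove_dipole E c1 c2" using step.hyps(1) by (auto simp: dipole_red_def)
  obtain cs Ps where st: "stack R E cs Ps" using step.prems by blast
  have s': "\<exists>cs Ps. stack R E' cs Ps" using dipole_step(1)[OF sg st d(1)] d(2) by simp
  obtain f g where fg: "tpath E' = map_dpath f g (tpath E)" "bpath E' = map_dpath f g (bpath E)"
    using rd_paths[OF step.hyps(1)] by blast
  have l': "L < length (fst (tpath E'))" "L < length (fst (bpath E'))" using fg step.prems by (auto simp: map_dpath_def)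
  have "Pp R E' L \<Longrightarrow> Pp R E L" using dipole_step(2)[OF sg st d(1)] d(2) step.prems by simp
  then show ?case using step.IH[OF s' l'] by blast
qed

lemma chainS:
  "dipole_red\<^sup>*\<^sup>* E E1 \<Longrightarrow> fst (tpath E) ! L = fst (bpath E) ! L \<Longrightarrow> L < length (fst (tpath E)) \<Longrightarrow>
    L < length (fst (bpath E)) \<Longrightarrow>
    fst (tpath E1) ! L = fst (bpath E1) ! L \<and> L < length (fst (tpath E1)) \<and> L < length (fst (bpath E1))"
proof (induction rule: converse_rtranclp_induct)
  case base then show ?case by simp
next
  case (step E E')
  obtain f g where fg: "tpath E' = map_dpath f g (tpath E)" "bpath E' = map_dpath f g (bpath E)"
    using rd_paths[OF step.hyps(1)] by blast
  then have "fst (tpath E') ! L = fst (bpath E') ! L" "L < length (fst (tpath E'))" "L < length (fst (bpath E'))"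
    using step.prems by (auto simp: map_dpath_def)
  then show ?case using step.IH by blast
qed

theorem lemma3:
  fixes R :: "('a list \<times> 'a list) set" and u v :: "'a list"
    and ss :: "'a dstep list" and x0 :: nat
  assumes semigroup_pres: "\<forall>(x, y) \<in> R. x \<noteq> [] \<and> y \<noteq> []"
    and diag: "is_diagram R (u @ v) ss (u @ v)"
    and vert: "x0 \<in> verts (build (u @ v) ss)"
    and le1: "vle (build (u @ v) ss) x0 (fst (tpath (build (u @ v) ss)) ! length u)"
    and le2: "vle (build (u @ v) ss) x0 (fst (bpath (build (u @ v) ss)) ! length u)"
    and split: "\<exists>ss1 ss2. is_diagram R u ss1 u \<and> is_diagram R v ss2 v \<and>
                  dgm_equiv (build (u @ v) ss) (build (u @ v) (sum_steps u ss1 ss2))"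
  shows "mu R (build (u @ v) ss) x0 (fst (tpath (build (u @ v) ss)) ! length u)
       = mu R (build (u @ v) ss) x0 (fst (bpath (build (u @ v) ss)) ! length u)"
proof -
  note sg = semigroup_pres
  let ?D = "build (u @ v) ss"
  let ?L = "length u"
  have vs: "valid_steps R (u @ v) ss" "final_word (u @ v) ss = u @ v" using diag by (auto simp: is_diagram_def)
  obtain cs Ps where st: "stack R ?D cs Ps" and wd: "map (elab ?D) (snd (bpath ?D)) = u @ v"
    using build_stack[OF sg vs(1)] vs(2) by auto
  interpret sD: stk R ?D cs Ps using st by unfold_locales
  have lt: "?L < length (fst (tpath ?D))"
    by (simp add: build_def tpath_build_aux init_dgm_def Let_def del: upt_Suc)
  have "gpath ?D (bpath ?D)" using sD.gp[of "length cs"] sD.Pn by simp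
  then have lb: "?L < length (fst (bpath ?D))" using wd by (simp add: gpath_def) (metis length_map length_append less_Suc_eq_le le_add1)
  obtain ss1 ss2 where s12: "is_diagram R u ss1 u" "is_diagram R v ss2 v"
    "dgm_equiv ?D (build (u @ v) (sum_steps u ss1 ss2))" using split by blast
  let ?S = "build (u @ v) (sum_steps u ss1 ss2)"
  obtain D1 D2 where e: "dipole_red\<^sup>*\<^sup>* ?D D1" "dipole_red\<^sup>*\<^sup>* ?S D2" "dgm_iso D1 D2"
    using s12(3) unfolding dgm_equiv_def by blast
  have j: "fst (tpath ?S) ! ?L = fst (bpath ?S) ! ?L" "?L < length (fst (tpath ?S))" "?L < length (fst (bpath ?S))"
    using junction[OF sg s12(1,2)] by auto
  have j2: "fst (tpath D2) ! ?L = fst (bpath D2) ! ?L" using chainS[OF e(2) j] by blast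
  obtain c1: "\<exists>cs Ps. stack R D1 cs Ps" and l1: "?L < length (fst (tpath D1))" "?L < length (fst (bpath D1))"
    and bkw: "Pp R D1 ?L \<longrightarrow> Pp R ?D ?L"
    using chainD[OF sg e(1) _ lt lb] st by blast
  obtain cs1 Ps1 where st1: "stack R D1 cs1 Ps1" using c1 by blast
  interpret s1: stk R D1 cs1 Ps1 using st1 by unfold_locales
  obtain fV fE fC where iso: "bij_betw fV (verts D1) (verts D2)"
    "tpath D2 = map_dpath fV fE (tpath D1)" "bpath D2 = map_dpath fV fE (bpath D1)"
    using e(3) unfolding dgm_iso_def by blast
  have "fV (fst (tpath D1) ! ?L) = fV (fst (bpath D1) ! ?L)"
    using j2 iso(2,3) l1 by (simp add: map_dpath_def)
  moreover have "fst (tpath D1) ! ?L \<in> verts D1"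
    using s1.gp[of 0] s1.P0 l1 by (auto simp: gpath_def)
  moreover have "fst (bpath D1) ! ?L \<in> verts D1"
    using s1.gp[of "length cs1"] s1.Pn l1 by (auto simp: gpath_def)
  ultimately have eq1: "fst (tpath D1) ! ?L = fst (bpath D1) ! ?L"
    using bij_betw_imp_inj_on[OF iso(1)] by (meson inj_onD)
  have "Pp R D1 ?L" unfolding Pp_def
  proof (intro allI impI)
    fix ov0 es1 es2
    assume "is_pos_path D1 ov0 (fst (tpath D1) ! ?L) es1" "is_pos_path D1 ov0 (fst (bpath D1) ! ?L) es2"
    then show "eqv R (lab D1 es1) (lab D1 es2)" using s1.Q_all[OF sg] eq1 by metis
  qed
  then have P: "Pp R ?D ?L" using bkw by blast
  let ?o1 = "fst (tpath ?D) ! ?L" and ?o2 = "fst (bpath ?D) ! ?L"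
  have "\<exists>es. is_pos_path ?D x0 ?o1 es" using le1 by (simp add: vle_def)
  then have p1: "is_pos_path ?D x0 ?o1 (SOME es. is_pos_path ?D x0 ?o1 es)" by (rule someI_ex)
  have "\<exists>es. is_pos_path ?D x0 ?o2 es" using le2 by (simp add: vle_def)
  then have p2: "is_pos_path ?D x0 ?o2 (SOME es. is_pos_path ?D x0 ?o2 es)" by (rule someI_ex)
  have "eqv R (lab ?D (SOME es. is_pos_path ?D x0 ?o1 es)) (lab ?D (SOME es. is_pos_path ?D x0 ?o2 es))"
    using P p1 p2 unfolding Pp_def by blast
  then show ?thesis unfolding mu_def lab_def using eqv_pres_class by blast
qed

end
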